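(* Let $m,\varepsilon>0$ and write $\widetilde{A}_k(x,t)=\widetilde{A}_k(x,t,m,\varepsilon)$. For each $(x,t)\in\varepsilon\mathbb{Z}^2$, $$2m\varepsilon x\,\widetilde{A}_1(x,t)=(x-t-\varepsilon)\widetilde{A}_2(x-\varepsilon,t)-(x-t+\varepsilon)\widetilde{A}_2(x+\varepsilon,t),$$ $$2m\varepsilon x\,\widetilde{A}_2(x,t)=(x+t)\widetilde{A}_1(x-\varepsilon,t)-(x+t)\widetilde{A}_1(x+\varepsilon,t).$$
   Context: $\delta_{xy}$ is the Kronecker delta. For $\delta\in(0,1)$ let $A_k(x,t)=A_k(x,t,m,\varepsilon,\delta)$, $k\in\{1,2\}$, be the unique pair of complex-valued functions on $\{(x,t)\in\mathbb{R}^2:2x/\varepsilon,2t/\varepsilon,(x+t)/\varepsilon\in\mathbb{Z}\}$ satisfying: (1) for $2x/\varepsilon,2t/\varepsilon$ even, $A_1(x,t)=\frac{1}{\sqrt{1+m^2\varepsilon^2}}(A_1(x+\frac{\varepsilon}{2},t-\frac{\varepsilon}{2})+m\varepsilon A_2(x+\frac{\varepsilon}{2},t-\frac{\varepsilon}{2}))$ and $A_2(x,t)=\frac{1}{\sqrt{1+m^2\varepsilon^2}}(A_2(x-\frac{\varepsilon}{2},t-\frac{\varepsilon}{2})-m\varepsilon A_1(x-\frac{\varepsilon}{2},t-\frac{\varepsilon}{2}))+2\delta_{x0}\delta_{t0}$; (2) for $2x/\varepsilon,2t/\varepsilon$ odd, $A_1(x,t)=\frac{1}{\sqrt{1-\delta^2}}(A_1(x+\frac{\varepsilon}{2},t-\frac{\varepsilon}{2})-i\delta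 A_2(x+\frac{\varepsilon}{2},t-\frac{\varepsilon}{2}))$ and $A_2(x,t)=\frac{1}{\sqrt{1-\delta^2}}(A_2(x-\frac{\varepsilon}{2},t-\frac{\varepsilon}{2})+i\delta A_1(x-\frac{\varepsilon}{2},t-\frac{\varepsilon}{2}))$; (3) $\sum_{(x,t)\in\varepsilon\mathbb{Z}^2}(|A_1|^2+|A_2|^2)<\infty$ (existence and uniqueness are known). $\widetilde{A}_k(x,t,m,\varepsilon):=\lim_{\delta\searrow0}A_k(x,t,m,\varepsilon,\delta)$ for $(x,t)\in\varepsilon\mathbb{Z}^2$ (known to exist). *)

theory Defs
  imports "HOL-Analysis.Analysis"
begin

definition lattice_pt :: "real \<Rightarrow> real \<Rightarrow> real \<Rightarrow> bool" where
  "lattice_pt eps x t \<longleftrightarrow>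
     2 * x / eps \<in> \<int> \<and> 2 * t / eps \<in> \<int> \<and> (x + t) / eps \<in> \<int>"

definition even_pt :: "real \<Rightarrow> real \<Rightarrow> real \<Rightarrow> bool" where
  "even_pt eps x t \<longleftrightarrow>
     (\<exists>j s :: int. 2 * x / eps = of_int j \<and> 2 * t / eps = of_int s \<and> even j \<and> even s)"

definition odd_pt :: "real \<Rightarrow> real \<Rightarrow> real \<Rightarrow> bool" where
  "odd_pt eps x t \<longleftrightarrow>
     (\<exists>j s :: int. 2 * x / eps = of_int j \<and> 2 * t / eps = of_int s \<and> odd j \<and> odd s)"

text \<open>The defining conditions (1)-(3). Functions are modelled on all of real x real,
  with the convention that they vanish off the lattice (so the solution is unique
  as a pair of HOL functions).\<close>
definition is_sol ::
  "real \<Rightarrow> real \<Rightarrow> real \<Rightarrow> (real \<Rightarrow> real \<Rightarrow> complex) \<Rightarrow> (real \<Rightarrow> real \<Rightarrow> complex) \<Rightarrow> bool" where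
  "is_sol m eps \<delta> A1 A2 \<longleftrightarrow>
     (\<forall>x t. \<not> lattice_pt eps x t \<longrightarrow> A1 x t = 0 \<and> A2 x t = 0) \<and>
     (\<forall>x t. lattice_pt eps x t \<and> even_pt eps x t \<longrightarrow>
        A1 x t = of_real (1 / sqrt (1 + m\<^sup>2 * eps\<^sup>2)) *
          (A1 (x + eps/2) (t - eps/2) + of_real (m * eps) * A2 (x + eps/2) (t - eps/2)) \<and>
        A2 x t = of_real (1 / sqrt (1 + m\<^sup>2 * eps\<^sup>2)) *
          (A2 (x - eps/2) (t - eps/2) - of_real (m * eps) * A1 (x - eps/2) (t - eps/2))
          + (if x = 0 \<and> t = 0 then 2 else 0)) \<and>
     (\<forall>x t. lattice_pt eps x t \<and> odd_pt eps x t \<longrightarrow>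
        A1 x t = of_real (1 / sqrt (1 - \<delta>\<^sup>2)) *
          (A1 (x + eps/2) (t - eps/2) - \<i> * of_real \<delta> * A2 (x + eps/2) (t - eps/2)) \<and>
        A2 x t = of_real (1 / sqrt (1 - \<delta>\<^sup>2)) *
          (A2 (x - eps/2) (t - eps/2) + \<i> * of_real \<delta> * A1 (x - eps/2) (t - eps/2))) \<and>
     (\<lambda>(x, t). (cmod (A1 x t))\<^sup>2 + (cmod (A2 x t))\<^sup>2) summable_on
        {(x, t). x / eps \<in> \<int> \<and> t / eps \<in> \<int>}"

definition A_pair ::
  "real \<Rightarrow> real \<Rightarrow> real \<Rightarrow> (real \<Rightarrow> real \<Rightarrow> complex) \<times> (real \<Rightarrow> real \<Rightarrow> complex)" where
  "A_pair m eps \<delta> = (THE p. is_sol m eps \<delta> (fst p) (snd p))"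

definition A1 :: "real \<Rightarrow> real \<Rightarrow> real \<Rightarrow> real \<Rightarrow> real \<Rightarrow> complex" where
  "A1 x t m eps \<delta> = fst (A_pair m eps \<delta>) x t"

definition A2 :: "real \<Rightarrow> real \<Rightarrow> real \<Rightarrow> real \<Rightarrow> real \<Rightarrow> complex" where
  "A2 x t m eps \<delta> = snd (A_pair m eps \<delta>) x t"

definition At1 :: "real \<Rightarrow> real \<Rightarrow> real \<Rightarrow> real \<Rightarrow> complex" where
  "At1 x t m eps = Lim (at_right 0) (\<lambda>\<delta>. A1 x t m eps \<delta>)"

definition At2 :: "real \<Rightarrow> real \<Rightarrow> real \<Rightarrow> real \<Rightarrow> complex" where
  "At2 x t m eps = Lim (at_right 0) (\<lambda>\<delta>. A2 x t m eps \<delta>)"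

end

theory Submission
  imports Defs
begin

definition cf :: "(real \<Rightarrow> complex) \<Rightarrow> int \<Rightarrow> complex" where
  "cf F j = integral {-pi..pi} (\<lambda>k. cis (of_int j * k) * F k) / (2 * pi)"

lemma cis_int_pi: "cis (of_int j * pi) = cis (- (of_int j * pi))"
  by (simp add: cis.ctr complex_eq_iff sin_zero_iff_int2)

lemma deriv_cis_lin:
  "((\<lambda>k. cis (a * k)) has_vector_derivative (\<i> * of_real a) * cis (a * x)) (at x within S)"
  unfolding cis_conv_exp
  by (auto intro!: derivative_eq_intros has_vector_derivative_real_field simp: field_simps)

lemma integral_cis_int:
  "integral {-pi..pi} (\<lambda>k. cis (of_int j * k)) = (if j = 0 then 2 * pi else 0)"
proof (cases "j = 0")
  case True then show ?thesis by (simp add: scaleR_conv_of_real)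
next
  case False
  have d: "((\<lambda>k. cis (of_int j * k) / (\<i> * of_int j)) has_vector_derivative cis (of_int j * x)) (at x within {-pi..pi})" for x
    using has_vector_derivative_divide[OF deriv_cis_lin[of "of_int j" x "{-pi..pi}"], of "\<i> * of_int j"] False
    by simp
  have "((\<lambda>k. cis (of_int j * k)) has_integral (cis (of_int j * pi) / (\<i> * of_int j) - cis (of_int j * (-pi)) / (\<i> * of_int j))) {-pi..pi}"
    by (rule fundamental_theorem_of_calculus) (use d in auto)
  then show ?thesis using False cis_int_pi[of j] by (simp add: integral_unique)
qed

lemma cont_cis_mult: "continuous_on S F \<Longrightarrow> continuous_on S (\<lambda>k. cis (a * k) * F k)"
  by (auto intro!: continuous_intros simp: cis_conv_exp)

lemma int_cf: "continuous_on {-pi..pi} F \<Longrightarrow> (\<lambda>k. cis (a * k) * F k) integrable_on {-pi..pi}"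
  by (intro integrable_continuous_interval cont_cis_mult)

lemma cf_add: "continuous_on {-pi..pi} F \<Longrightarrow> continuous_on {-pi..pi} G \<Longrightarrow>
   cf (\<lambda>k. F k + G k) j = cf F j + cf G j"
  unfolding cf_def using int_cf[of F] int_cf[of G]
  by (simp add: distrib_left integral_add add_divide_distrib)

lemma cf_diff: "continuous_on {-pi..pi} F \<Longrightarrow> continuous_on {-pi..pi} G \<Longrightarrow>
   cf (\<lambda>k. F k - G k) j = cf F j - cf G j"
  unfolding cf_def using int_cf[of F] int_cf[of G]
  by (simp add: right_diff_distrib integral_diff diff_divide_distrib)

lemma cf_cmult: "cf (\<lambda>k. c * F k) j = c * cf F j"
  unfolding cf_def by (simp add: mult.left_commute)

lemma cf_uminus: "cf (\<lambda>k. - F k) j = - cf F j"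
  using cf_cmult[of "-1" F j] by simp

lemma cf_shift: "cf (\<lambda>k. cis k * F k) j = cf F (j + 1)"
  unfolding cf_def by (simp add: mult.assoc[symmetric] cis_mult distrib_right)

lemma cf_shiftm: "cf (\<lambda>k. cis (- k) * F k) j = cf F (j - 1)"
  unfolding cf_def by (simp add: mult.assoc[symmetric] cis_mult left_diff_distrib)

lemma cf_const: "cf (\<lambda>k. c) j = (if j = 0 then c else 0)"
proof -
  have "cf (\<lambda>k. c) j = c * (integral {-pi..pi} (\<lambda>k. cis (of_int j * k)) / (2*pi))"
    unfolding cf_def by (simp add: mult.commute)
  then show ?thesis by (simp add: integral_cis_int)
qed

lemma cf_sum: "finite J \<Longrightarrow> (\<And>i. i \<in> J \<Longrightarrow> continuous_on {-pi..pi} (F i)) \<Longrightarrow>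
   cf (\<lambda>k. \<Sum>i\<in>J. F i k) j = (\<Sum>i\<in>J. cf (F i) j)"
  unfolding cf_def
  by (simp add: sum_distrib_left integral_sum int_cf sum_divide_distrib)

lemma mult_cnj_sq: "z * cnj z = (complex_of_real (cmod z))\<^sup>2"
  by (metis complex_norm_square of_real_power)

lemma bessel:
  assumes cont: "continuous_on {-pi..pi} F" and fin: "finite J"
  shows "(\<Sum>j\<in>J. (cmod (cf F j))\<^sup>2) \<le> integral {-pi..pi} (\<lambda>k. (cmod (F k))\<^sup>2) / (2 * pi)"
proof -
  define c where "c j = cf F j" for j
  define S where "S = (\<Sum>j\<in>J. (cmod (c j))\<^sup>2)"
  define Q where "Q k = (\<Sum>j\<in>J. c j * cis (- (of_int j * k)))" for k
  have contQ: "continuous_on {-pi..pi} Q"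
    unfolding Q_def by (auto intro!: continuous_intros simp: cis_conv_exp)
  have contcQ: "continuous_on {-pi..pi} (\<lambda>k. cnj (Q k))"
    by (intro continuous_intros contQ)
  have contcF: "continuous_on {-pi..pi} (\<lambda>k. cnj (F k))"
    by (intro continuous_intros cont)
  have iFQ: "integral {-pi..pi} (\<lambda>k. F k * cnj (Q k)) = complex_of_real (2 * pi * S)"
  proof -
    have "integral {-pi..pi} (\<lambda>k. F k * cnj (Q k))
        = integral {-pi..pi} (\<lambda>k. \<Sum>j\<in>J. cnj (c j) * (cis (of_int j * k) * F k))"
      unfolding Q_def by (simp add: sum_distrib_left cis_cnj mult_ac)
    also have "\<dots> = (\<Sum>j\<in>J. cnj (c j) * integral {-pi..pi} (\<lambda>k. cis (of_int j * k) * F k))"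
      by (subst integral_sum) (auto simp: fin intro!: integrable_continuous_interval continuous_intros cont)
    also have "\<dots> = (\<Sum>j\<in>J. cnj (c j) * (2 * pi * c j))"
      unfolding c_def cf_def by simp
    also have "\<dots> = (\<Sum>j\<in>J. 2 * pi * (c j * cnj (c j)))"
      by (simp add: mult_ac)
    also have "\<dots> = complex_of_real (2 * pi * S)"
      by (simp add: S_def sum_distrib_left mult_cnj_sq)
    finally show ?thesis .
  qed
  have iQQ: "integral {-pi..pi} (\<lambda>k. Q k * cnj (Q k)) = complex_of_real (2 * pi * S)"
  proof -
    have "integral {-pi..pi} (\<lambda>k. Q k * cnj (Q k))
        = integral {-pi..pi} (\<lambda>k. \<Sum>j\<in>J. c j * (cis (- (of_int j * k)) * cnj (Q k)))"
      unfolding Q_def[of k for k] by (simp add: sum_distrib_right mult_ac)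
    also have "\<dots> = (\<Sum>j\<in>J. c j * integral {-pi..pi} (\<lambda>k. cis (of_int (- j) * k) * cnj (Q k)))"
      by (subst integral_sum) (auto simp: fin intro!: integrable_continuous_interval continuous_intros contcQ)
    also have "\<dots> = (\<Sum>j\<in>J. c j * (2 * pi * cf (\<lambda>k. cnj (Q k)) (- j)))"
      unfolding cf_def by simp
    also have "\<dots> = (\<Sum>j\<in>J. c j * (2 * pi * cnj (c j)))"
    proof (rule sum.cong[OF refl])
      fix j assume j: "j \<in> J"
      have "cf (\<lambda>k. cnj (Q k)) (- j) = cf (\<lambda>k. \<Sum>l\<in>J. cnj (c l) * cis (of_int l * k)) (- j)"
        unfolding Q_def by (simp add: cis_cnj)
      also have "\<dots> = (\<Sum>l\<in>J. cf (\<lambda>k. cnj (c l) * cis (of_int l * k)) (- j))"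
        using fin by (intro cf_sum) (auto intro!: continuous_intros simp: cis_conv_exp)
      also have "\<dots> = (\<Sum>l\<in>J. cnj (c l) * (if l = j then 1 else 0))"
      proof (rule sum.cong[OF refl])
        fix l
        have "cf (\<lambda>k. cnj (c l) * cis (of_int l * k)) (- j) = cnj (c l) * cf (\<lambda>k. cis (of_int l * k) * 1) (- j)"
          using cf_cmult[of "cnj (c l)" "\<lambda>k. cis (of_int l * k)" "-j"] by simp
        also have "cf (\<lambda>k. cis (of_int l * k) * 1) (- j) = cf (\<lambda>k. 1) (l - j)"
          unfolding cf_def by (simp add: mult.assoc[symmetric] cis_mult left_diff_distrib add.commute)
        finally show "cf (\<lambda>k. cnj (c l) * cis (of_int l * k)) (- j) = cnj (c l) * (if l = j then 1 else 0)"
          by (simp add: cf_const)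
      qed
      also have "\<dots> = cnj (c j)" proof -
        have "(\<Sum>l\<in>J. cnj (c l) * (if l = j then 1 else 0)) = (\<Sum>l\<in>J. if l = j then cnj (c l) else 0)"
          by (intro sum.cong) auto
        then show ?thesis using fin j by (simp add: sum.delta')
      qed
      finally show "c j * (2 * pi * cf (\<lambda>k. cnj (Q k)) (- j)) = c j * (2 * pi * cnj (c j))" by simp
    qed
    also have "\<dots> = (\<Sum>j\<in>J. 2 * pi * (c j * cnj (c j)))"
      by (simp add: mult_ac)
    also have "\<dots> = complex_of_real (2 * pi * S)"
      by (simp add: S_def sum_distrib_left mult_cnj_sq)
    finally show ?thesis .
  qed
  have iQF: "integral {-pi..pi} (\<lambda>k. Q k * cnj (F k)) = complex_of_real (2 * pi * S)"
  proof -
    have "integral {-pi..pi} (\<lambda>k. Q k * cnj (F k)) = cnj (integral {-pi..pi} (\<lambda>k. F k * cnj (Q k)))"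
      by (simp add: integral_cnj mult.commute)
    then show ?thesis using iFQ by simp
  qed
  have i1: "(\<lambda>k. F k * cnj (F k)) integrable_on {-pi..pi}"
    by (intro integrable_continuous_interval continuous_intros cont)
  have i2: "(\<lambda>k. F k * cnj (Q k)) integrable_on {-pi..pi}"
    by (intro integrable_continuous_interval continuous_intros cont contQ)
  have i3: "(\<lambda>k. Q k * cnj (F k)) integrable_on {-pi..pi}"
    by (intro integrable_continuous_interval continuous_intros cont contQ)
  have i4: "(\<lambda>k. Q k * cnj (Q k)) integrable_on {-pi..pi}"
    by (intro integrable_continuous_interval continuous_intros contQ)
  have "integral {-pi..pi} (\<lambda>k. (F k - Q k) * cnj (F k - Q k))
     = integral {-pi..pi} (\<lambda>k. F k * cnj (F k)) - integral {-pi..pi} (\<lambda>k. F k * cnj (Q k))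
       - integral {-pi..pi} (\<lambda>k. Q k * cnj (F k)) + integral {-pi..pi} (\<lambda>k. Q k * cnj (Q k))"
  proof -
    have "(\<lambda>k. (F k - Q k) * cnj (F k - Q k)) = (\<lambda>k. F k * cnj (F k) - F k * cnj (Q k) - Q k * cnj (F k) + Q k * cnj (Q k))"
      by (auto simp: algebra_simps)
    then show ?thesis
      using i1 i2 i3 i4 by (simp add: integral_add integral_diff integrable_diff integrable_add)
  qed
  also have "\<dots> = integral {-pi..pi} (\<lambda>k. F k * cnj (F k)) - complex_of_real (2 * pi * S)"
    using iFQ iQF iQQ by simp
  finally have eq0: "integral {-pi..pi} (\<lambda>k. (F k - Q k) * cnj (F k - Q k))
      = integral {-pi..pi} (\<lambda>k. F k * cnj (F k)) - complex_of_real (2 * pi * S)" .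
  have eq: "integral {-pi..pi} (\<lambda>k. complex_of_real ((cmod (F k - Q k))\<^sup>2))
      = integral {-pi..pi} (\<lambda>k. complex_of_real ((cmod (F k))\<^sup>2)) - complex_of_real (2 * pi * S)"
    unfolding complex_norm_square by (rule eq0)
  have r1: "integral {-pi..pi} (\<lambda>k. complex_of_real ((cmod (F k - Q k))\<^sup>2)) = of_real (integral {-pi..pi} (\<lambda>k. (cmod (F k - Q k))\<^sup>2))"
    by (intro integral_unique has_integral_of_real integrable_integral integrable_continuous_interval continuous_intros cont contQ)
  have r2: "integral {-pi..pi} (\<lambda>k. complex_of_real ((cmod (F k))\<^sup>2)) = of_real (integral {-pi..pi} (\<lambda>k. (cmod (F k))\<^sup>2))"
    by (intro integral_unique has_integral_of_real integrable_integral integrable_continuous_interval continuous_intros cont)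
  have "integral {-pi..pi} (\<lambda>k. (cmod (F k - Q k))\<^sup>2) = integral {-pi..pi} (\<lambda>k. (cmod (F k))\<^sup>2) - 2 * pi * S"
  proof -
    have "complex_of_real (integral {-pi..pi} (\<lambda>k. (cmod (F k - Q k))\<^sup>2)) = complex_of_real (integral {-pi..pi} (\<lambda>k. (cmod (F k))\<^sup>2) - 2 * pi * S)"
      using eq unfolding r1 r2 of_real_diff .
    then show ?thesis by (simp only: of_real_eq_iff)
  qed
  moreover have "0 \<le> integral {-pi..pi} (\<lambda>k. (cmod (F k - Q k))\<^sup>2)"
    by (intro integral_nonneg integrable_continuous_interval continuous_intros cont contQ) auto
  ultimately show ?thesis unfolding S_def c_def by (simp add: field_simps)
qed

lemma eig2:
  fixes a b c d l m e1 e2 :: complex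
  assumes "a*d - b*c = 1" "l*m = 1" "l + m = a + d"
  shows "a*(a*e1 + b*e2 - m*e1) + b*(c*e1 + d*e2 - m*e2) = l*(a*e1 + b*e2 - m*e1)"
    and "c*(a*e1 + b*e2 - m*e1) + d*(c*e1 + d*e2 - m*e2) = l*(c*e1 + d*e2 - m*e2)"
  using assms by algebra+

definition kap :: "real \<Rightarrow> real \<Rightarrow> real" where
  "kap h \<delta> = 1 / sqrt (1 + h\<^sup>2) * (1 / sqrt (1 - \<delta>\<^sup>2))"

definition zz :: "real \<Rightarrow> real \<Rightarrow> real \<Rightarrow> complex" where
  "zz h \<delta> k = complex_of_real (kap h \<delta>) * (complex_of_real (cos k) + \<i> * complex_of_real (\<delta> * h))"

definition ww :: "real \<Rightarrow> real \<Rightarrow> real \<Rightarrow> complex" where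
  "ww h \<delta> k = csqrt (1 - (zz h \<delta> k)\<^sup>2)"

definition lam :: "real \<Rightarrow> real \<Rightarrow> real \<Rightarrow> complex" where
  "lam h \<delta> k = zz h \<delta> k - \<i> * ww h \<delta> k"

definition mu :: "real \<Rightarrow> real \<Rightarrow> real \<Rightarrow> complex" where
  "mu h \<delta> k = zz h \<delta> k + \<i> * ww h \<delta> k"

definition adm :: "real \<Rightarrow> real \<Rightarrow> bool" where
  "adm h \<delta> \<longleftrightarrow> 0 < h \<and> \<bar>\<delta>\<bar> < h / (1 + h)"

lemma adm_lt1: assumes "adm h \<delta>" shows "\<bar>\<delta>\<bar> < 1"
proof -
  from assms have h: "0 < h" and d: "\<bar>\<delta>\<bar> < h / (1 + h)" unfolding adm_def by auto
  have "h / (1 + h) < 1" using h by simp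
  then show ?thesis using d by linarith
qed

lemma adm_sq_lt1: "adm h \<delta> \<Longrightarrow> \<delta>\<^sup>2 < 1"
  using adm_lt1[of h \<delta>] by (simp add: abs_square_less_1)

lemma onehsq: "0 < 1 + (h::real)\<^sup>2"
  by (simp add: add_pos_nonneg)

lemma kap_pos: "adm h \<delta> \<Longrightarrow> 0 < kap h \<delta>"
  using adm_sq_lt1[of h \<delta>] onehsq[of h] unfolding kap_def by auto

lemma kap_sq: "adm h \<delta> \<Longrightarrow> (kap h \<delta>)\<^sup>2 * ((1 + h\<^sup>2) * (1 - \<delta>\<^sup>2)) = 1"
  using adm_sq_lt1[of h \<delta>] onehsq[of h] unfolding kap_def
  by (simp add: power_mult_distrib power_divide)

lemma kap_sq_lt1: assumes "adm h \<delta>" shows "(kap h \<delta>)\<^sup>2 < 1"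
proof -
  from assms have h: "0 < h" and d: "\<bar>\<delta>\<bar> < h / (1 + h)" unfolding adm_def by auto
  have "\<bar>\<delta>\<bar>\<^sup>2 < (h / (1 + h))\<^sup>2" by (rule power_strict_mono) (use d in auto)
  hence "\<delta>\<^sup>2 * (1 + h)\<^sup>2 < h\<^sup>2" using h by (simp add: power_divide field_simps)
  moreover have "\<delta>\<^sup>2 * (1 + h\<^sup>2) \<le> \<delta>\<^sup>2 * (1 + h)\<^sup>2"
    using h by (intro mult_left_mono) (auto simp: power2_sum)
  ultimately have "1 < (1 + h\<^sup>2) * (1 - \<delta>\<^sup>2)" by (simp add: algebra_simps)
  then show ?thesis using kap_sq[OF assms]
    by (smt (verit) mult_less_cancel_left2 mult.commute zero_le_power2)
qed

lemma Re_zz: "Re (zz h \<delta> k) = kap h \<delta> * cos k" and Im_zz: "Im (zz h \<delta> k) = kap h \<delta> * (\<delta> * h)"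
  unfolding zz_def by simp_all

lemma re_pos: assumes "adm h \<delta>" shows "0 < Re (1 - (zz h \<delta> k)\<^sup>2)"
proof -
  have "Re (1 - (zz h \<delta> k)\<^sup>2) = 1 - (kap h \<delta>)\<^sup>2 * (cos k)\<^sup>2 + (kap h \<delta> * (\<delta> * h))\<^sup>2"
    by (simp add: power2_eq_square Re_zz Im_zz algebra_simps)
  moreover have "(kap h \<delta>)\<^sup>2 * (cos k)\<^sup>2 \<le> (kap h \<delta>)\<^sup>2"
    using abs_cos_le_one[of k] by (intro mult_left_le) (auto simp: abs_square_le_1)
  ultimately show ?thesis using kap_sq_lt1[OF assms] by (smt (verit) zero_le_power2)
qed

lemma not_nonpos: "adm h \<delta> \<Longrightarrow> 1 - (zz h \<delta> k)\<^sup>2 \<notin> \<real>\<^sub>\<le>\<^sub>0"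
  using re_pos[of h \<delta> k] by (auto simp: complex_nonpos_Reals_iff)

lemma ww_sq: "(ww h \<delta> k)\<^sup>2 = 1 - (zz h \<delta> k)\<^sup>2"
  unfolding ww_def by simp

lemma Re_ww_pos: assumes "adm h \<delta>" shows "0 < Re (ww h \<delta> k)"
proof (rule ccontr)
  assume "\<not> 0 < Re (ww h \<delta> k)"
  then have "Re (ww h \<delta> k) = 0" using csqrt_principal[of "1 - (zz h \<delta> k)\<^sup>2"] unfolding ww_def by auto
  then have "Re ((ww h \<delta> k)\<^sup>2) \<le> 0" by (simp add: power2_eq_square)
  then show False using re_pos[OF assms, of k] ww_sq[of h \<delta> k] by simp
qed

lemma ww_nz: "adm h \<delta> \<Longrightarrow> ww h \<delta> k \<noteq> 0"
  using Re_ww_pos[of h \<delta> k] by auto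

lemma lam_mu: "lam h \<delta> k * mu h \<delta> k = 1"
  unfolding lam_def mu_def using ww_sq[of h \<delta> k]
  by (simp add: algebra_simps power2_eq_square)

lemma lam_plus_mu: "lam h \<delta> k + mu h \<delta> k = 2 * zz h \<delta> k"
  unfolding lam_def mu_def by simp

lemma lam_minus_mu: "lam h \<delta> k - mu h \<delta> k = - 2 * \<i> * ww h \<delta> k"
  unfolding lam_def mu_def by simp

lemma lam_lt1: assumes "adm h \<delta>" "0 < \<delta>" shows "cmod (lam h \<delta> k) < 1"
proof -
  define x where "x = Re (zz h \<delta> k)"
  define e where "e = Im (zz h \<delta> k)"
  define p where "p = Re (ww h \<delta> k)"
  define q where "q = Im (ww h \<delta> k)"
  have p: "0 < p" unfolding p_def using Re_ww_pos[OF assms(1)] .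
  have e: "0 < e" unfolding e_def Im_zz using kap_pos[OF assms(1)] assms unfolding adm_def by auto
  have "Im ((ww h \<delta> k)\<^sup>2) = Im (1 - (zz h \<delta> k)\<^sup>2)" by (simp add: ww_sq)
  then have pq: "2 * p * q = - 2 * x * e" unfolding p_def q_def x_def e_def
    by (simp add: power2_eq_square algebra_simps)
  have l2: "(cmod (lam h \<delta> k))\<^sup>2 = (x + q)\<^sup>2 + (e - p)\<^sup>2"
    unfolding lam_def x_def e_def p_def q_def cmod_power2 by simp
  have m2: "(cmod (mu h \<delta> k))\<^sup>2 = (x - q)\<^sup>2 + (e + p)\<^sup>2"
    unfolding mu_def x_def e_def p_def q_def cmod_power2 by simp
  have "x * q * p < e * p * p"
  proof -
    have "p * q = - (e * x)" using pq by (simp add: algebra_simps)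
    have "x * q * p = x * (p * q)" by (simp add: algebra_simps)
    also have "\<dots> = x * (- (e * x))" by (simp only: \<open>p * q = - (e * x)\<close>)
    also have "\<dots> = - x * x * e" by (simp add: algebra_simps)
    finally have "x * q * p = - x * x * e" .
    also have "\<dots> \<le> 0" using e by (simp add: mult_nonneg_nonneg)
    also have "0 < e * p * p" using e p by simp
    finally show ?thesis .
  qed
  then have "x * q < e * p" using p by (simp add: mult.assoc[symmetric])
  then have lt: "(cmod (lam h \<delta> k))\<^sup>2 < (cmod (mu h \<delta> k))\<^sup>2" unfolding l2 m2
    by (simp add: power2_eq_square algebra_simps)
  have prod: "(cmod (lam h \<delta> k))\<^sup>2 * (cmod (mu h \<delta> k))\<^sup>2 = 1"
    using lam_mu[of h \<delta> k] by (metis norm_mult norm_one power_mult_distrib one_power2)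
  show ?thesis
  proof (rule ccontr)
    assume "\<not> cmod (lam h \<delta> k) < 1"
    then have "1 \<le> (cmod (lam h \<delta> k))\<^sup>2" by (simp add: one_le_power)
    moreover have "(cmod (mu h \<delta> k))\<^sup>2 \<le> (cmod (lam h \<delta> k))\<^sup>2 * (cmod (mu h \<delta> k))\<^sup>2"
      using calculation by (intro mult_le_cancel_right1[THEN iffD2]) auto
    ultimately show False using lt prod by linarith
  qed
qed

lemma eig2v:
  fixes a b c d l m :: complex
  assumes "a*d - b*c = 1" "l*m = 1" "l + m = a + d"
  shows "a*b + b*(d - m) = l*b" and "c*b + d*(d - m) = l*(d - m)"
  using assms by algebra+

definition n11 :: "real \<Rightarrow> real \<Rightarrow> real \<Rightarrow> complex" where
  "n11 h \<delta> k = of_real (kap h \<delta>) * (cis k + \<i> * of_real (\<delta> * h))"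
definition n12 :: "real \<Rightarrow> real \<Rightarrow> real \<Rightarrow> complex" where
  "n12 h \<delta> k = of_real (kap h \<delta>) * (of_real h - \<i> * of_real \<delta> * cis k)"
definition n21 :: "real \<Rightarrow> real \<Rightarrow> real \<Rightarrow> complex" where
  "n21 h \<delta> k = of_real (kap h \<delta>) * (- of_real h + \<i> * of_real \<delta> * cis (- k))"
definition n22 :: "real \<Rightarrow> real \<Rightarrow> real \<Rightarrow> complex" where
  "n22 h \<delta> k = of_real (kap h \<delta>) * (\<i> * of_real (\<delta> * h) + cis (- k))"

lemma cis_neg_mult: "cis k * cis (- k) = 1"
  by (simp add: cis_mult)

lemma cis_plus_neg: "cis k + cis (- k) = 2 * of_real (cos k)"
  by (simp add: complex_eq_iff)

lemma det_n: assumes "adm h \<delta>"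
  shows "n11 h \<delta> k * n22 h \<delta> k - n12 h \<delta> k * n21 h \<delta> k = 1"
proof -
  define e where "e = cis k"
  define f where "f = cis (- k)"
  have ef: "e * f = 1" unfolding e_def f_def by (rule cis_neg_mult)
  define K where "K = complex_of_real (kap h \<delta>)"
  have K2: "K^2 * ((1 + (of_real h)\<^sup>2) * (1 - (of_real \<delta>)\<^sup>2)) = 1"
  proof -
    have "K^2 * ((1 + (of_real h)\<^sup>2) * (1 - (of_real \<delta>)\<^sup>2)) = complex_of_real ((kap h \<delta>)\<^sup>2 * ((1 + h\<^sup>2) * (1 - \<delta>\<^sup>2)))"
      unfolding K_def by simp
    then show ?thesis unfolding kap_sq[OF assms] by simp
  qed
  have "n11 h \<delta> k * n22 h \<delta> k - n12 h \<delta> k * n21 h \<delta> k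
      = K^2 * ((e + \<i> * (of_real \<delta> * of_real h)) * (\<i> * (of_real \<delta> * of_real h) + f)
         - (of_real h - \<i> * of_real \<delta> * e) * (- of_real h + \<i> * of_real \<delta> * f))"
    unfolding n11_def n12_def n21_def n22_def K_def e_def f_def by (simp add: power2_eq_square algebra_simps)
  also have "\<dots> = K^2 * ((1 + (of_real h)\<^sup>2) * (1 - (of_real \<delta>)\<^sup>2))"
    using ef by (simp add: algebra_simps power2_eq_square)
  finally show ?thesis using K2 by simp
qed

lemma tr_n: "n11 h \<delta> k + n22 h \<delta> k = 2 * zz h \<delta> k"
proof -
  have "n11 h \<delta> k + n22 h \<delta> k = of_real (kap h \<delta>) * (cis k + cis (- k)) + of_real (kap h \<delta>) * 2 * \<i> * of_real (\<delta> * h)"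
    unfolding n11_def n22_def by (simp add: algebra_simps)
  also have "\<dots> = 2 * zz h \<delta> k" unfolding cis_plus_neg zz_def by (simp add: algebra_simps)
  finally show ?thesis .
qed

definition X1 :: "real \<Rightarrow> real \<Rightarrow> real \<Rightarrow> complex" where
  "X1 h \<delta> k = \<i> / ww h \<delta> k * n12 h \<delta> k"
definition X2 :: "real \<Rightarrow> real \<Rightarrow> real \<Rightarrow> complex" where
  "X2 h \<delta> k = \<i> / ww h \<delta> k * (n22 h \<delta> k - mu h \<delta> k)"
definition Y2 :: "real \<Rightarrow> real \<Rightarrow> real \<Rightarrow> complex" where
  "Y2 h \<delta> k = \<i> / ww h \<delta> k * (n22 h \<delta> k - lam h \<delta> k)"

lemma X2_Y2: assumes "adm h \<delta>" shows "X2 h \<delta> k = Y2 h \<delta> k + 2"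
proof -
  have l: "lam h \<delta> k = mu h \<delta> k - 2 * \<i> * ww h \<delta> k" using lam_minus_mu[of h \<delta> k] by (simp add: algebra_simps)
  have "\<i> / ww h \<delta> k * (n22 h \<delta> k - mu h \<delta> k) = \<i> / ww h \<delta> k * (n22 h \<delta> k - lam h \<delta> k) + \<i> / ww h \<delta> k * (lam h \<delta> k - mu h \<delta> k)"
    by (simp add: algebra_simps)
  also have "\<i> / ww h \<delta> k * (lam h \<delta> k - mu h \<delta> k) = 2"
    unfolding lam_minus_mu using ww_nz[OF assms, of k] by (simp add: field_simps)
  finally show ?thesis unfolding X2_def Y2_def by simp
qed

lemma eigX: assumes "adm h \<delta>"
  shows "n11 h \<delta> k * X1 h \<delta> k + n12 h \<delta> k * X2 h \<delta> k = lam h \<delta> k * X1 h \<delta> k"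
    and "n21 h \<delta> k * X1 h \<delta> k + n22 h \<delta> k * X2 h \<delta> k = lam h \<delta> k * X2 h \<delta> k"
proof -
  have d: "n11 h \<delta> k * n22 h \<delta> k - n12 h \<delta> k * n21 h \<delta> k = 1" by (rule det_n[OF assms])
  have lm: "lam h \<delta> k * mu h \<delta> k = 1" by (rule lam_mu)
  have t: "lam h \<delta> k + mu h \<delta> k = n11 h \<delta> k + n22 h \<delta> k" by (simp add: lam_plus_mu tr_n)
  note E = eig2v[OF d lm t]
  show "n11 h \<delta> k * X1 h \<delta> k + n12 h \<delta> k * X2 h \<delta> k = lam h \<delta> k * X1 h \<delta> k"
  proof -
    have "n11 h \<delta> k * X1 h \<delta> k + n12 h \<delta> k * X2 h \<delta> k = \<i> / ww h \<delta> k * (n11 h \<delta> k * n12 h \<delta> k + n12 h \<delta> k * (n22 h \<delta> k - mu h \<delta> k))"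
      unfolding X1_def X2_def by (simp add: algebra_simps)
    then show ?thesis unfolding E(1) X1_def by (simp add: algebra_simps)
  qed
  show "n21 h \<delta> k * X1 h \<delta> k + n22 h \<delta> k * X2 h \<delta> k = lam h \<delta> k * X2 h \<delta> k"
  proof -
    have "n21 h \<delta> k * X1 h \<delta> k + n22 h \<delta> k * X2 h \<delta> k = \<i> / ww h \<delta> k * (n21 h \<delta> k * n12 h \<delta> k + n22 h \<delta> k * (n22 h \<delta> k - mu h \<delta> k))"
      unfolding X1_def X2_def by (simp add: algebra_simps)
    then show ?thesis unfolding E(2) X2_def by (simp add: algebra_simps)
  qed
qed

lemma eigY: assumes "adm h \<delta>"
  shows "n11 h \<delta> k * X1 h \<delta> k + n12 h \<delta> k * Y2 h \<delta> k = mu h \<delta> k * X1 h \<delta> k"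
    and "n21 h \<delta> k * X1 h \<delta> k + n22 h \<delta> k * Y2 h \<delta> k = mu h \<delta> k * Y2 h \<delta> k"
proof -
  have d: "n11 h \<delta> k * n22 h \<delta> k - n12 h \<delta> k * n21 h \<delta> k = 1" by (rule det_n[OF assms])
  have lm: "mu h \<delta> k * lam h \<delta> k = 1" using lam_mu[of h \<delta> k] by (simp add: mult.commute)
  have t: "mu h \<delta> k + lam h \<delta> k = n11 h \<delta> k + n22 h \<delta> k" by (simp add: lam_plus_mu tr_n add.commute)
  note E = eig2v[OF d lm t]
  show "n11 h \<delta> k * X1 h \<delta> k + n12 h \<delta> k * Y2 h \<delta> k = mu h \<delta> k * X1 h \<delta> k"
  proof -
    have "n11 h \<delta> k * X1 h \<delta> k + n12 h \<delta> k * Y2 h \<delta> k = \<i> / ww h \<delta> k * (n11 h \<delta> k * n12 h \<delta> k + n12 h \<delta> k * (n22 h \<delta> k - lam h \<delta> k))"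
      unfolding X1_def Y2_def by (simp add: algebra_simps)
    then show ?thesis unfolding E(1) X1_def by (simp add: algebra_simps)
  qed
  show "n21 h \<delta> k * X1 h \<delta> k + n22 h \<delta> k * Y2 h \<delta> k = mu h \<delta> k * Y2 h \<delta> k"
  proof -
    have "n21 h \<delta> k * X1 h \<delta> k + n22 h \<delta> k * Y2 h \<delta> k = \<i> / ww h \<delta> k * (n21 h \<delta> k * n12 h \<delta> k + n22 h \<delta> k * (n22 h \<delta> k - lam h \<delta> k))"
      unfolding X1_def Y2_def by (simp add: algebra_simps)
    then show ?thesis unfolding E(2) Y2_def by (simp add: algebra_simps)
  qed
qed

definition F1 :: "real \<Rightarrow> real \<Rightarrow> int \<Rightarrow> real \<Rightarrow> complex" where
  "F1 h \<delta> s k = (if 0 \<le> s then lam h \<delta> k ^ nat s else lam h \<delta> k ^ nat (- s)) * X1 h \<delta> k"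
definition F2 :: "real \<Rightarrow> real \<Rightarrow> int \<Rightarrow> real \<Rightarrow> complex" where
  "F2 h \<delta> s k = (if 0 \<le> s then lam h \<delta> k ^ nat s * X2 h \<delta> k else lam h \<delta> k ^ nat (- s) * Y2 h \<delta> k)"

lemma F_rec: assumes "adm h \<delta>"
  shows "F1 h \<delta> s k = n11 h \<delta> k * F1 h \<delta> (s - 1) k + n12 h \<delta> k * F2 h \<delta> (s - 1) k"
    and "F2 h \<delta> s k = n21 h \<delta> k * F1 h \<delta> (s - 1) k + n22 h \<delta> k * F2 h \<delta> (s - 1) k + (if s = 0 then 2 else 0)"
proof -
  note eX = eigX[OF assms, of k] and eY = eigY[OF assms, of k]
  have lm: "lam h \<delta> k * mu h \<delta> k = 1" by (rule lam_mu)
  have "(F1 h \<delta> s k = n11 h \<delta> k * F1 h \<delta> (s - 1) k + n12 h \<delta> k * F2 h \<delta> (s - 1) k) \<and>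
        (F2 h \<delta> s k = n21 h \<delta> k * F1 h \<delta> (s - 1) k + n22 h \<delta> k * F2 h \<delta> (s - 1) k + (if s = 0 then 2 else 0))"
  proof (cases "1 \<le> s")
    case True
    define n where "n = nat (s - 1)"
    have "nat s = Suc n" unfolding n_def by (subst Suc_nat_eq_nat_zadd1) (use True in auto)
    then have n: "nat s = Suc n" "nat (s - 1) = n" unfolding n_def by auto
    have A: "n11 h \<delta> k * (lam h \<delta> k ^ n * X1 h \<delta> k) + n12 h \<delta> k * (lam h \<delta> k ^ n * X2 h \<delta> k) = lam h \<delta> k ^ Suc n * X1 h \<delta> k"
    proof -
      have "n11 h \<delta> k * (lam h \<delta> k ^ n * X1 h \<delta> k) + n12 h \<delta> k * (lam h \<delta> k ^ n * X2 h \<delta> k)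
          = lam h \<delta> k ^ n * (n11 h \<delta> k * X1 h \<delta> k + n12 h \<delta> k * X2 h \<delta> k)" by (simp add: algebra_simps)
      also have "\<dots> = lam h \<delta> k ^ Suc n * X1 h \<delta> k" unfolding eX(1) by (simp add: algebra_simps)
      finally show ?thesis .
    qed
    have B: "n21 h \<delta> k * (lam h \<delta> k ^ n * X1 h \<delta> k) + n22 h \<delta> k * (lam h \<delta> k ^ n * X2 h \<delta> k) = lam h \<delta> k ^ Suc n * X2 h \<delta> k"
    proof -
      have "n21 h \<delta> k * (lam h \<delta> k ^ n * X1 h \<delta> k) + n22 h \<delta> k * (lam h \<delta> k ^ n * X2 h \<delta> k)
          = lam h \<delta> k ^ n * (n21 h \<delta> k * X1 h \<delta> k + n22 h \<delta> k * X2 h \<delta> k)" by (simp add: algebra_simps)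
      also have "\<dots> = lam h \<delta> k ^ Suc n * X2 h \<delta> k" unfolding eX(2) by (simp add: algebra_simps)
      finally show ?thesis .
    qed
    have s1: "0 \<le> s - 1" "0 \<le> s" "s \<noteq> 0" using True by auto
    show ?thesis unfolding F1_def F2_def using s1 n A B by simp
  next
    case False
    show ?thesis
    proof (cases "s = 0")
      case True
      have "F1 h \<delta> (-1) k = lam h \<delta> k * X1 h \<delta> k" "F2 h \<delta> (-1) k = lam h \<delta> k * Y2 h \<delta> k"
        by (simp_all add: F1_def F2_def)
      moreover have "n11 h \<delta> k * (lam h \<delta> k * X1 h \<delta> k) + n12 h \<delta> k * (lam h \<delta> k * Y2 h \<delta> k) = X1 h \<delta> k"
      proof -
        have "n11 h \<delta> k * (lam h \<delta> k * X1 h \<delta> k) + n12 h \<delta> k * (lam h \<delta> k * Y2 h \<delta> k)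
           = lam h \<delta> k * (n11 h \<delta> k * X1 h \<delta> k + n12 h \<delta> k * Y2 h \<delta> k)" by (simp add: algebra_simps)
        also have "\<dots> = (lam h \<delta> k * mu h \<delta> k) * X1 h \<delta> k" unfolding eY(1) by (simp add: algebra_simps)
        finally show ?thesis unfolding lm by simp
      qed
      moreover have "n21 h \<delta> k * (lam h \<delta> k * X1 h \<delta> k) + n22 h \<delta> k * (lam h \<delta> k * Y2 h \<delta> k) = Y2 h \<delta> k"
      proof -
        have "n21 h \<delta> k * (lam h \<delta> k * X1 h \<delta> k) + n22 h \<delta> k * (lam h \<delta> k * Y2 h \<delta> k)
           = lam h \<delta> k * (n21 h \<delta> k * X1 h \<delta> k + n22 h \<delta> k * Y2 h \<delta> k)" by (simp add: algebra_simps)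
        also have "\<dots> = (lam h \<delta> k * mu h \<delta> k) * Y2 h \<delta> k" unfolding eY(2) by (simp add: algebra_simps)
        finally show ?thesis unfolding lm by simp
      qed
      ultimately show ?thesis using True X2_Y2[OF assms, of k] by (simp add: F1_def F2_def)
    next
      case False2: False
      with False have s: "s < 0" by simp
      have n1: "nat (- (s - 1)) = Suc (nat (- s))" using s by simp
      have "n11 h \<delta> k * (lam h \<delta> k ^ Suc (nat (- s)) * X1 h \<delta> k) + n12 h \<delta> k * (lam h \<delta> k ^ Suc (nat (- s)) * Y2 h \<delta> k)
          = lam h \<delta> k ^ nat (- s) * (lam h \<delta> k * (n11 h \<delta> k * X1 h \<delta> k + n12 h \<delta> k * Y2 h \<delta> k))"
        by (simp add: algebra_simps)
      also have "\<dots> = lam h \<delta> k ^ nat (- s) * X1 h \<delta> k" using eY(1) lm by (simp add: mult.assoc[symmetric])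
      finally have A: "n11 h \<delta> k * (lam h \<delta> k ^ Suc (nat (- s)) * X1 h \<delta> k) + n12 h \<delta> k * (lam h \<delta> k ^ Suc (nat (- s)) * Y2 h \<delta> k) = lam h \<delta> k ^ nat (- s) * X1 h \<delta> k" .
      have "n21 h \<delta> k * (lam h \<delta> k ^ Suc (nat (- s)) * X1 h \<delta> k) + n22 h \<delta> k * (lam h \<delta> k ^ Suc (nat (- s)) * Y2 h \<delta> k)
          = lam h \<delta> k ^ nat (- s) * (lam h \<delta> k * (n21 h \<delta> k * X1 h \<delta> k + n22 h \<delta> k * Y2 h \<delta> k))"
        by (simp add: algebra_simps)
      also have "\<dots> = lam h \<delta> k ^ nat (- s) * Y2 h \<delta> k" using eY(2) lm by (simp add: mult.assoc[symmetric])
      finally have B: "n21 h \<delta> k * (lam h \<delta> k ^ Suc (nat (- s)) * X1 h \<delta> k) + n22 h \<delta> k * (lam h \<delta> k ^ Suc (nat (- s)) * Y2 h \<delta> k) = lam h \<delta> k ^ nat (- s) * Y2 h \<delta> k" .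
      show ?thesis using s n1 A B by (simp add: F1_def F2_def)
    qed
  qed
  then show "F1 h \<delta> s k = n11 h \<delta> k * F1 h \<delta> (s - 1) k + n12 h \<delta> k * F2 h \<delta> (s - 1) k"
    and "F2 h \<delta> s k = n21 h \<delta> k * F1 h \<delta> (s - 1) k + n22 h \<delta> k * F2 h \<delta> (s - 1) k + (if s = 0 then 2 else 0)"
    by auto
qed

definition Om :: "real \<Rightarrow> (real \<times> real) set" where
  "Om h = {p. adm h (fst p)}"

lemma cont_kap: "continuous_on (Om h) (\<lambda>p. kap h (fst p))"
  unfolding kap_def Om_def using onehsq
  by (intro continuous_intros) (auto dest: adm_sq_lt1)

lemma cont_zz: "continuous_on (Om h) (\<lambda>p. zz h (fst p) (snd p))"
  unfolding zz_def by (intro continuous_intros cont_kap) 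

lemma cont_ww: "continuous_on (Om h) (\<lambda>p. ww h (fst p) (snd p))"
  unfolding ww_def
  by (rule continuous_on_compose2[OF continuous_on_csqrt], (intro continuous_intros cont_zz)) (auto simp: Om_def not_nonpos)

lemma cont_lam: "continuous_on (Om h) (\<lambda>p. lam h (fst p) (snd p))"
  unfolding lam_def by (intro continuous_intros cont_zz cont_ww)

lemma cont_mu: "continuous_on (Om h) (\<lambda>p. mu h (fst p) (snd p))"
  unfolding mu_def by (intro continuous_intros cont_zz cont_ww)

lemma cont_n12: "continuous_on (Om h) (\<lambda>p. n12 h (fst p) (snd p))"
  unfolding n12_def by (intro continuous_intros cont_kap)

lemma cont_n22: "continuous_on (Om h) (\<lambda>p. n22 h (fst p) (snd p))"
  unfolding n22_def by (intro continuous_intros cont_kap)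

lemma cont_X1: "continuous_on (Om h) (\<lambda>p. X1 h (fst p) (snd p))"
  unfolding X1_def by (intro continuous_intros cont_n12 cont_ww) (auto simp: Om_def ww_nz)

lemma cont_X2: "continuous_on (Om h) (\<lambda>p. X2 h (fst p) (snd p))"
  unfolding X2_def by (intro continuous_intros cont_n22 cont_mu cont_ww) (auto simp: Om_def ww_nz)

lemma cont_Y2: "continuous_on (Om h) (\<lambda>p. Y2 h (fst p) (snd p))"
  unfolding Y2_def by (intro continuous_intros cont_n22 cont_lam cont_ww) (auto simp: Om_def ww_nz)

lemma cont_F1: "continuous_on (Om h) (\<lambda>p. F1 h (fst p) s (snd p))"
  unfolding F1_def by (cases "0 \<le> s") (simp_all, (intro continuous_intros cont_lam cont_X1)+)

lemma cont_F2: "continuous_on (Om h) (\<lambda>p. F2 h (fst p) s (snd p))"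
  unfolding F2_def by (cases "0 \<le> s") (simp_all, (intro continuous_intros cont_lam cont_X2 cont_Y2)+)

lemma cont_fix: assumes "continuous_on (Om h) (\<lambda>p. f (fst p) (snd p))" "adm h \<delta>"
  shows "continuous_on S (f \<delta>)"
proof -
  have "continuous_on S (\<lambda>k. f (fst (\<delta>, k)) (snd (\<delta>, k)))"
    by (rule continuous_on_compose2[OF assms(1)]) (auto intro!: continuous_intros simp: Om_def assms(2))
  then show ?thesis by simp
qed

lemma cf_stencil: assumes "continuous_on {-pi..pi} G"
  shows "cf (\<lambda>k. (a * cis k + b + c * cis (- k)) * G k) j = a * cf G (j + 1) + b * cf G j + c * cf G (j - 1)"
proof -
  have c1: "continuous_on {-pi..pi} (\<lambda>k. a * (cis k * G k))" by (intro continuous_intros assms)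
  have c2: "continuous_on {-pi..pi} (\<lambda>k. b * G k)" by (intro continuous_intros assms)
  have c3: "continuous_on {-pi..pi} (\<lambda>k. c * (cis (- k) * G k))" by (intro continuous_intros assms)
  have "cf (\<lambda>k. (a * cis k + b + c * cis (- k)) * G k) j = cf (\<lambda>k. (a * (cis k * G k) + b * G k) + c * (cis (- k) * G k)) j"
    by (simp add: algebra_simps)
  also have "\<dots> = cf (\<lambda>k. a * (cis k * G k)) j + cf (\<lambda>k. b * G k) j + cf (\<lambda>k. c * (cis (- k) * G k)) j"
    using c1 c2 c3 by (simp add: cf_add continuous_on_add)
  also have "\<dots> = a * cf G (j + 1) + b * cf G j + c * cf G (j - 1)"
    by (simp add: cf_cmult cf_shift cf_shiftm)
  finally show ?thesis .
qed

definition u1 :: "real \<Rightarrow> real \<Rightarrow> int \<Rightarrow> int \<Rightarrow> complex" where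
  "u1 h \<delta> j s = cf (F1 h \<delta> s) j"
definition u2 :: "real \<Rightarrow> real \<Rightarrow> int \<Rightarrow> int \<Rightarrow> complex" where
  "u2 h \<delta> j s = cf (F2 h \<delta> s) j"

lemma n11_st: "n11 h \<delta> k = of_real (kap h \<delta>) * cis k + of_real (kap h \<delta>) * \<i> * of_real (\<delta> * h) + 0 * cis (- k)"
  unfolding n11_def by (simp add: algebra_simps)
lemma n12_st: "n12 h \<delta> k = (- of_real (kap h \<delta>) * \<i> * of_real \<delta>) * cis k + of_real (kap h \<delta>) * of_real h + 0 * cis (- k)"
  unfolding n12_def by (simp add: algebra_simps)
lemma n21_st: "n21 h \<delta> k = 0 * cis k + (- of_real (kap h \<delta>) * of_real h) + (of_real (kap h \<delta>) * \<i> * of_real \<delta>) * cis (- k)"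
  unfolding n21_def by (simp add: algebra_simps)
lemma n22_st: "n22 h \<delta> k = 0 * cis k + of_real (kap h \<delta>) * \<i> * of_real (\<delta> * h) + of_real (kap h \<delta>) * cis (- k)"
  unfolding n22_def by (simp add: algebra_simps)

lemma cF1: "adm h \<delta> \<Longrightarrow> continuous_on S (F1 h \<delta> s)"
  by (rule cont_fix[OF cont_F1])
lemma cF2: "adm h \<delta> \<Longrightarrow> continuous_on S (F2 h \<delta> s)"
  by (rule cont_fix[OF cont_F2])

lemma u_rec: assumes "adm h \<delta>"
  shows "u1 h \<delta> j s = of_real (kap h \<delta>) * (u1 h \<delta> (j + 1) (s - 1) + \<i> * of_real (\<delta> * h) * u1 h \<delta> j (s - 1)
            + of_real h * u2 h \<delta> j (s - 1) - \<i> * of_real \<delta> * u2 h \<delta> (j + 1) (s - 1))"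
    and "u2 h \<delta> j s = of_real (kap h \<delta>) * (- of_real h * u1 h \<delta> j (s - 1) + \<i> * of_real \<delta> * u1 h \<delta> (j - 1) (s - 1)
            + \<i> * of_real (\<delta> * h) * u2 h \<delta> j (s - 1) + u2 h \<delta> (j - 1) (s - 1)) + (if j = 0 \<and> s = 0 then 2 else 0)"
proof -
  note c1 = cF1[OF assms, of "{-pi..pi}"] and c2 = cF2[OF assms, of "{-pi..pi}"]
  have cn11: "continuous_on {-pi..pi} (\<lambda>k. n11 h \<delta> k * F1 h \<delta> (s - 1) k)"
    unfolding n11_def by (intro continuous_intros c1)
  have cn12: "continuous_on {-pi..pi} (\<lambda>k. n12 h \<delta> k * F2 h \<delta> (s - 1) k)"
    unfolding n12_def by (intro continuous_intros c2)
  have cn21: "continuous_on {-pi..pi} (\<lambda>k. n21 h \<delta> k * F1 h \<delta> (s - 1) k)"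
    unfolding n21_def by (intro continuous_intros c1)
  have cn22: "continuous_on {-pi..pi} (\<lambda>k. n22 h \<delta> k * F2 h \<delta> (s - 1) k)"
    unfolding n22_def by (intro continuous_intros c2)
  have "u1 h \<delta> j s = cf (\<lambda>k. n11 h \<delta> k * F1 h \<delta> (s - 1) k + n12 h \<delta> k * F2 h \<delta> (s - 1) k) j"
    unfolding u1_def by (rule arg_cong[where f="\<lambda>F. cf F j"], rule ext, rule F_rec(1)[OF assms])
  also have "\<dots> = cf (\<lambda>k. n11 h \<delta> k * F1 h \<delta> (s - 1) k) j + cf (\<lambda>k. n12 h \<delta> k * F2 h \<delta> (s - 1) k) j"
    by (rule cf_add[OF cn11 cn12])
  also have "\<dots> = of_real (kap h \<delta>) * (u1 h \<delta> (j + 1) (s - 1) + \<i> * of_real (\<delta> * h) * u1 h \<delta> j (s - 1)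
            + of_real h * u2 h \<delta> j (s - 1) - \<i> * of_real \<delta> * u2 h \<delta> (j + 1) (s - 1))"
    unfolding n11_st n12_st cf_stencil[OF c1] cf_stencil[OF c2] u1_def u2_def
    by (simp add: algebra_simps)
  finally show "u1 h \<delta> j s = of_real (kap h \<delta>) * (u1 h \<delta> (j + 1) (s - 1) + \<i> * of_real (\<delta> * h) * u1 h \<delta> j (s - 1)
            + of_real h * u2 h \<delta> j (s - 1) - \<i> * of_real \<delta> * u2 h \<delta> (j + 1) (s - 1))" .
  have "u2 h \<delta> j s = cf (\<lambda>k. (n21 h \<delta> k * F1 h \<delta> (s - 1) k + n22 h \<delta> k * F2 h \<delta> (s - 1) k) + (if s = 0 then 2 else 0)) j"
    unfolding u2_def by (rule arg_cong[where f="\<lambda>F. cf F j"], rule ext, rule F_rec(2)[OF assms])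
  also have "\<dots> = cf (\<lambda>k. n21 h \<delta> k * F1 h \<delta> (s - 1) k) j + cf (\<lambda>k. n22 h \<delta> k * F2 h \<delta> (s - 1) k) j
       + cf (\<lambda>k. if s = 0 then 2 else 0) j"
    using cn21 cn22 by (simp add: cf_add continuous_on_add)
  also have "\<dots> = of_real (kap h \<delta>) * (- of_real h * u1 h \<delta> j (s - 1) + \<i> * of_real \<delta> * u1 h \<delta> (j - 1) (s - 1)
            + \<i> * of_real (\<delta> * h) * u2 h \<delta> j (s - 1) + u2 h \<delta> (j - 1) (s - 1)) + (if j = 0 \<and> s = 0 then 2 else 0)"
    unfolding n21_st n22_st cf_stencil[OF c1] cf_stencil[OF c2] u1_def u2_def cf_const
    by (simp add: algebra_simps)
  finally show "u2 h \<delta> j s = of_real (kap h \<delta>) * (- of_real h * u1 h \<delta> j (s - 1) + \<i> * of_real \<delta> * u1 h \<delta> (j - 1) (s - 1)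
            + \<i> * of_real (\<delta> * h) * u2 h \<delta> j (s - 1) + u2 h \<delta> (j - 1) (s - 1)) + (if j = 0 \<and> s = 0 then 2 else 0)" .
qed

lemma geo_int_sum:
  fixes q :: real assumes q: "0 \<le> q" "q < 1" and fin: "finite S"
  shows "(\<Sum>s\<in>S. q ^ nat \<bar>s\<bar>) \<le> 2 / (1 - q)"
proof -
  have summ: "summable (\<lambda>n. q ^ n)" using q by simp
  have suminf: "(\<Sum>n. q ^ n) = 1 / (1 - q)" using q by (simp add: suminf_geometric)
  have part: "(\<Sum>s\<in>T. q ^ nat \<bar>s\<bar>) \<le> 1 / (1 - q)" if T: "finite T" "inj_on (\<lambda>s. nat \<bar>s\<bar>) T" for T :: "int set"
  proof -
    have "(\<Sum>s\<in>T. q ^ nat \<bar>s\<bar>) = (\<Sum>n\<in>(\<lambda>s. nat \<bar>s\<bar>) ` T. q ^ n)"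
      using T by (simp add: sum.reindex)
    also have "\<dots> \<le> (\<Sum>n. q ^ n)"
      by (rule sum_le_suminf[OF summ]) (use T q in auto)
    finally show ?thesis using suminf by simp
  qed
  have S: "S = {s\<in>S. 0 \<le> s} \<union> {s\<in>S. s < 0}" by auto
  have "(\<Sum>s\<in>S. q ^ nat \<bar>s\<bar>) = (\<Sum>s\<in>{s\<in>S. 0 \<le> s}. q ^ nat \<bar>s\<bar>) + (\<Sum>s\<in>{s\<in>S. s < 0}. q ^ nat \<bar>s\<bar>)"
    using fin by (subst S, subst sum.union_disjoint) auto
  also have "\<dots> \<le> 1 / (1 - q) + 1 / (1 - q)"
  proof (rule add_mono; rule part)
    show "inj_on (\<lambda>s. nat \<bar>s\<bar>) {s \<in> S. 0 \<le> s}" by (auto simp: inj_on_def)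
    show "inj_on (\<lambda>s. nat \<bar>s\<bar>) {s \<in> S. s < 0}" by (auto simp: inj_on_def)
  qed (use fin in auto)
  finally show ?thesis by simp
qed

lemma F_bound: assumes "adm h \<delta>" "0 < \<delta>"
  shows "\<exists>r B. 0 \<le> r \<and> r < 1 \<and> 0 \<le> B \<and>
    (\<forall>k\<in>{-pi..pi}. \<forall>s. cmod (F1 h \<delta> s k) \<le> B * r ^ nat \<bar>s\<bar> \<and> cmod (F2 h \<delta> s k) \<le> B * r ^ nat \<bar>s\<bar>)"
proof -
  have cl: "continuous_on {-pi..pi} (\<lambda>k. cmod (lam h \<delta> k))"
    by (intro continuous_intros cont_fix[OF cont_lam assms(1)])
  obtain k0 where k0: "k0 \<in> {-pi..pi}" "\<And>k. k \<in> {-pi..pi} \<Longrightarrow> cmod (lam h \<delta> k) \<le> cmod (lam h \<delta> k0)"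
    using continuous_attains_sup[OF compact_Icc _ cl] by auto
  have cb: "continuous_on {-pi..pi} (\<lambda>k. cmod (X1 h \<delta> k) + cmod (X2 h \<delta> k) + cmod (Y2 h \<delta> k))"
    by (intro continuous_intros cont_fix[OF cont_X1 assms(1)] cont_fix[OF cont_X2 assms(1)] cont_fix[OF cont_Y2 assms(1)])
  obtain k1 where k1: "k1 \<in> {-pi..pi}" "\<And>k. k \<in> {-pi..pi} \<Longrightarrow> cmod (X1 h \<delta> k) + cmod (X2 h \<delta> k) + cmod (Y2 h \<delta> k) \<le> cmod (X1 h \<delta> k1) + cmod (X2 h \<delta> k1) + cmod (Y2 h \<delta> k1)"
    using continuous_attains_sup[OF compact_Icc _ cb] by auto
  define r where "r = cmod (lam h \<delta> k0)"
  define B where "B = cmod (X1 h \<delta> k1) + cmod (X2 h \<delta> k1) + cmod (Y2 h \<delta> k1)"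
  have r: "0 \<le> r" "r < 1" unfolding r_def using lam_lt1[OF assms] by auto
  have B: "0 \<le> B" unfolding B_def by simp
  have pw: "cmod (lam h \<delta> k) ^ n \<le> r ^ n" if "k \<in> {-pi..pi}" for k n
    using k0(2)[OF that] by (intro power_mono) (auto simp: r_def)
  have "cmod (F1 h \<delta> s k) \<le> B * r ^ nat \<bar>s\<bar> \<and> cmod (F2 h \<delta> s k) \<le> B * r ^ nat \<bar>s\<bar>" if k: "k \<in> {-pi..pi}" for k s
  proof -
    have bX1: "cmod (X1 h \<delta> k) \<le> B" and bX2: "cmod (X2 h \<delta> k) \<le> B" and bY2: "cmod (Y2 h \<delta> k) \<le> B"
      using k1(2)[OF k] unfolding B_def by (smt (verit) norm_ge_zero)+
    have pn: "cmod (lam h \<delta> k) ^ nat \<bar>s\<bar> \<le> r ^ nat \<bar>s\<bar>" by (rule pw[OF k])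
    have "cmod (lam h \<delta> k) ^ nat \<bar>s\<bar> * cmod (X1 h \<delta> k) \<le> r ^ nat \<bar>s\<bar> * B"
      by (intro mult_mono pn bX1) (use r in auto)
    moreover have "cmod (lam h \<delta> k) ^ nat \<bar>s\<bar> * cmod (X2 h \<delta> k) \<le> r ^ nat \<bar>s\<bar> * B"
      by (intro mult_mono pn bX2) (use r in auto)
    moreover have "cmod (lam h \<delta> k) ^ nat \<bar>s\<bar> * cmod (Y2 h \<delta> k) \<le> r ^ nat \<bar>s\<bar> * B"
      by (intro mult_mono pn bY2) (use r in auto)
    ultimately show ?thesis unfolding F1_def F2_def
      by (cases "0 \<le> s") (auto simp: norm_mult norm_power mult.commute)
  qed
  then show ?thesis using r B by blast
qed

lemma integral_sq_bound: assumes "continuous_on {-pi..pi} F" "\<And>k. k \<in> {-pi..pi} \<Longrightarrow> cmod (F k) \<le> C"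
  shows "integral {-pi..pi} (\<lambda>k. (cmod (F k))\<^sup>2) / (2 * pi) \<le> C\<^sup>2"
proof -
  have "integral {-pi..pi} (\<lambda>k. (cmod (F k))\<^sup>2) \<le> integral {-pi..pi} (\<lambda>k. C\<^sup>2)"
    by (intro integral_le integrable_continuous_interval continuous_intros assms(1))
       (auto intro!: power_mono assms(2))
  also have "\<dots> = 2 * pi * C\<^sup>2" by simp
  finally show ?thesis by (simp add: field_simps)
qed

lemma u_layer_bound: assumes "adm h \<delta>" "0 < \<delta>"
  shows "\<exists>q C. 0 \<le> q \<and> q < 1 \<and> 0 \<le> C \<and> (\<forall>J s. finite J \<longrightarrow>
     (\<Sum>j\<in>J. (cmod (u1 h \<delta> j s))\<^sup>2 + (cmod (u2 h \<delta> j s))\<^sup>2) \<le> C * q ^ nat \<bar>s\<bar>)"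
proof -
  obtain r B where rB: "0 \<le> r" "r < 1" "0 \<le> B"
    "\<And>k s. k \<in> {-pi..pi} \<Longrightarrow> cmod (F1 h \<delta> s k) \<le> B * r ^ nat \<bar>s\<bar> \<and> cmod (F2 h \<delta> s k) \<le> B * r ^ nat \<bar>s\<bar>"
    using F_bound[OF assms] by blast
  have "(\<Sum>j\<in>J. (cmod (u1 h \<delta> j s))\<^sup>2 + (cmod (u2 h \<delta> j s))\<^sup>2) \<le> (2 * B\<^sup>2) * (r\<^sup>2) ^ nat \<bar>s\<bar>" if J: "finite J" for J s
  proof -
    have "(\<Sum>j\<in>J. (cmod (u1 h \<delta> j s))\<^sup>2) \<le> (B * r ^ nat \<bar>s\<bar>)\<^sup>2"
      unfolding u1_def
    proof (rule order_trans[OF bessel[OF cF1[OF assms(1)] J]])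
      show "integral {-pi..pi} (\<lambda>k. (cmod (F1 h \<delta> s k))\<^sup>2) / (2 * pi) \<le> (B * r ^ nat \<bar>s\<bar>)\<^sup>2"
        by (rule integral_sq_bound[OF cF1[OF assms(1)]]) (use rB(4) in blast)
    qed
    moreover have "(\<Sum>j\<in>J. (cmod (u2 h \<delta> j s))\<^sup>2) \<le> (B * r ^ nat \<bar>s\<bar>)\<^sup>2"
      unfolding u2_def
    proof (rule order_trans[OF bessel[OF cF2[OF assms(1)] J]])
      show "integral {-pi..pi} (\<lambda>k. (cmod (F2 h \<delta> s k))\<^sup>2) / (2 * pi) \<le> (B * r ^ nat \<bar>s\<bar>)\<^sup>2"
        by (rule integral_sq_bound[OF cF2[OF assms(1)]]) (use rB(4) in blast)
    qed
    ultimately show ?thesis by (simp add: sum.distrib power_mult_distrib power_mult[symmetric] mult.commute[of 2] power_even_eq)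
  qed
  moreover have "0 \<le> r\<^sup>2" "r\<^sup>2 < 1" using rB by (auto simp: power_strict_mono abs_square_less_1)
  ultimately show ?thesis using rB(3) by (intro exI[of _ "r\<^sup>2"] exI[of _ "2 * B\<^sup>2"]) auto
qed

lemma u_summable: assumes "adm h \<delta>" "0 < \<delta>"
  shows "(\<lambda>(j, s). (cmod (u1 h \<delta> j s))\<^sup>2 + (cmod (u2 h \<delta> j s))\<^sup>2) summable_on UNIV"
proof -
  obtain q C where qC: "0 \<le> q" "q < 1" "0 \<le> C"
    "\<And>J s. finite J \<Longrightarrow> (\<Sum>j\<in>J. (cmod (u1 h \<delta> j s))\<^sup>2 + (cmod (u2 h \<delta> j s))\<^sup>2) \<le> C * q ^ nat \<bar>s\<bar>"
    using u_layer_bound[OF assms] by blast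
  define g where "g = (\<lambda>(j::int, s::int). (cmod (u1 h \<delta> j s))\<^sup>2 + (cmod (u2 h \<delta> j s))\<^sup>2)"
  have bd: "sum g P \<le> C * (2 / (1 - q))" if P: "finite P" for P
  proof -
    have "sum g P \<le> sum g (fst ` P \<times> snd ` P)"
      by (rule sum_mono2) (use P in \<open>auto simp: g_def case_prod_beta intro: rev_image_eqI\<close>)
    also have "\<dots> = (\<Sum>j\<in>fst ` P. \<Sum>s\<in>snd ` P. g (j, s))"
      by (simp add: sum.cartesian_product)
    also have "\<dots> = (\<Sum>s\<in>snd ` P. \<Sum>j\<in>fst ` P. g (j, s))"
      by (rule sum.swap)
    also have "\<dots> \<le> (\<Sum>s\<in>snd ` P. C * q ^ nat \<bar>s\<bar>)"
      by (intro sum_mono) (use P qC(4) in \<open>auto simp: g_def\<close>)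
    also have "\<dots> = C * (\<Sum>s\<in>snd ` P. q ^ nat \<bar>s\<bar>)" by (simp add: sum_distrib_left)
    also have "\<dots> \<le> C * (2 / (1 - q))"
      by (intro mult_left_mono geo_int_sum) (use qC P in auto)
    finally show ?thesis .
  qed
  have "g summable_on UNIV"
    by (rule nonneg_bdd_above_summable_on) (auto simp: g_def bdd_above_def intro!: exI[of _ "C * (2 / (1 - q))"] bd[unfolded g_def])
  then show ?thesis unfolding g_def .
qed

definition l2 :: "(int \<Rightarrow> complex) \<Rightarrow> bool" where
  "l2 f \<longleftrightarrow> (\<lambda>j. (cmod (f j))\<^sup>2) summable_on UNIV"

lemma bij_shift: "bij_betw (\<lambda>j::int. j + c) UNIV UNIV"
  by (rule bij_betwI[of _ _ _ "\<lambda>j. j - c"]) auto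

lemma l2_shift: "l2 f \<Longrightarrow> l2 (\<lambda>j. f (j + c))"
  unfolding l2_def summable_on_def
  using has_sum_reindex_bij_betw[OF bij_shift[of c], of "\<lambda>j. (cmod (f j))\<^sup>2"] by blast

lemma prod_abs_summable: assumes "l2 f" "l2 g"
  shows "(\<lambda>j. norm (f j * g j)) summable_on UNIV"
proof (rule summable_on_comparison_test)
  show "(\<lambda>j. (cmod (f j))\<^sup>2 + (cmod (g j))\<^sup>2) summable_on UNIV"
    using assms unfolding l2_def by (rule summable_on_add)
  show "norm (f j * g j) \<le> (cmod (f j))\<^sup>2 + (cmod (g j))\<^sup>2" for j
  proof -
    have "0 \<le> (cmod (f j) - cmod (g j))\<^sup>2" by simp
    then have "2 * (cmod (f j) * cmod (g j)) \<le> (cmod (f j))\<^sup>2 + (cmod (g j))\<^sup>2"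
      by (simp add: power2_eq_square algebra_simps)
    moreover have "0 \<le> cmod (f j) * cmod (g j)" by simp
    ultimately show ?thesis unfolding norm_mult by linarith
  qed
qed auto

lemma prod_summable: "l2 f \<Longrightarrow> l2 g \<Longrightarrow> (\<lambda>j. f j * g j) summable_on UNIV"
  by (rule abs_summable_summable[OF prod_abs_summable])

definition PP :: "(int \<Rightarrow> complex) \<Rightarrow> (int \<Rightarrow> complex) \<Rightarrow> int \<Rightarrow> complex" where
  "PP f g c = infsum (\<lambda>j. f j * g (j + c)) UNIV"

lemma PP_has1: "l2 f \<Longrightarrow> l2 g \<Longrightarrow> ((\<lambda>j. f j * g (j + c)) has_sum PP f g c) UNIV"
  unfolding PP_def by (intro has_sum_infsum prod_summable l2_shift)

lemma PP_has2: assumes "l2 f" "l2 g" shows "((\<lambda>j. f (j - c) * g j) has_sum PP f g c) UNIV"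
proof -
  have "((\<lambda>j. (\<lambda>i. f i * g (i + c)) (j - c)) has_sum PP f g c) UNIV"
    using has_sum_reindex_bij_betw[OF bij_shift[of "- c"], of "\<lambda>i. f i * g (i + c)"] PP_has1[OF assms, of c]
    by simp
  then show ?thesis by simp
qed

lemma adj_pair:
  fixes K A H E :: complex
  assumes "l2 G1" "l2 G2" "l2 D1" "l2 D2"
  shows "infsum (\<lambda>j. G1 j * (K * (D1 (j + 1) + A * D1 j + H * D2 j - E * D2 (j + 1)))
                  + G2 j * (K * (- H * D1 j + E * D1 (j - 1) + A * D2 j + D2 (j - 1)))) UNIV
       = infsum (\<lambda>j. (K * (G1 (j - 1) + A * G1 j - H * G2 j + E * G2 (j + 1))) * D1 j
                  + (K * (H * G1 j - E * G1 (j - 1) + A * G2 j + G2 (j + 1))) * D2 j) UNIV"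
proof -
  define S where "S = K * PP G1 D1 1 + K * A * PP G1 D1 0 + K * H * PP G1 D2 0 + (- K * E) * PP G1 D2 1
     + (- K * H) * PP G2 D1 0 + K * E * PP G2 D1 (-1) + K * A * PP G2 D2 0 + K * PP G2 D2 (-1)"
  note h1 = PP_has1[OF assms(1) assms(3)] PP_has1[OF assms(1) assms(4)] PP_has1[OF assms(2) assms(3)] PP_has1[OF assms(2) assms(4)]
  note h2 = PP_has2[OF assms(1) assms(3)] PP_has2[OF assms(1) assms(4)] PP_has2[OF assms(2) assms(3)] PP_has2[OF assms(2) assms(4)]
  have L: "((\<lambda>j. K * (G1 j * D1 (j + 1)) + K * A * (G1 j * D1 (j + 0)) + K * H * (G1 j * D2 (j + 0))
      + (- K * E) * (G1 j * D2 (j + 1)) + (- K * H) * (G2 j * D1 (j + 0)) + K * E * (G2 j * D1 (j + - 1))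
      + K * A * (G2 j * D2 (j + 0)) + K * (G2 j * D2 (j + - 1))) has_sum S) UNIV"
    unfolding S_def by (intro has_sum_add has_sum_cmult_right h1)
  have R: "((\<lambda>j. K * (G1 (j - 1) * D1 j) + K * A * (G1 (j - 0) * D1 j) + K * H * (G1 (j - 0) * D2 j)
      + (- K * E) * (G1 (j - 1) * D2 j) + (- K * H) * (G2 (j - 0) * D1 j) + K * E * (G2 (j - - 1) * D1 j)
      + K * A * (G2 (j - 0) * D2 j) + K * (G2 (j - - 1) * D2 j)) has_sum S) UNIV"
    unfolding S_def by (intro has_sum_add has_sum_cmult_right h2)
  have "infsum (\<lambda>j. G1 j * (K * (D1 (j + 1) + A * D1 j + H * D2 j - E * D2 (j + 1)))
                  + G2 j * (K * (- H * D1 j + E * D1 (j - 1) + A * D2 j + D2 (j - 1)))) UNIV = S"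
    by (rule infsumI, rule iffD1[OF has_sum_cong L]) (simp add: algebra_simps)
  moreover have "infsum (\<lambda>j. (K * (G1 (j - 1) + A * G1 j - H * G2 j + E * G2 (j + 1))) * D1 j
                  + (K * (H * G1 j - E * G1 (j - 1) + A * G2 j + G2 (j + 1))) * D2 j) UNIV = S"
    by (rule infsumI, rule iffD1[OF has_sum_cong R]) (simp add: algebra_simps)
  ultimately show ?thesis by simp
qed

definition Phi :: "(int \<Rightarrow> int \<Rightarrow> complex) \<Rightarrow> (int \<Rightarrow> int \<Rightarrow> complex) \<Rightarrow> (int \<Rightarrow> int \<Rightarrow> complex) \<Rightarrow> (int \<Rightarrow> int \<Rightarrow> complex) \<Rightarrow> int \<Rightarrow> complex" where
  "Phi G1 G2 d1 d2 s = infsum (\<lambda>j. G1 j s * d1 j s + G2 j s * d2 j s) UNIV"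

lemma phi_step:
  fixes K A H E :: complex
  assumes l: "l2 (\<lambda>j. G1 j s)" "l2 (\<lambda>j. G2 j s)" "l2 (\<lambda>j. d1 j (s - 1))" "l2 (\<lambda>j. d2 j (s - 1))"
    and dr1: "\<And>j. d1 j s = K * (d1 (j + 1) (s - 1) + A * d1 j (s - 1) + H * d2 j (s - 1) - E * d2 (j + 1) (s - 1))"
    and dr2: "\<And>j. d2 j s = K * (- H * d1 j (s - 1) + E * d1 (j - 1) (s - 1) + A * d2 j (s - 1) + d2 (j - 1) (s - 1))"
    and gr1: "\<And>j. G1 j (s - 1) = K * (G1 (j - 1) s + A * G1 j s - H * G2 j s + E * G2 (j + 1) s)"
    and gr2: "\<And>j. G2 j (s - 1) = K * (H * G1 j s - E * G1 (j - 1) s + A * G2 j s + G2 (j + 1) s)"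
  shows "Phi G1 G2 d1 d2 s = Phi G1 G2 d1 d2 (s - 1)"
proof -
  have "Phi G1 G2 d1 d2 s = infsum (\<lambda>j. G1 j s * (K * (d1 (j + 1) (s - 1) + A * d1 j (s - 1) + H * d2 j (s - 1) - E * d2 (j + 1) (s - 1)))
                  + G2 j s * (K * (- H * d1 j (s - 1) + E * d1 (j - 1) (s - 1) + A * d2 j (s - 1) + d2 (j - 1) (s - 1)))) UNIV"
    unfolding Phi_def dr1 dr2 ..
  also have "\<dots> = infsum (\<lambda>j. (K * (G1 (j - 1) s + A * G1 j s - H * G2 j s + E * G2 (j + 1) s)) * d1 j (s - 1)
                  + (K * (H * G1 j s - E * G1 (j - 1) s + A * G2 j s + G2 (j + 1) s)) * d2 j (s - 1)) UNIV"
    by (rule adj_pair[OF l])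
  also have "\<dots> = Phi G1 G2 d1 d2 (s - 1)"
    unfolding Phi_def gr1 gr2 ..
  finally show ?thesis .
qed

lemma amgm_rho: assumes "0 < (\<rho>::real)" shows "a * b \<le> \<rho> / 2 * a\<^sup>2 + 1 / (2 * \<rho>) * b\<^sup>2"
proof -
  have "0 \<le> (\<rho> * a - b)\<^sup>2 / (2 * \<rho>)" using assms by simp
  also have "(\<rho> * a - b)\<^sup>2 / (2 * \<rho>) = \<rho> / 2 * a\<^sup>2 + 1 / (2 * \<rho>) * b\<^sup>2 - a * b"
    using assms by (simp add: power2_eq_square field_simps)
  finally show ?thesis by simp
qed

lemma phi_bound:
  assumes l: "l2 (\<lambda>j. G1 j s)" "l2 (\<lambda>j. G2 j s)" "l2 (\<lambda>j. d1 j s)" "l2 (\<lambda>j. d2 j s)" and r: "0 < \<rho>"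
  shows "cmod (Phi G1 G2 d1 d2 s) \<le> \<rho> / 2 * infsum (\<lambda>j. (cmod (G1 j s))\<^sup>2 + (cmod (G2 j s))\<^sup>2) UNIV
            + 1 / (2 * \<rho>) * infsum (\<lambda>j. (cmod (d1 j s))\<^sup>2 + (cmod (d2 j s))\<^sup>2) UNIV"
proof -
  have sG: "(\<lambda>j. (cmod (G1 j s))\<^sup>2 + (cmod (G2 j s))\<^sup>2) summable_on UNIV"
    using l(1,2) unfolding l2_def by (rule summable_on_add)
  have sd: "(\<lambda>j. (cmod (d1 j s))\<^sup>2 + (cmod (d2 j s))\<^sup>2) summable_on UNIV"
    using l(3,4) unfolding l2_def by (rule summable_on_add)
  have pw: "norm (G1 j s * d1 j s + G2 j s * d2 j s) \<le> \<rho> / 2 * ((cmod (G1 j s))\<^sup>2 + (cmod (G2 j s))\<^sup>2)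
            + 1 / (2 * \<rho>) * ((cmod (d1 j s))\<^sup>2 + (cmod (d2 j s))\<^sup>2)" for j
  proof -
    have "norm (G1 j s * d1 j s + G2 j s * d2 j s) \<le> cmod (G1 j s) * cmod (d1 j s) + cmod (G2 j s) * cmod (d2 j s)"
      by (metis norm_mult norm_triangle_ineq)
    also have "\<dots> \<le> (\<rho> / 2 * (cmod (G1 j s))\<^sup>2 + 1 / (2 * \<rho>) * (cmod (d1 j s))\<^sup>2)
                   + (\<rho> / 2 * (cmod (G2 j s))\<^sup>2 + 1 / (2 * \<rho>) * (cmod (d2 j s))\<^sup>2)"
      by (intro add_mono amgm_rho r)
    finally show ?thesis by (simp add: algebra_simps)
  qed
  have sR: "(\<lambda>j. \<rho> / 2 * ((cmod (G1 j s))\<^sup>2 + (cmod (G2 j s))\<^sup>2)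
            + 1 / (2 * \<rho>) * ((cmod (d1 j s))\<^sup>2 + (cmod (d2 j s))\<^sup>2)) summable_on UNIV"
    by (intro summable_on_add summable_on_cmult_right sG sd)
  have abs: "(\<lambda>j. norm (G1 j s * d1 j s + G2 j s * d2 j s)) summable_on UNIV"
    by (rule summable_on_comparison_test[OF sR]) (use pw in auto)
  have "cmod (Phi G1 G2 d1 d2 s) \<le> infsum (\<lambda>j. norm (G1 j s * d1 j s + G2 j s * d2 j s)) UNIV"
    unfolding Phi_def by (rule norm_infsum_bound[OF abs])
  also have "\<dots> \<le> infsum (\<lambda>j. \<rho> / 2 * ((cmod (G1 j s))\<^sup>2 + (cmod (G2 j s))\<^sup>2)
            + 1 / (2 * \<rho>) * ((cmod (d1 j s))\<^sup>2 + (cmod (d2 j s))\<^sup>2)) UNIV"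
    by (rule infsum_mono[OF abs sR pw])
  also have "\<dots> = \<rho> / 2 * infsum (\<lambda>j. (cmod (G1 j s))\<^sup>2 + (cmod (G2 j s))\<^sup>2) UNIV
            + 1 / (2 * \<rho>) * infsum (\<lambda>j. (cmod (d1 j s))\<^sup>2 + (cmod (d2 j s))\<^sup>2) UNIV"
  proof -
    define gG where "gG j = (cmod (G1 j s))\<^sup>2 + (cmod (G2 j s))\<^sup>2" for j
    define gd where "gd j = (cmod (d1 j s))\<^sup>2 + (cmod (d2 j s))\<^sup>2" for j
    have sG': "gG summable_on UNIV" using sG unfolding gG_def .
    have sd': "gd summable_on UNIV" using sd unfolding gd_def .
    have "infsum (\<lambda>j. \<rho> / 2 * gG j + 1 / (2 * \<rho>) * gd j) UNIV = infsum (\<lambda>j. \<rho> / 2 * gG j) UNIV + infsum (\<lambda>j. 1 / (2 * \<rho>) * gd j) UNIV"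
      by (rule infsum_add; rule summable_on_cmult_right; rule sG' sd')
    also have "\<dots> = \<rho> / 2 * infsum gG UNIV + 1 / (2 * \<rho>) * infsum gd UNIV"
      by (simp only: infsum_cmult_right[OF sG'] infsum_cmult_right[OF sd'])
    finally show ?thesis unfolding gG_def gd_def .
  qed
  finally show ?thesis .
qed

lemma small_layer:
  fixes DL :: "int \<Rightarrow> real"
  assumes s: "DL summable_on UNIV" and nn: "\<And>s. 0 \<le> DL s" and e: "0 < e"
  shows "\<exists>s\<ge>s0. DL s < e" and "\<exists>s\<le>s0. DL s < e"
proof -
  define T where "T = infsum DL UNIV"
  obtain N :: nat where N: "T / e < real N" using reals_Archimedean2 by blast
  have fin: "\<And>S. finite S \<Longrightarrow> sum DL S \<le> T"
    unfolding T_def by (rule finite_sum_le_infsum[OF s]) (use nn in auto)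
  show "\<exists>s\<ge>s0. DL s < e"
  proof (rule ccontr)
    assume "\<not> (\<exists>s\<ge>s0. DL s < e)"
    then have ge: "\<And>s. s \<ge> s0 \<Longrightarrow> e \<le> DL s" by (simp add: not_less)
    have "real N * e = (\<Sum>s\<in>{s0..<s0 + int N}. e)" by simp
    also have "\<dots> \<le> (\<Sum>s\<in>{s0..<s0 + int N}. DL s)" by (intro sum_mono ge) auto
    also have "\<dots> \<le> T" by (rule fin) simp
    finally show False using N e by (simp add: field_simps)
  qed
  show "\<exists>s\<le>s0. DL s < e"
  proof (rule ccontr)
    assume "\<not> (\<exists>s\<le>s0. DL s < e)"
    then have ge: "\<And>s. s \<le> s0 \<Longrightarrow> e \<le> DL s" by (simp add: not_less)
    have "real N * e = (\<Sum>s\<in>{s0 - int N<..s0}. e)" by simp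
    also have "\<dots> \<le> (\<Sum>s\<in>{s0 - int N<..s0}. DL s)" by (intro sum_mono ge) auto
    also have "\<dots> \<le> T" by (rule fin) simp
    finally show False using N e by (simp add: field_simps)
  qed
qed

lemma zero_from_bounds:
  fixes x :: real
  assumes "\<And>\<rho> e. 0 < \<rho> \<Longrightarrow> 0 < e \<Longrightarrow> x \<le> \<rho> / 2 * C + 1 / (2 * \<rho>) * e" "0 \<le> C"
  shows "x \<le> 0"
proof (rule ccontr)
  assume "\<not> x \<le> 0"
  then have x: "0 < x" by simp
  define \<rho> where "\<rho> = x / (C + 1)"
  have r: "0 < \<rho>" unfolding \<rho>_def using x assms(2) by simp
  define e where "e = \<rho> * x / 2"
  have e: "0 < e" unfolding e_def using r x by simp
  have "x \<le> \<rho> / 2 * C + 1 / (2 * \<rho>) * e" by (rule assms(1)[OF r e])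
  also have "1 / (2 * \<rho>) * e = x / 4" unfolding e_def using r by (simp add: field_simps)
  also have "\<rho> / 2 * C < x / 2"
  proof -
    have "\<rho> * C < x" unfolding \<rho>_def using x assms(2) by (simp add: field_simps)
    then show ?thesis by simp
  qed
  finally show False using x by linarith
qed

lemma cf_l2: assumes "continuous_on {-pi..pi} H"
  shows "l2 (cf H)" and "infsum (\<lambda>j. (cmod (cf H j))\<^sup>2) UNIV \<le> integral {-pi..pi} (\<lambda>k. (cmod (H k))\<^sup>2) / (2 * pi)"
proof -
  have b: "\<And>J. finite J \<Longrightarrow> (\<Sum>j\<in>J. (cmod (cf H j))\<^sup>2) \<le> integral {-pi..pi} (\<lambda>k. (cmod (H k))\<^sup>2) / (2 * pi)"
    by (rule bessel[OF assms])
  show l: "l2 (cf H)" unfolding l2_def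
    by (rule nonneg_bdd_above_summable_on) (auto simp: bdd_above_def intro!: exI[of _ "integral {-pi..pi} (\<lambda>k. (cmod (H k))\<^sup>2) / (2 * pi)"] b)
  show "infsum (\<lambda>j. (cmod (cf H j))\<^sup>2) UNIV \<le> integral {-pi..pi} (\<lambda>k. (cmod (H k))\<^sup>2) / (2 * pi)"
    by (rule infsum_le_finite_sums) (use l b in \<open>auto simp: l2_def\<close>)
qed

lemma cf_l2_bound: assumes "continuous_on {-pi..pi} H" "\<And>k. k \<in> {-pi..pi} \<Longrightarrow> cmod (H k) \<le> C"
  shows "infsum (\<lambda>j. (cmod (cf H j))\<^sup>2) UNIV \<le> C\<^sup>2"
  using cf_l2(2)[OF assms(1)] integral_sq_bound[OF assms] by linarith

lemma cf_delta: "cf (\<lambda>k. cis (- (of_int j0 * k)) * c) j = (if j = j0 then c else 0)"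
proof -
  have "cf (\<lambda>k. cis (- (of_int j0 * k)) * c) j = cf (\<lambda>k. c) (j - j0)"
    unfolding cf_def by (simp add: mult.assoc[symmetric] cis_mult left_diff_distrib)
  then show ?thesis by (simp add: cf_const)
qed

definition pa :: "real \<Rightarrow> real \<Rightarrow> real \<Rightarrow> complex" where "pa h \<delta> k = n11 h \<delta> (- k)"
definition pb :: "real \<Rightarrow> real \<Rightarrow> real \<Rightarrow> complex" where "pb h \<delta> k = n21 h \<delta> (- k)"
definition pc :: "real \<Rightarrow> real \<Rightarrow> real \<Rightarrow> complex" where "pc h \<delta> k = n12 h \<delta> (- k)"
definition pd :: "real \<Rightarrow> real \<Rightarrow> real \<Rightarrow> complex" where "pd h \<delta> k = n22 h \<delta> (- k)"

lemma pa_st: "pa h \<delta> k = 0 * cis k + of_real (kap h \<delta>) * (\<i> * of_real (\<delta> * h)) + of_real (kap h \<delta>) * cis (- k)"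
  unfolding pa_def n11_def by (simp add: algebra_simps)
lemma pb_st: "pb h \<delta> k = (of_real (kap h \<delta>) * (\<i> * of_real \<delta>)) * cis k + (- of_real (kap h \<delta>) * of_real h) + 0 * cis (- k)"
  unfolding pb_def n21_def by (simp add: algebra_simps)
lemma pc_st: "pc h \<delta> k = 0 * cis k + of_real (kap h \<delta>) * of_real h + (- of_real (kap h \<delta>) * (\<i> * of_real \<delta>)) * cis (- k)"
  unfolding pc_def n12_def by (simp add: algebra_simps)
lemma pd_st: "pd h \<delta> k = of_real (kap h \<delta>) * cis k + of_real (kap h \<delta>) * (\<i> * of_real (\<delta> * h)) + 0 * cis (- k)"
  unfolding pd_def n22_def by (simp add: algebra_simps)

lemma det_p: "adm h \<delta> \<Longrightarrow> pa h \<delta> k * pd h \<delta> k - pb h \<delta> k * pc h \<delta> k = 1"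
  unfolding pa_def pb_def pc_def pd_def using det_n[of h \<delta> "- k"] by (simp add: mult.commute)

lemma tr_p: "pa h \<delta> k + pd h \<delta> k = lam h \<delta> k + mu h \<delta> k"
  unfolding pa_def pd_def tr_n lam_plus_mu zz_def by simp

lemma adj_lattice:
  assumes c1: "continuous_on {-pi..pi} H1" and c2: "continuous_on {-pi..pi} H2"
    and r1: "\<And>k. H1' k = pa h \<delta> k * H1 k + pb h \<delta> k * H2 k"
    and r2: "\<And>k. H2' k = pc h \<delta> k * H1 k + pd h \<delta> k * H2 k"
  shows "cf H1' j = of_real (kap h \<delta>) * (cf H1 (j - 1) + (\<i> * of_real (\<delta> * h)) * cf H1 j - of_real h * cf H2 j + (\<i> * of_real \<delta>) * cf H2 (j + 1))"
    and "cf H2' j = of_real (kap h \<delta>) * (of_real h * cf H1 j - (\<i> * of_real \<delta>) * cf H1 (j - 1) + (\<i> * of_real (\<delta> * h)) * cf H2 j + cf H2 (j + 1))"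
proof -
  have ca: "continuous_on {-pi..pi} (\<lambda>k. pa h \<delta> k * H1 k)" unfolding pa_st by (intro continuous_intros c1)
  have cb: "continuous_on {-pi..pi} (\<lambda>k. pb h \<delta> k * H2 k)" unfolding pb_st by (intro continuous_intros c2)
  have cc: "continuous_on {-pi..pi} (\<lambda>k. pc h \<delta> k * H1 k)" unfolding pc_st by (intro continuous_intros c1)
  have cd: "continuous_on {-pi..pi} (\<lambda>k. pd h \<delta> k * H2 k)" unfolding pd_st by (intro continuous_intros c2)
  have "H1' = (\<lambda>k. pa h \<delta> k * H1 k + pb h \<delta> k * H2 k)" using r1 by auto
  then have "cf H1' j = cf (\<lambda>k. pa h \<delta> k * H1 k) j + cf (\<lambda>k. pb h \<delta> k * H2 k) j"
    using cf_add[OF ca cb] by simp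
  also have "\<dots> = of_real (kap h \<delta>) * (cf H1 (j - 1) + (\<i> * of_real (\<delta> * h)) * cf H1 j - of_real h * cf H2 j + (\<i> * of_real \<delta>) * cf H2 (j + 1))"
    unfolding pa_st pb_st cf_stencil[OF c1] cf_stencil[OF c2] by (simp add: algebra_simps)
  finally show "cf H1' j = of_real (kap h \<delta>) * (cf H1 (j - 1) + (\<i> * of_real (\<delta> * h)) * cf H1 j - of_real h * cf H2 j + (\<i> * of_real \<delta>) * cf H2 (j + 1))" .
  have "H2' = (\<lambda>k. pc h \<delta> k * H1 k + pd h \<delta> k * H2 k)" using r2 by auto
  then have "cf H2' j = cf (\<lambda>k. pc h \<delta> k * H1 k) j + cf (\<lambda>k. pd h \<delta> k * H2 k) j"
    using cf_add[OF cc cd] by simp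
  also have "\<dots> = of_real (kap h \<delta>) * (of_real h * cf H1 j - (\<i> * of_real \<delta>) * cf H1 (j - 1) + (\<i> * of_real (\<delta> * h)) * cf H2 j + cf H2 (j + 1))"
    unfolding pc_st pd_st cf_stencil[OF c1] cf_stencil[OF c2] by (simp add: algebra_simps)
  finally show "cf H2' j = of_real (kap h \<delta>) * (of_real h * cf H1 j - (\<i> * of_real \<delta>) * cf H1 (j - 1) + (\<i> * of_real (\<delta> * h)) * cf H2 j + cf H2 (j + 1))" .
qed

lemma phi_zero_up:
  fixes Phi :: "int \<Rightarrow> complex" and DL :: "int \<Rightarrow> real"
  assumes step: "\<And>s. s0 < s \<Longrightarrow> Phi s = Phi (s - 1)"
    and bound: "\<And>s \<rho>. s0 \<le> s \<Longrightarrow> 0 < \<rho> \<Longrightarrow> cmod (Phi s) \<le> \<rho> / 2 * C + 1 / (2 * \<rho>) * DL s"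
    and C: "0 \<le> C" and sm: "DL summable_on UNIV" and nn: "\<And>s. 0 \<le> DL s"
  shows "Phi s0 = 0"
proof -
  have const: "Phi (s0 + int n) = Phi s0" for n
  proof (induction n)
    case (Suc n)
    have "Phi (s0 + int (Suc n)) = Phi (s0 + int (Suc n) - 1)" by (rule step) simp
    also have "s0 + int (Suc n) - 1 = s0 + int n" by simp
    finally show ?case using Suc by simp
  qed simp
  have "cmod (Phi s0) \<le> 0"
  proof (rule zero_from_bounds[OF _ C])
    fix \<rho> e :: real assume r: "0 < \<rho>" and e: "0 < e"
    obtain s where s: "s \<ge> s0" "DL s < e" using small_layer(1)[OF sm nn e] by blast
    have "Phi s = Phi s0" using const[of "nat (s - s0)"] s by simp
    then have "cmod (Phi s0) \<le> \<rho> / 2 * C + 1 / (2 * \<rho>) * DL s" using bound[OF s(1) r] by simp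
    also have "\<dots> \<le> \<rho> / 2 * C + 1 / (2 * \<rho>) * e" using s(2) r by (simp add: divide_right_mono)
    finally show "cmod (Phi s0) \<le> \<rho> / 2 * C + 1 / (2 * \<rho>) * e" .
  qed
  then show ?thesis by simp
qed

lemma phi_zero_down:
  fixes Phi :: "int \<Rightarrow> complex" and DL :: "int \<Rightarrow> real"
  assumes step: "\<And>s. s \<le> s0 \<Longrightarrow> Phi s = Phi (s - 1)"
    and bound: "\<And>s \<rho>. s \<le> s0 \<Longrightarrow> 0 < \<rho> \<Longrightarrow> cmod (Phi s) \<le> \<rho> / 2 * C + 1 / (2 * \<rho>) * DL s"
    and C: "0 \<le> C" and sm: "DL summable_on UNIV" and nn: "\<And>s. 0 \<le> DL s"
  shows "Phi s0 = 0"
proof -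
  have const: "Phi (s0 - int n) = Phi s0" for n
  proof (induction n)
    case (Suc n)
    have "Phi (s0 - int n) = Phi (s0 - int n - 1)" by (rule step) simp
    also have "s0 - int n - 1 = s0 - int (Suc n)" by simp
    finally show ?case using Suc by simp
  qed simp
  have "cmod (Phi s0) \<le> 0"
  proof (rule zero_from_bounds[OF _ C])
    fix \<rho> e :: real assume r: "0 < \<rho>" and e: "0 < e"
    obtain s where s: "s \<le> s0" "DL s < e" using small_layer(2)[OF sm nn e] by blast
    have "Phi s = Phi s0" using const[of "nat (s0 - s)"] s by simp
    then have "cmod (Phi s0) \<le> \<rho> / 2 * C + 1 / (2 * \<rho>) * DL s" using bound[OF s(1) r] by simp
    also have "\<dots> \<le> \<rho> / 2 * C + 1 / (2 * \<rho>) * e" using s(2) r by (simp add: divide_right_mono)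
    finally show "cmod (Phi s0) \<le> \<rho> / 2 * C + 1 / (2 * \<rho>) * e" .
  qed
  then show ?thesis by simp
qed

lemma layer_facts:
  assumes sm: "(\<lambda>(s, j). (cmod (d1 j s))\<^sup>2 + (cmod (d2 j s))\<^sup>2) summable_on UNIV"
  shows "\<And>s. l2 (\<lambda>j. d1 j s)" "\<And>s. l2 (\<lambda>j. d2 j s)"
    and "(\<lambda>s. infsum (\<lambda>j. (cmod (d1 j s))\<^sup>2 + (cmod (d2 j s))\<^sup>2) UNIV) summable_on UNIV"
proof -
  define f where "f s j = (cmod (d1 j s))\<^sup>2 + (cmod (d2 j s))\<^sup>2" for s j
  have sm': "(\<lambda>(s, j). f s j) summable_on Sigma UNIV (\<lambda>_. UNIV)" using sm unfolding f_def by simp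
  have fs: "f s summable_on UNIV" for s
  proof -
    have "(\<lambda>(s, j). f s j) summable_on (Pair s ` UNIV)"
      by (rule summable_on_subset_banach[OF sm']) auto
    then have "((\<lambda>(s, j). f s j) \<circ> Pair s) summable_on UNIV"
      by (subst (asm) summable_on_reindex) (auto simp: inj_on_def)
    then show ?thesis by (simp add: o_def)
  qed
  show "l2 (\<lambda>j. d1 j s)" for s unfolding l2_def
    by (rule summable_on_comparison_test[OF fs[of s]]) (auto simp: f_def)
  show "l2 (\<lambda>j. d2 j s)" for s unfolding l2_def
    by (rule summable_on_comparison_test[OF fs[of s]]) (auto simp: f_def)
  show "(\<lambda>s. infsum (\<lambda>j. (cmod (d1 j s))\<^sup>2 + (cmod (d2 j s))\<^sup>2) UNIV) summable_on UNIV"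
    using summable_on_Sigma_banach[OF sm'] unfolding f_def by simp
qed

lemma cont_bounded: assumes "continuous_on {-pi..pi} (V :: real \<Rightarrow> complex)"
  shows "\<exists>M. 0 \<le> M \<and> (\<forall>k\<in>{-pi..pi}. cmod (V k) \<le> M)"
proof -
  have c: "continuous_on {-pi..pi} (\<lambda>k. cmod (V k))" by (intro continuous_intros assms)
  have ne: "{-pi..pi} \<noteq> {}" using pi_gt_zero by auto
  obtain k0 where "k0 \<in> {-pi..pi}" "\<And>k. k \<in> {-pi..pi} \<Longrightarrow> cmod (V k) \<le> cmod (V k0)"
    using continuous_attains_sup[OF compact_Icc ne c] by blast
  then show ?thesis by (intro exI[of _ "cmod (V k0)"]) auto
qed

definition Vl1 :: "real \<Rightarrow> real \<Rightarrow> complex \<Rightarrow> complex \<Rightarrow> real \<Rightarrow> complex" where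
  "Vl1 h \<delta> e1 e2 k = (pa h \<delta> k * e1 + pb h \<delta> k * e2 - mu h \<delta> k * e1) / (lam h \<delta> k - mu h \<delta> k)"
definition Vl2 :: "real \<Rightarrow> real \<Rightarrow> complex \<Rightarrow> complex \<Rightarrow> real \<Rightarrow> complex" where
  "Vl2 h \<delta> e1 e2 k = (pc h \<delta> k * e1 + pd h \<delta> k * e2 - mu h \<delta> k * e2) / (lam h \<delta> k - mu h \<delta> k)"
definition Vm1 :: "real \<Rightarrow> real \<Rightarrow> complex \<Rightarrow> complex \<Rightarrow> real \<Rightarrow> complex" where
  "Vm1 h \<delta> e1 e2 k = (pa h \<delta> k * e1 + pb h \<delta> k * e2 - lam h \<delta> k * e1) / (mu h \<delta> k - lam h \<delta> k)"
definition Vm2 :: "real \<Rightarrow> real \<Rightarrow> complex \<Rightarrow> complex \<Rightarrow> real \<Rightarrow> complex" where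
  "Vm2 h \<delta> e1 e2 k = (pc h \<delta> k * e1 + pd h \<delta> k * e2 - lam h \<delta> k * e2) / (mu h \<delta> k - lam h \<delta> k)"

lemma lam_ne_mu: "adm h \<delta> \<Longrightarrow> lam h \<delta> k - mu h \<delta> k \<noteq> 0"
  using ww_nz[of h \<delta> k] unfolding lam_minus_mu by simp

lemma neg_den: "(x::complex) / (b - a) = - (x / (a - b))"
  by (metis minus_diff_eq divide_minus_right)

lemma frac_comb: "(a::complex) / D + - (b / D) = (a - b) / D"
  by (simp add: diff_divide_distrib)

lemma div_pair: "a * (x / D) + b * (y / D) = (a * x + b * y) / (D :: complex)"
  by (simp add: add_divide_distrib)

lemma eigVl: assumes "adm h \<delta>"
  shows "pa h \<delta> k * Vl1 h \<delta> e1 e2 k + pb h \<delta> k * Vl2 h \<delta> e1 e2 k = lam h \<delta> k * Vl1 h \<delta> e1 e2 k"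
    and "pc h \<delta> k * Vl1 h \<delta> e1 e2 k + pd h \<delta> k * Vl2 h \<delta> e1 e2 k = lam h \<delta> k * Vl2 h \<delta> e1 e2 k"
proof -
  note E = eig2[OF det_p[OF assms, of k] lam_mu[of h \<delta> k] tr_p[of h \<delta> k, symmetric], of e1 e2]
  show "pa h \<delta> k * Vl1 h \<delta> e1 e2 k + pb h \<delta> k * Vl2 h \<delta> e1 e2 k = lam h \<delta> k * Vl1 h \<delta> e1 e2 k"
    unfolding Vl1_def Vl2_def div_pair E(1) by simp
  show "pc h \<delta> k * Vl1 h \<delta> e1 e2 k + pd h \<delta> k * Vl2 h \<delta> e1 e2 k = lam h \<delta> k * Vl2 h \<delta> e1 e2 k"
    unfolding Vl1_def Vl2_def div_pair E(2) by simp
qed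

lemma eigVm: assumes "adm h \<delta>"
  shows "pa h \<delta> k * Vm1 h \<delta> e1 e2 k + pb h \<delta> k * Vm2 h \<delta> e1 e2 k = mu h \<delta> k * Vm1 h \<delta> e1 e2 k"
    and "pc h \<delta> k * Vm1 h \<delta> e1 e2 k + pd h \<delta> k * Vm2 h \<delta> e1 e2 k = mu h \<delta> k * Vm2 h \<delta> e1 e2 k"
proof -
  have lm: "mu h \<delta> k * lam h \<delta> k = 1" using lam_mu[of h \<delta> k] by (simp add: mult.commute)
  have tr: "mu h \<delta> k + lam h \<delta> k = pa h \<delta> k + pd h \<delta> k" using tr_p[of h \<delta> k] by (simp add: add.commute)
  note E = eig2[OF det_p[OF assms, of k] lm tr, of e1 e2]
  show "pa h \<delta> k * Vm1 h \<delta> e1 e2 k + pb h \<delta> k * Vm2 h \<delta> e1 e2 k = mu h \<delta> k * Vm1 h \<delta> e1 e2 k"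
    unfolding Vm1_def Vm2_def div_pair E(1) by simp
  show "pc h \<delta> k * Vm1 h \<delta> e1 e2 k + pd h \<delta> k * Vm2 h \<delta> e1 e2 k = mu h \<delta> k * Vm2 h \<delta> e1 e2 k"
    unfolding Vm1_def Vm2_def div_pair E(2) by simp
qed

lemma sumV: assumes "adm h \<delta>"
  shows "Vl1 h \<delta> e1 e2 k + Vm1 h \<delta> e1 e2 k = e1" and "Vl2 h \<delta> e1 e2 k + Vm2 h \<delta> e1 e2 k = e2"
proof -
  have D: "lam h \<delta> k - mu h \<delta> k \<noteq> 0" by (rule lam_ne_mu[OF assms])
  have D': "mu h \<delta> k - lam h \<delta> k = - (lam h \<delta> k - mu h \<delta> k)" by simp
  show "Vl1 h \<delta> e1 e2 k + Vm1 h \<delta> e1 e2 k = e1"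
  proof -
    have "Vl1 h \<delta> e1 e2 k + Vm1 h \<delta> e1 e2 k = ((pa h \<delta> k * e1 + pb h \<delta> k * e2 - mu h \<delta> k * e1) - (pa h \<delta> k * e1 + pb h \<delta> k * e2 - lam h \<delta> k * e1)) / (lam h \<delta> k - mu h \<delta> k)"
      unfolding Vl1_def Vm1_def neg_den[of _ "mu h \<delta> k"] by (rule frac_comb)
    also have "\<dots> = (lam h \<delta> k - mu h \<delta> k) * e1 / (lam h \<delta> k - mu h \<delta> k)" by (simp add: algebra_simps)
    finally show ?thesis using D by simp
  qed
  show "Vl2 h \<delta> e1 e2 k + Vm2 h \<delta> e1 e2 k = e2"
  proof -
    have "Vl2 h \<delta> e1 e2 k + Vm2 h \<delta> e1 e2 k = ((pc h \<delta> k * e1 + pd h \<delta> k * e2 - mu h \<delta> k * e2) - (pc h \<delta> k * e1 + pd h \<delta> k * e2 - lam h \<delta> k * e2)) / (lam h \<delta> k - mu h \<delta> k)"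
      unfolding Vl2_def Vm2_def neg_den[of _ "mu h \<delta> k"] by (rule frac_comb)
    also have "\<dots> = (lam h \<delta> k - mu h \<delta> k) * e2 / (lam h \<delta> k - mu h \<delta> k)" by (simp add: algebra_simps)
    finally show ?thesis using D by simp
  qed
qed

lemma cont_lamk: "adm h \<delta> \<Longrightarrow> continuous_on S (lam h \<delta>)" by (rule cont_fix[OF cont_lam])
lemma cont_muk: "adm h \<delta> \<Longrightarrow> continuous_on S (mu h \<delta>)" by (rule cont_fix[OF cont_mu])

lemma contV: assumes "adm h \<delta>"
  shows "continuous_on S (Vl1 h \<delta> e1 e2)" "continuous_on S (Vl2 h \<delta> e1 e2)"
        "continuous_on S (Vm1 h \<delta> e1 e2)" "continuous_on S (Vm2 h \<delta> e1 e2)"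
proof -
  have D1: "lam h \<delta> k - mu h \<delta> k \<noteq> 0" for k by (rule lam_ne_mu[OF assms])
  have D2: "mu h \<delta> k - lam h \<delta> k \<noteq> 0" for k using D1[of k] by auto
  have D: "\<forall>k\<in>S. lam h \<delta> k - mu h \<delta> k \<noteq> 0" "\<forall>k\<in>S. mu h \<delta> k - lam h \<delta> k \<noteq> 0" using D1 D2 by auto
  note cl = cont_lamk[OF assms] and cm = cont_muk[OF assms]
  have ca: "continuous_on S (pa h \<delta>)" "continuous_on S (pb h \<delta>)" "continuous_on S (pc h \<delta>)" "continuous_on S (pd h \<delta>)"
    unfolding pa_st[abs_def] pb_st[abs_def] pc_st[abs_def] pd_st[abs_def] by (intro continuous_intros)+
  show "continuous_on S (Vl1 h \<delta> e1 e2)" "continuous_on S (Vl2 h \<delta> e1 e2)"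
        "continuous_on S (Vm1 h \<delta> e1 e2)" "continuous_on S (Vm2 h \<delta> e1 e2)"
    unfolding Vl1_def[abs_def] Vl2_def[abs_def] Vm1_def[abs_def] Vm2_def[abs_def]
    by (intro continuous_intros ca cl cm D)+
qed

definition Ha1 :: "real \<Rightarrow> real \<Rightarrow> complex \<Rightarrow> complex \<Rightarrow> int \<Rightarrow> int \<Rightarrow> int \<Rightarrow> real \<Rightarrow> complex" where
  "Ha1 h \<delta> e1 e2 j0 s0 s k = lam h \<delta> k ^ nat (s - s0) * (cis (- (of_int j0 * k)) * Vm1 h \<delta> e1 e2 k)"
definition Ha2 :: "real \<Rightarrow> real \<Rightarrow> complex \<Rightarrow> complex \<Rightarrow> int \<Rightarrow> int \<Rightarrow> int \<Rightarrow> real \<Rightarrow> complex" where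
  "Ha2 h \<delta> e1 e2 j0 s0 s k = lam h \<delta> k ^ nat (s - s0) * (cis (- (of_int j0 * k)) * Vm2 h \<delta> e1 e2 k)"
definition Hb1 :: "real \<Rightarrow> real \<Rightarrow> complex \<Rightarrow> complex \<Rightarrow> int \<Rightarrow> int \<Rightarrow> int \<Rightarrow> real \<Rightarrow> complex" where
  "Hb1 h \<delta> e1 e2 j0 s0 s k = lam h \<delta> k ^ nat (s0 - s) * (cis (- (of_int j0 * k)) * Vl1 h \<delta> e1 e2 k)"
definition Hb2 :: "real \<Rightarrow> real \<Rightarrow> complex \<Rightarrow> complex \<Rightarrow> int \<Rightarrow> int \<Rightarrow> int \<Rightarrow> real \<Rightarrow> complex" where
  "Hb2 h \<delta> e1 e2 j0 s0 s k = lam h \<delta> k ^ nat (s0 - s) * (cis (- (of_int j0 * k)) * Vl2 h \<delta> e1 e2 k)"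

lemma contH: assumes "adm h \<delta>"
  shows "continuous_on S (Ha1 h \<delta> e1 e2 j0 s0 s)" "continuous_on S (Ha2 h \<delta> e1 e2 j0 s0 s)"
        "continuous_on S (Hb1 h \<delta> e1 e2 j0 s0 s)" "continuous_on S (Hb2 h \<delta> e1 e2 j0 s0 s)"
  unfolding Ha1_def[abs_def] Ha2_def[abs_def] Hb1_def[abs_def] Hb2_def[abs_def]
  by (intro continuous_intros contV[OF assms] cont_lamk[OF assms])+

lemma Ha_rec: assumes "adm h \<delta>" "s0 < s"
  shows "Ha1 h \<delta> e1 e2 j0 s0 (s - 1) k = pa h \<delta> k * Ha1 h \<delta> e1 e2 j0 s0 s k + pb h \<delta> k * Ha2 h \<delta> e1 e2 j0 s0 s k"
    and "Ha2 h \<delta> e1 e2 j0 s0 (s - 1) k = pc h \<delta> k * Ha1 h \<delta> e1 e2 j0 s0 s k + pd h \<delta> k * Ha2 h \<delta> e1 e2 j0 s0 s k"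
proof -
  define n where "n = nat (s - 1 - s0)"
  have n: "nat (s - s0) = Suc n" "nat (s - 1 - s0) = n" unfolding n_def using assms(2) by auto
  define c where "c = cis (- (of_int j0 * k))"
  define L where "L = lam h \<delta> k"
  have lm: "L * mu h \<delta> k = 1" unfolding L_def by (rule lam_mu)
  note E = eigVm[OF assms(1), of k e1 e2]
  have "pa h \<delta> k * (L ^ Suc n * (c * Vm1 h \<delta> e1 e2 k)) + pb h \<delta> k * (L ^ Suc n * (c * Vm2 h \<delta> e1 e2 k))
      = L ^ n * c * (L * (pa h \<delta> k * Vm1 h \<delta> e1 e2 k + pb h \<delta> k * Vm2 h \<delta> e1 e2 k))" by (simp add: algebra_simps)
  also have "\<dots> = L ^ n * c * ((L * mu h \<delta> k) * Vm1 h \<delta> e1 e2 k)" unfolding E(1) by (simp add: algebra_simps)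
  finally show "Ha1 h \<delta> e1 e2 j0 s0 (s - 1) k = pa h \<delta> k * Ha1 h \<delta> e1 e2 j0 s0 s k + pb h \<delta> k * Ha2 h \<delta> e1 e2 j0 s0 s k"
    unfolding Ha1_def Ha2_def n c_def[symmetric] L_def[symmetric] lm by simp
  have "pc h \<delta> k * (L ^ Suc n * (c * Vm1 h \<delta> e1 e2 k)) + pd h \<delta> k * (L ^ Suc n * (c * Vm2 h \<delta> e1 e2 k))
      = L ^ n * c * (L * (pc h \<delta> k * Vm1 h \<delta> e1 e2 k + pd h \<delta> k * Vm2 h \<delta> e1 e2 k))" by (simp add: algebra_simps)
  also have "\<dots> = L ^ n * c * ((L * mu h \<delta> k) * Vm2 h \<delta> e1 e2 k)" unfolding E(2) by (simp add: algebra_simps)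
  finally show "Ha2 h \<delta> e1 e2 j0 s0 (s - 1) k = pc h \<delta> k * Ha1 h \<delta> e1 e2 j0 s0 s k + pd h \<delta> k * Ha2 h \<delta> e1 e2 j0 s0 s k"
    unfolding Ha1_def Ha2_def n c_def[symmetric] L_def[symmetric] lm by simp
qed

lemma Hb_rec: assumes "adm h \<delta>" "s \<le> s0"
  shows "Hb1 h \<delta> e1 e2 j0 s0 (s - 1) k = pa h \<delta> k * Hb1 h \<delta> e1 e2 j0 s0 s k + pb h \<delta> k * Hb2 h \<delta> e1 e2 j0 s0 s k"
    and "Hb2 h \<delta> e1 e2 j0 s0 (s - 1) k = pc h \<delta> k * Hb1 h \<delta> e1 e2 j0 s0 s k + pd h \<delta> k * Hb2 h \<delta> e1 e2 j0 s0 s k"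
proof -
  define n where "n = nat (s0 - s)"
  have n: "nat (s0 - (s - 1)) = Suc n" unfolding n_def using assms(2) by auto
  define c where "c = cis (- (of_int j0 * k))"
  define L where "L = lam h \<delta> k"
  note E = eigVl[OF assms(1), of k e1 e2]
  have "pa h \<delta> k * (L ^ n * (c * Vl1 h \<delta> e1 e2 k)) + pb h \<delta> k * (L ^ n * (c * Vl2 h \<delta> e1 e2 k))
      = L ^ n * c * (pa h \<delta> k * Vl1 h \<delta> e1 e2 k + pb h \<delta> k * Vl2 h \<delta> e1 e2 k)" by (simp add: algebra_simps)
  also have "\<dots> = L ^ Suc n * (c * Vl1 h \<delta> e1 e2 k)" unfolding E(1) L_def by (simp add: algebra_simps)
  finally show "Hb1 h \<delta> e1 e2 j0 s0 (s - 1) k = pa h \<delta> k * Hb1 h \<delta> e1 e2 j0 s0 s k + pb h \<delta> k * Hb2 h \<delta> e1 e2 j0 s0 s k"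
    unfolding Hb1_def Hb2_def n n_def[symmetric] c_def[symmetric] L_def[symmetric] by simp
  have "pc h \<delta> k * (L ^ n * (c * Vl1 h \<delta> e1 e2 k)) + pd h \<delta> k * (L ^ n * (c * Vl2 h \<delta> e1 e2 k))
      = L ^ n * c * (pc h \<delta> k * Vl1 h \<delta> e1 e2 k + pd h \<delta> k * Vl2 h \<delta> e1 e2 k)" by (simp add: algebra_simps)
  also have "\<dots> = L ^ Suc n * (c * Vl2 h \<delta> e1 e2 k)" unfolding E(2) L_def by (simp add: algebra_simps)
  finally show "Hb2 h \<delta> e1 e2 j0 s0 (s - 1) k = pc h \<delta> k * Hb1 h \<delta> e1 e2 j0 s0 s k + pd h \<delta> k * Hb2 h \<delta> e1 e2 j0 s0 s k"
    unfolding Hb1_def Hb2_def n n_def[symmetric] c_def[symmetric] L_def[symmetric] by simp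
qed

lemma pow_le1: assumes "adm h \<delta>" "0 < \<delta>" shows "cmod (lam h \<delta> k ^ n) \<le> 1"
  using lam_lt1[OF assms, of k] by (simp add: norm_power power_le_one)

lemma Hab_bound: assumes "adm h \<delta>" "0 < \<delta>"
  shows "cmod (Ha1 h \<delta> e1 e2 j0 s0 s k) \<le> cmod (Vm1 h \<delta> e1 e2 k)"
    and "cmod (Ha2 h \<delta> e1 e2 j0 s0 s k) \<le> cmod (Vm2 h \<delta> e1 e2 k)"
    and "cmod (Hb1 h \<delta> e1 e2 j0 s0 s k) \<le> cmod (Vl1 h \<delta> e1 e2 k)"
    and "cmod (Hb2 h \<delta> e1 e2 j0 s0 s k) \<le> cmod (Vl2 h \<delta> e1 e2 k)"
  unfolding Ha1_def Ha2_def Hb1_def Hb2_def norm_mult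
  using pow_le1[OF assms] by (auto intro!: mult_left_le_one_le simp del: norm_power)

lemma infsum_single: "infsum (\<lambda>j::int. if j = j0 then c else (0::complex)) UNIV = c"
proof -
  have "infsum (\<lambda>j::int. if j = j0 then c else (0::complex)) UNIV = infsum (\<lambda>j::int. if j = j0 then c else (0::complex)) {j0}"
    by (rule infsum_cong_neutral) auto
  also have "\<dots> = c" by simp
  finally show ?thesis .
qed

lemma GL_bound:
  assumes "continuous_on {-pi..pi} H1" "continuous_on {-pi..pi} H2"
    "\<And>k. k \<in> {-pi..pi} \<Longrightarrow> cmod (H1 k) \<le> M1" "\<And>k. k \<in> {-pi..pi} \<Longrightarrow> cmod (H2 k) \<le> M2"
  shows "infsum (\<lambda>j. (cmod (cf H1 j))\<^sup>2 + (cmod (cf H2 j))\<^sup>2) UNIV \<le> M1\<^sup>2 + M2\<^sup>2"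
proof -
  have "infsum (\<lambda>j. (cmod (cf H1 j))\<^sup>2 + (cmod (cf H2 j))\<^sup>2) UNIV
      = infsum (\<lambda>j. (cmod (cf H1 j))\<^sup>2) UNIV + infsum (\<lambda>j. (cmod (cf H2 j))\<^sup>2) UNIV"
    by (rule infsum_add) (use cf_l2(1)[OF assms(1)] cf_l2(1)[OF assms(2)] in \<open>auto simp: l2_def\<close>)
  also have "\<dots> \<le> M1\<^sup>2 + M2\<^sup>2"
    by (intro add_mono cf_l2_bound assms)
  finally show ?thesis .
qed

lemma uniq_core:
  fixes d1 d2 :: "int \<Rightarrow> int \<Rightarrow> complex"
  assumes ad: "adm h \<delta>" "0 < \<delta>"
    and dr1: "\<And>j s. d1 j s = of_real (kap h \<delta>) * (d1 (j + 1) (s - 1) + (\<i> * of_real (\<delta> * h)) * d1 j (s - 1)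
               + of_real h * d2 j (s - 1) - (\<i> * of_real \<delta>) * d2 (j + 1) (s - 1))"
    and dr2: "\<And>j s. d2 j s = of_real (kap h \<delta>) * (- of_real h * d1 j (s - 1) + (\<i> * of_real \<delta>) * d1 (j - 1) (s - 1)
               + (\<i> * of_real (\<delta> * h)) * d2 j (s - 1) + d2 (j - 1) (s - 1))"
    and sm: "(\<lambda>(s, j). (cmod (d1 j s))\<^sup>2 + (cmod (d2 j s))\<^sup>2) summable_on UNIV"
  shows "e1 * d1 j0 s0 + e2 * d2 j0 s0 = 0"
proof -
  define Ga1 where "Ga1 j s = cf (Ha1 h \<delta> e1 e2 j0 s0 s) j" for j s
  define Ga2 where "Ga2 j s = cf (Ha2 h \<delta> e1 e2 j0 s0 s) j" for j s
  define Gb1 where "Gb1 j s = cf (Hb1 h \<delta> e1 e2 j0 s0 s) j" for j s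
  define Gb2 where "Gb2 j s = cf (Hb2 h \<delta> e1 e2 j0 s0 s) j" for j s
  define DL where "DL s = infsum (\<lambda>j. (cmod (d1 j s))\<^sup>2 + (cmod (d2 j s))\<^sup>2) UNIV" for s
  note LF = layer_facts[OF sm]
  have DLs: "DL summable_on UNIV" unfolding DL_def by (rule LF(3))
  have DLn: "0 \<le> DL s" for s unfolding DL_def by (rule infsum_nonneg) simp
  note cH = contH[OF ad(1), of "{-pi..pi}"]
  have lGa1: "l2 (\<lambda>j. Ga1 j s)" for s unfolding Ga1_def by (rule cf_l2(1)[OF cH(1)])
  have lGa2: "l2 (\<lambda>j. Ga2 j s)" for s unfolding Ga2_def by (rule cf_l2(1)[OF cH(2)])
  have lGb1: "l2 (\<lambda>j. Gb1 j s)" for s unfolding Gb1_def by (rule cf_l2(1)[OF cH(3)])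
  have lGb2: "l2 (\<lambda>j. Gb2 j s)" for s unfolding Gb2_def by (rule cf_l2(1)[OF cH(4)])
  note cV = contV[OF ad(1), of "{-pi..pi}" e1 e2]
  obtain Mm1 where Mm1: "\<forall>k\<in>{-pi..pi}. cmod (Vm1 h \<delta> e1 e2 k) \<le> Mm1" using cont_bounded[OF cV(3)] by blast
  obtain Mm2 where Mm2: "\<forall>k\<in>{-pi..pi}. cmod (Vm2 h \<delta> e1 e2 k) \<le> Mm2" using cont_bounded[OF cV(4)] by blast
  obtain Ml1 where Ml1: "\<forall>k\<in>{-pi..pi}. cmod (Vl1 h \<delta> e1 e2 k) \<le> Ml1" using cont_bounded[OF cV(1)] by blast
  obtain Ml2 where Ml2: "\<forall>k\<in>{-pi..pi}. cmod (Vl2 h \<delta> e1 e2 k) \<le> Ml2" using cont_bounded[OF cV(2)] by blast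
  note HB = Hab_bound[OF ad]
  have GLa: "infsum (\<lambda>j. (cmod (Ga1 j s))\<^sup>2 + (cmod (Ga2 j s))\<^sup>2) UNIV \<le> Mm1\<^sup>2 + Mm2\<^sup>2" for s
    unfolding Ga1_def Ga2_def
    by (rule GL_bound[OF cH(1) cH(2)]) (use HB(1,2) Mm1 Mm2 order_trans in blast)+
  have GLb: "infsum (\<lambda>j. (cmod (Gb1 j s))\<^sup>2 + (cmod (Gb2 j s))\<^sup>2) UNIV \<le> Ml1\<^sup>2 + Ml2\<^sup>2" for s
    unfolding Gb1_def Gb2_def
    by (rule GL_bound[OF cH(3) cH(4)]) (use HB(3,4) Ml1 Ml2 order_trans in blast)+
  have PA: "Phi Ga1 Ga2 d1 d2 s0 = 0"
  proof (rule phi_zero_up[where C = "Mm1\<^sup>2 + Mm2\<^sup>2" and DL = DL])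
    fix s assume s: "s0 < s"
    show "Phi Ga1 Ga2 d1 d2 s = Phi Ga1 Ga2 d1 d2 (s - 1)"
      apply (rule phi_step[where K = "of_real (kap h \<delta>)" and A = "\<i> * of_real (\<delta> * h)" and H = "of_real h" and E = "\<i> * of_real \<delta>"])
      apply (rule lGa1)
      apply (rule lGa2)
      apply (rule LF(1))
      apply (rule LF(2))
      apply (rule dr1)
      apply (rule dr2)
      subgoal for j unfolding Ga1_def Ga2_def by (rule adj_lattice(1)[OF cH(1) cH(2) Ha_rec(1)[OF ad(1) s] Ha_rec(2)[OF ad(1) s]])
      subgoal for j unfolding Ga1_def Ga2_def by (rule adj_lattice(2)[OF cH(1) cH(2) Ha_rec(1)[OF ad(1) s] Ha_rec(2)[OF ad(1) s]])
      done
  next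
    fix s and \<rho> :: real assume s: "s0 \<le> s" and r: "0 < \<rho>"
    have "cmod (Phi Ga1 Ga2 d1 d2 s) \<le> \<rho> / 2 * infsum (\<lambda>j. (cmod (Ga1 j s))\<^sup>2 + (cmod (Ga2 j s))\<^sup>2) UNIV + 1 / (2 * \<rho>) * DL s"
      unfolding DL_def by (rule phi_bound[OF lGa1 lGa2 LF(1) LF(2) r])
    also have "\<dots> \<le> \<rho> / 2 * (Mm1\<^sup>2 + Mm2\<^sup>2) + 1 / (2 * \<rho>) * DL s"
      using GLa[of s] r by simp
    finally show "cmod (Phi Ga1 Ga2 d1 d2 s) \<le> \<rho> / 2 * (Mm1\<^sup>2 + Mm2\<^sup>2) + 1 / (2 * \<rho>) * DL s" .
  qed (use DLs DLn in auto)
  have PB: "Phi Gb1 Gb2 d1 d2 s0 = 0"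
  proof (rule phi_zero_down[where C = "Ml1\<^sup>2 + Ml2\<^sup>2" and DL = DL])
    fix s assume s: "s \<le> s0"
    show "Phi Gb1 Gb2 d1 d2 s = Phi Gb1 Gb2 d1 d2 (s - 1)"
      apply (rule phi_step[where K = "of_real (kap h \<delta>)" and A = "\<i> * of_real (\<delta> * h)" and H = "of_real h" and E = "\<i> * of_real \<delta>"])
      apply (rule lGb1)
      apply (rule lGb2)
      apply (rule LF(1))
      apply (rule LF(2))
      apply (rule dr1)
      apply (rule dr2)
      subgoal for j unfolding Gb1_def Gb2_def by (rule adj_lattice(1)[OF cH(3) cH(4) Hb_rec(1)[OF ad(1) s] Hb_rec(2)[OF ad(1) s]])
      subgoal for j unfolding Gb1_def Gb2_def by (rule adj_lattice(2)[OF cH(3) cH(4) Hb_rec(1)[OF ad(1) s] Hb_rec(2)[OF ad(1) s]])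
      done
  next
    fix s and \<rho> :: real assume s: "s \<le> s0" and r: "0 < \<rho>"
    have "cmod (Phi Gb1 Gb2 d1 d2 s) \<le> \<rho> / 2 * infsum (\<lambda>j. (cmod (Gb1 j s))\<^sup>2 + (cmod (Gb2 j s))\<^sup>2) UNIV + 1 / (2 * \<rho>) * DL s"
      unfolding DL_def by (rule phi_bound[OF lGb1 lGb2 LF(1) LF(2) r])
    also have "\<dots> \<le> \<rho> / 2 * (Ml1\<^sup>2 + Ml2\<^sup>2) + 1 / (2 * \<rho>) * DL s"
      using GLb[of s] r by simp
    finally show "cmod (Phi Gb1 Gb2 d1 d2 s) \<le> \<rho> / 2 * (Ml1\<^sup>2 + Ml2\<^sup>2) + 1 / (2 * \<rho>) * DL s" .
  qed (use DLs DLn in auto)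
  have sum1: "Ga1 j s0 + Gb1 j s0 = (if j = j0 then e1 else 0)" for j
  proof -
    have "Ga1 j s0 + Gb1 j s0 = cf (\<lambda>k. Ha1 h \<delta> e1 e2 j0 s0 s0 k + Hb1 h \<delta> e1 e2 j0 s0 s0 k) j"
      unfolding Ga1_def Gb1_def by (rule cf_add[OF cH(1) cH(3), symmetric])
    also have "(\<lambda>k. Ha1 h \<delta> e1 e2 j0 s0 s0 k + Hb1 h \<delta> e1 e2 j0 s0 s0 k) = (\<lambda>k. cis (- (of_int j0 * k)) * e1)"
      unfolding Ha1_def Hb1_def using sumV(1)[OF ad(1)] by (auto simp: algebra_simps simp flip: distrib_left)
    finally show ?thesis by (simp add: cf_delta)
  qed
  have sum2: "Ga2 j s0 + Gb2 j s0 = (if j = j0 then e2 else 0)" for j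
  proof -
    have "Ga2 j s0 + Gb2 j s0 = cf (\<lambda>k. Ha2 h \<delta> e1 e2 j0 s0 s0 k + Hb2 h \<delta> e1 e2 j0 s0 s0 k) j"
      unfolding Ga2_def Gb2_def by (rule cf_add[OF cH(2) cH(4), symmetric])
    also have "(\<lambda>k. Ha2 h \<delta> e1 e2 j0 s0 s0 k + Hb2 h \<delta> e1 e2 j0 s0 s0 k) = (\<lambda>k. cis (- (of_int j0 * k)) * e2)"
      unfolding Ha2_def Hb2_def using sumV(2)[OF ad(1)] by (auto simp: algebra_simps simp flip: distrib_left)
    finally show ?thesis by (simp add: cf_delta)
  qed
  have sA: "(\<lambda>j. Ga1 j s0 * d1 j s0 + Ga2 j s0 * d2 j s0) summable_on UNIV"
    by (intro summable_on_add prod_summable lGa1 lGa2 LF(1) LF(2))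
  have sB: "(\<lambda>j. Gb1 j s0 * d1 j s0 + Gb2 j s0 * d2 j s0) summable_on UNIV"
    by (intro summable_on_add prod_summable lGb1 lGb2 LF(1) LF(2))
  have "0 = Phi Ga1 Ga2 d1 d2 s0 + Phi Gb1 Gb2 d1 d2 s0" using PA PB by simp
  also have "\<dots> = infsum (\<lambda>j. (Ga1 j s0 * d1 j s0 + Ga2 j s0 * d2 j s0) + (Gb1 j s0 * d1 j s0 + Gb2 j s0 * d2 j s0)) UNIV"
    unfolding Phi_def by (rule infsum_add[OF sA sB, symmetric])
  also have "\<dots> = infsum (\<lambda>j. if j = j0 then e1 * d1 j0 s0 + e2 * d2 j0 s0 else 0) UNIV"
  proof (rule infsum_cong)
    fix j
    have "(Ga1 j s0 * d1 j s0 + Ga2 j s0 * d2 j s0) + (Gb1 j s0 * d1 j s0 + Gb2 j s0 * d2 j s0)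
        = (Ga1 j s0 + Gb1 j s0) * d1 j s0 + (Ga2 j s0 + Gb2 j s0) * d2 j s0" by (simp add: algebra_simps)
    then show "(Ga1 j s0 * d1 j s0 + Ga2 j s0 * d2 j s0) + (Gb1 j s0 * d1 j s0 + Gb2 j s0 * d2 j s0)
        = (if j = j0 then e1 * d1 j0 s0 + e2 * d2 j0 s0 else 0)" unfolding sum1 sum2 by simp
  qed
  also have "\<dots> = e1 * d1 j0 s0 + e2 * d2 j0 s0" by (rule infsum_single)
  finally show ?thesis by simp
qed

lemma uniq_Z2:
  fixes d1 d2 :: "int \<Rightarrow> int \<Rightarrow> complex"
  assumes ad: "adm h \<delta>" "0 < \<delta>"
    and dr1: "\<And>j s. d1 j s = of_real (kap h \<delta>) * (d1 (j + 1) (s - 1) + (\<i> * of_real (\<delta> * h)) * d1 j (s - 1)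
               + of_real h * d2 j (s - 1) - (\<i> * of_real \<delta>) * d2 (j + 1) (s - 1))"
    and dr2: "\<And>j s. d2 j s = of_real (kap h \<delta>) * (- of_real h * d1 j (s - 1) + (\<i> * of_real \<delta>) * d1 (j - 1) (s - 1)
               + (\<i> * of_real (\<delta> * h)) * d2 j (s - 1) + d2 (j - 1) (s - 1))"
    and sm: "(\<lambda>(s, j). (cmod (d1 j s))\<^sup>2 + (cmod (d2 j s))\<^sup>2) summable_on UNIV"
  shows "d1 j0 s0 = 0" and "d2 j0 s0 = 0"
  using uniq_core[OF ad dr1 dr2 sm, of 1 j0 s0 0] uniq_core[OF ad dr1 dr2 sm, of 0 j0 s0 1] by simp_all

definition dd :: "real \<Rightarrow> real" where "dd \<delta> = 1 / sqrt (1 - \<delta>\<^sup>2)"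

definition v1 :: "real \<Rightarrow> real \<Rightarrow> int \<Rightarrow> int \<Rightarrow> complex" where
  "v1 h \<delta> j s = of_real (dd \<delta>) * (u1 h \<delta> (j + 1) s - \<i> * of_real \<delta> * u2 h \<delta> (j + 1) s)"
definition v2 :: "real \<Rightarrow> real \<Rightarrow> int \<Rightarrow> int \<Rightarrow> complex" where
  "v2 h \<delta> j s = of_real (dd \<delta>) * (u2 h \<delta> j s + \<i> * of_real \<delta> * u1 h \<delta> j s)"

definition AA1 :: "real \<Rightarrow> real \<Rightarrow> real \<Rightarrow> real \<Rightarrow> real \<Rightarrow> complex" where
  "AA1 h \<delta> eps x t = (if x / eps \<in> \<int> \<and> t / eps \<in> \<int> then u1 h \<delta> \<lfloor>x / eps\<rfloor> \<lfloor>t / eps\<rfloor>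
     else if x / eps - 1/2 \<in> \<int> \<and> t / eps - 1/2 \<in> \<int> then v1 h \<delta> \<lfloor>x / eps\<rfloor> \<lfloor>t / eps\<rfloor> else 0)"
definition AA2 :: "real \<Rightarrow> real \<Rightarrow> real \<Rightarrow> real \<Rightarrow> real \<Rightarrow> complex" where
  "AA2 h \<delta> eps x t = (if x / eps \<in> \<int> \<and> t / eps \<in> \<int> then u2 h \<delta> \<lfloor>x / eps\<rfloor> \<lfloor>t / eps\<rfloor>
     else if x / eps - 1/2 \<in> \<int> \<and> t / eps - 1/2 \<in> \<int> then v2 h \<delta> \<lfloor>x / eps\<rfloor> \<lfloor>t / eps\<rfloor> else 0)"

lemma half_not_int: "of_int j + 1/2 \<notin> (\<int> :: real set)"
proof
  assume "of_int j + 1/2 \<in> (\<int> :: real set)"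
  then obtain k where k: "of_int j + 1/2 = (of_int k :: real)" by (auto elim: Ints_cases)
  then have "2 * of_int (k - j) = (1::real)" by (simp add: algebra_simps)
  then have "2 * (k - j) = 1" by (metis of_int_1 of_int_eq_iff of_int_mult of_int_numeral)
  then show False by presburger
qed

lemma floor_half: "\<lfloor>of_int j + 1/2 :: real\<rfloor> = j"
  by (simp add: floor_eq_iff)

lemma ev_div: "eps \<noteq> 0 \<Longrightarrow> of_int j * eps / eps = (of_int j :: real)" by simp
lemma od_div: "eps \<noteq> 0 \<Longrightarrow> (of_int j + 1/2) * eps / eps = (of_int j + 1/2 :: real)" by simp

lemma AA_even: assumes "eps \<noteq> 0"
  shows "AA1 h \<delta> eps (of_int j * eps) (of_int s * eps) = u1 h \<delta> j s"
    and "AA2 h \<delta> eps (of_int j * eps) (of_int s * eps) = u2 h \<delta> j s"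
  unfolding AA1_def AA2_def ev_div[OF assms] by auto

lemma AA_odd: assumes "eps \<noteq> 0"
  shows "AA1 h \<delta> eps ((of_int j + 1/2) * eps) ((of_int s + 1/2) * eps) = v1 h \<delta> j s"
    and "AA2 h \<delta> eps ((of_int j + 1/2) * eps) ((of_int s + 1/2) * eps) = v2 h \<delta> j s"
  unfolding AA1_def AA2_def od_div[OF assms] using half_not_int[of j] half_not_int[of s]
  by (auto simp: floor_half)

lemma even_pt_E: assumes "even_pt eps x t" "eps > 0"
  obtains j s where "x = of_int j * eps" "t = of_int s * eps"
proof -
  obtain a b :: int where ab: "2 * x / eps = of_int a" "2 * t / eps = of_int b" "even a" "even b"
    using assms(1) unfolding even_pt_def by blast
  obtain j s where "a = 2 * j" "b = 2 * s" using ab(3,4) by (auto elim!: evenE)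
  then have "x = of_int j * eps" "t = of_int s * eps" using ab(1,2) assms(2) by (auto simp: field_simps)
  then show ?thesis using that by blast
qed

lemma odd_pt_O: assumes "odd_pt eps x t" "eps > 0"
  obtains j s where "x = (of_int j + 1/2) * eps" "t = (of_int s + 1/2) * eps"
proof -
  obtain a b :: int where ab: "2 * x / eps = of_int a" "2 * t / eps = of_int b" "odd a" "odd b"
    using assms(1) unfolding odd_pt_def by blast
  obtain j s where "a = 2 * j + 1" "b = 2 * s + 1" using ab(3,4) by (auto elim!: oddE)
  then have "x = (of_int j + 1/2) * eps" "t = (of_int s + 1/2) * eps" using ab(1,2) assms(2) by (auto simp: field_simps)
  then show ?thesis using that by blast
qed

lemma lattice_E: assumes "eps > 0" shows "lattice_pt eps (of_int j * eps) (of_int s * eps)"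
proof -
  have "2 * (of_int j * eps) / eps = of_int (2 * j)" "2 * (of_int s * eps) / eps = of_int (2 * s)"
       "(of_int j * eps + of_int s * eps) / eps = of_int (j + s)" using assms by (auto simp: field_simps)
  then show ?thesis unfolding lattice_pt_def by (metis Ints_of_int)
qed

lemma lattice_O: assumes "eps > 0" shows "lattice_pt eps ((of_int j + 1/2) * eps) ((of_int s + 1/2) * eps)"
proof -
  have "2 * ((of_int j + 1/2) * eps) / eps = of_int (2 * j + 1)" "2 * ((of_int s + 1/2) * eps) / eps = of_int (2 * s + 1)"
       "((of_int j + 1/2) * eps + (of_int s + 1/2) * eps) / eps = of_int (j + s + 1)" using assms by (auto simp: field_simps)
  then show ?thesis unfolding lattice_pt_def by (metis Ints_of_int)
qed

lemma AA_off: assumes "eps > 0" "\<not> lattice_pt eps x t"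
  shows "AA1 h \<delta> eps x t = 0" "AA2 h \<delta> eps x t = 0"
proof -
  have nE: "\<not> (x / eps \<in> \<int> \<and> t / eps \<in> \<int>)"
  proof
    assume "x / eps \<in> \<int> \<and> t / eps \<in> \<int>"
    then obtain j s where "x / eps = of_int j" "t / eps = of_int s" by (auto elim!: Ints_cases)
    then have "x = of_int j * eps" "t = of_int s * eps" using assms(1) by (auto simp: field_simps)
    then show False using assms(2) lattice_E[OF assms(1)] by simp
  qed
  have nO: "\<not> (x / eps - 1/2 \<in> \<int> \<and> t / eps - 1/2 \<in> \<int>)"
  proof
    assume "x / eps - 1/2 \<in> \<int> \<and> t / eps - 1/2 \<in> \<int>"
    then obtain j s where "x / eps - 1/2 = of_int j" "t / eps - 1/2 = of_int s" by (auto elim!: Ints_cases)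
    then have "x = (of_int j + 1/2) * eps" "t = (of_int s + 1/2) * eps" using assms(1) by (auto simp: field_simps)
    then show False using assms(2) lattice_O[OF assms(1)] by simp
  qed
  show "AA1 h \<delta> eps x t = 0" "AA2 h \<delta> eps x t = 0" unfolding AA1_def AA2_def using nE nO by auto
qed

lemma kap_split: "kap (m * eps) \<delta> = 1 / sqrt (1 + m\<^sup>2 * eps\<^sup>2) * dd \<delta>"
  unfolding kap_def dd_def by (simp add: power_mult_distrib)

lemma lattice_even_or_odd: assumes "lattice_pt eps x t"
  shows "even_pt eps x t \<or> odd_pt eps x t"
proof -
  obtain a b c :: int where abc: "2 * x / eps = of_int a" "2 * t / eps = of_int b" "(x + t) / eps = of_int c"
    using assms unfolding lattice_pt_def by (auto elim!: Ints_cases)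
  have "2 * x / eps + 2 * t / eps = 2 * ((x + t) / eps)"
    by (simp only: times_divide_eq_right[symmetric] distrib_left[symmetric] add_divide_distrib[symmetric])
  then have "of_int a + of_int b = (2 * of_int c :: real)" using abc by simp
  then have "a + b = 2 * c" by (metis of_int_add of_int_eq_iff of_int_mult of_int_numeral)
  then have "even a \<and> even b \<or> odd a \<and> odd b" by presburger
  then show ?thesis unfolding even_pt_def odd_pt_def using abc(1,2) by blast
qed

lemma shifts:
  "of_int j * eps + eps / 2 = (of_int j + 1/2) * (eps::real)"
  "of_int j * eps - eps / 2 = (of_int (j - 1) + 1/2) * (eps::real)"
  "(of_int j + 1/2) * eps + eps / 2 = of_int (j + 1) * (eps::real)"
  "(of_int j + 1/2) * eps - eps / 2 = of_int j * (eps::real)"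
  by (simp_all add: algebra_simps)

lemma is_sol_AA:
  assumes m: "0 < m" and e: "0 < eps" and ad: "adm (m * eps) \<delta>" and d: "0 < \<delta>"
  shows "is_sol m eps \<delta> (AA1 (m * eps) \<delta> eps) (AA2 (m * eps) \<delta> eps)"
proof -
  define h where "h = m * eps"
  have e0: "eps \<noteq> 0" using e by simp
  note ur = u_rec[OF ad[folded h_def]]
  have K: "complex_of_real (kap h \<delta>) = complex_of_real (1 / sqrt (1 + m\<^sup>2 * eps\<^sup>2)) * complex_of_real (dd \<delta>)"
    unfolding h_def kap_split by simp
  have P1: "\<forall>x t. \<not> lattice_pt eps x t \<longrightarrow> AA1 h \<delta> eps x t = 0 \<and> AA2 h \<delta> eps x t = 0"
    using AA_off[OF e] by blast
  have P2: "\<forall>x t. lattice_pt eps x t \<and> even_pt eps x t \<longrightarrow>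
        AA1 h \<delta> eps x t = of_real (1 / sqrt (1 + m\<^sup>2 * eps\<^sup>2)) *
          (AA1 h \<delta> eps (x + eps/2) (t - eps/2) + of_real (m * eps) * AA2 h \<delta> eps (x + eps/2) (t - eps/2)) \<and>
        AA2 h \<delta> eps x t = of_real (1 / sqrt (1 + m\<^sup>2 * eps\<^sup>2)) *
          (AA2 h \<delta> eps (x - eps/2) (t - eps/2) - of_real (m * eps) * AA1 h \<delta> eps (x - eps/2) (t - eps/2))
          + (if x = 0 \<and> t = 0 then 2 else 0)"
  proof (intro allI impI)
    fix x t assume "lattice_pt eps x t \<and> even_pt eps x t"
    then obtain j s where xt: "x = of_int j * eps" "t = of_int s * eps" using even_pt_E e by blast
    have z: "(x = 0 \<and> t = 0) = (j = 0 \<and> s = 0)" using xt e0 by simp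
    show "AA1 h \<delta> eps x t = of_real (1 / sqrt (1 + m\<^sup>2 * eps\<^sup>2)) *
          (AA1 h \<delta> eps (x + eps/2) (t - eps/2) + of_real (m * eps) * AA2 h \<delta> eps (x + eps/2) (t - eps/2)) \<and>
        AA2 h \<delta> eps x t = of_real (1 / sqrt (1 + m\<^sup>2 * eps\<^sup>2)) *
          (AA2 h \<delta> eps (x - eps/2) (t - eps/2) - of_real (m * eps) * AA1 h \<delta> eps (x - eps/2) (t - eps/2))
          + (if x = 0 \<and> t = 0 then 2 else 0)"
      unfolding z unfolding xt shifts AA_even[OF e0] AA_odd[OF e0] h_def[symmetric]
      unfolding ur(1)[of j s] ur(2)[of j s] K v1_def v2_def
      by (simp add: algebra_simps)
  qed
  have P3: "\<forall>x t. lattice_pt eps x t \<and> odd_pt eps x t \<longrightarrow>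
        AA1 h \<delta> eps x t = of_real (1 / sqrt (1 - \<delta>\<^sup>2)) *
          (AA1 h \<delta> eps (x + eps/2) (t - eps/2) - \<i> * of_real \<delta> * AA2 h \<delta> eps (x + eps/2) (t - eps/2)) \<and>
        AA2 h \<delta> eps x t = of_real (1 / sqrt (1 - \<delta>\<^sup>2)) *
          (AA2 h \<delta> eps (x - eps/2) (t - eps/2) + \<i> * of_real \<delta> * AA1 h \<delta> eps (x - eps/2) (t - eps/2))"
  proof (intro allI impI)
    fix x t assume "lattice_pt eps x t \<and> odd_pt eps x t"
    then obtain j s where xt: "x = (of_int j + 1/2) * eps" "t = (of_int s + 1/2) * eps" using odd_pt_O e by blast
    show "AA1 h \<delta> eps x t = of_real (1 / sqrt (1 - \<delta>\<^sup>2)) *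
          (AA1 h \<delta> eps (x + eps/2) (t - eps/2) - \<i> * of_real \<delta> * AA2 h \<delta> eps (x + eps/2) (t - eps/2)) \<and>
        AA2 h \<delta> eps x t = of_real (1 / sqrt (1 - \<delta>\<^sup>2)) *
          (AA2 h \<delta> eps (x - eps/2) (t - eps/2) + \<i> * of_real \<delta> * AA1 h \<delta> eps (x - eps/2) (t - eps/2))"
      unfolding xt shifts AA_even[OF e0] AA_odd[OF e0] v1_def v2_def dd_def by simp
  qed
  have S: "{(x, t). x / eps \<in> \<int> \<and> t / eps \<in> \<int>} = (\<lambda>(j, s). (of_int j * eps, of_int s * eps)) ` (UNIV :: (int \<times> int) set)"
  proof (intro equalityI subsetI)
    fix p assume "p \<in> {(x, t). x / eps \<in> \<int> \<and> t / eps \<in> \<int>}"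
    then obtain x t where p: "p = (x, t)" "x / eps \<in> \<int>" "t / eps \<in> \<int>" by auto
    then obtain j s where "x / eps = of_int j" "t / eps = of_int s" by (auto elim!: Ints_cases)
    then have "x = of_int j * eps" "t = of_int s * eps" using e0 by (auto simp: field_simps)
    then show "p \<in> (\<lambda>(j, s). (of_int j * eps, of_int s * eps)) ` UNIV" using p by auto
  qed (auto simp: e0)
  have inj: "inj_on (\<lambda>(j::int, s::int). (of_int j * eps, of_int s * eps)) UNIV"
    using e0 by (auto simp: inj_on_def)
  have P4: "(\<lambda>(x, t). (cmod (AA1 h \<delta> eps x t))\<^sup>2 + (cmod (AA2 h \<delta> eps x t))\<^sup>2) summable_on
        {(x, t). x / eps \<in> \<int> \<and> t / eps \<in> \<int>}"
    unfolding S summable_on_reindex[OF inj]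
    using u_summable[OF ad[folded h_def] d] by (simp add: o_def AA_even[OF e0] case_prod_unfold)
  show ?thesis unfolding is_sol_def using P1 P2 P3 P4 unfolding h_def by blast
qed

lemma even_pt_E': assumes "eps > 0" shows "even_pt eps (of_int j * eps) (of_int s * eps)"
proof -
  have "2 * (of_int j * eps) / eps = of_int (2 * j)" "2 * (of_int s * eps) / eps = of_int (2 * s)"
    using assms by (auto simp: field_simps)
  then show ?thesis unfolding even_pt_def by fastforce
qed

lemma odd_pt_O': assumes "eps > 0" shows "odd_pt eps ((of_int j + 1/2) * eps) ((of_int s + 1/2) * eps)"
proof -
  have "2 * ((of_int j + 1/2) * eps) / eps = of_int (2 * j + 1)" "2 * ((of_int s + 1/2) * eps) / eps = of_int (2 * s + 1)"
    using assms by (auto simp: field_simps)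
  then show ?thesis unfolding odd_pt_def by fastforce
qed

lemma sol_odd:
  assumes e: "0 < eps" and S: "is_sol m eps \<delta> P1 P2"
  shows "P1 ((of_int j + 1/2) * eps) ((of_int s + 1/2) * eps) = of_real (dd \<delta>) * (P1 (of_int (j + 1) * eps) (of_int s * eps) - \<i> * of_real \<delta> * P2 (of_int (j + 1) * eps) (of_int s * eps))"
    and "P2 ((of_int j + 1/2) * eps) ((of_int s + 1/2) * eps) = of_real (dd \<delta>) * (P2 (of_int j * eps) (of_int s * eps) + \<i> * of_real \<delta> * P1 (of_int j * eps) (of_int s * eps))"
proof -
  note O = S[unfolded is_sol_def, THEN conjunct2, THEN conjunct2, THEN conjunct1, rule_format, OF conjI[OF lattice_O[OF e, of j s] odd_pt_O'[OF e, of j s]]]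
  note O' = O[unfolded shifts]
  show "P1 ((of_int j + 1/2) * eps) ((of_int s + 1/2) * eps) = of_real (dd \<delta>) * (P1 (of_int (j + 1) * eps) (of_int s * eps) - \<i> * of_real \<delta> * P2 (of_int (j + 1) * eps) (of_int s * eps))"
    unfolding dd_def using O' by blast
  show "P2 ((of_int j + 1/2) * eps) ((of_int s + 1/2) * eps) = of_real (dd \<delta>) * (P2 (of_int j * eps) (of_int s * eps) + \<i> * of_real \<delta> * P1 (of_int j * eps) (of_int s * eps))"
    unfolding dd_def using O' by blast
qed

lemma sol_even:
  assumes m: "0 < m" and e: "0 < eps" and S: "is_sol m eps \<delta> P1 P2"
  shows "P1 (of_int j * eps) (of_int s * eps) = of_real (kap (m * eps) \<delta>) * (P1 (of_int (j + 1) * eps) (of_int (s - 1) * eps)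
            + (\<i> * of_real (\<delta> * (m * eps))) * P1 (of_int j * eps) (of_int (s - 1) * eps)
            + of_real (m * eps) * P2 (of_int j * eps) (of_int (s - 1) * eps) - (\<i> * of_real \<delta>) * P2 (of_int (j + 1) * eps) (of_int (s - 1) * eps))"
    and "P2 (of_int j * eps) (of_int s * eps) = of_real (kap (m * eps) \<delta>) * (- of_real (m * eps) * P1 (of_int j * eps) (of_int (s - 1) * eps)
            + (\<i> * of_real \<delta>) * P1 (of_int (j - 1) * eps) (of_int (s - 1) * eps)
            + (\<i> * of_real (\<delta> * (m * eps))) * P2 (of_int j * eps) (of_int (s - 1) * eps) + P2 (of_int (j - 1) * eps) (of_int (s - 1) * eps))
            + (if j = 0 \<and> s = 0 then 2 else 0)"
proof -
  have e0: "eps \<noteq> 0" using e by simp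
  have ev: "P1 (of_int j * eps) (of_int s * eps) = of_real (1 / sqrt (1 + m\<^sup>2 * eps\<^sup>2)) *
          (P1 (of_int j * eps + eps/2) (of_int s * eps - eps/2) + of_real (m * eps) * P2 (of_int j * eps + eps/2) (of_int s * eps - eps/2))"
       "P2 (of_int j * eps) (of_int s * eps) = of_real (1 / sqrt (1 + m\<^sup>2 * eps\<^sup>2)) *
          (P2 (of_int j * eps - eps/2) (of_int s * eps - eps/2) - of_real (m * eps) * P1 (of_int j * eps - eps/2) (of_int s * eps - eps/2))
          + (if of_int j * eps = 0 \<and> of_int s * eps = 0 then 2 else 0)"
    using S[unfolded is_sol_def, THEN conjunct2, THEN conjunct1, rule_format, OF conjI[OF lattice_E[OF e, of j s] even_pt_E'[OF e, of j s]]] by blast+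
  have z: "(of_int j * eps = 0 \<and> of_int s * eps = 0) = (j = 0 \<and> s = 0)" using e0 by simp
  have K: "complex_of_real (kap (m * eps) \<delta>) = complex_of_real (1 / sqrt (1 + m\<^sup>2 * eps\<^sup>2)) * complex_of_real (dd \<delta>)"
    unfolding kap_split by simp
  show "P1 (of_int j * eps) (of_int s * eps) = of_real (kap (m * eps) \<delta>) * (P1 (of_int (j + 1) * eps) (of_int (s - 1) * eps)
            + (\<i> * of_real (\<delta> * (m * eps))) * P1 (of_int j * eps) (of_int (s - 1) * eps)
            + of_real (m * eps) * P2 (of_int j * eps) (of_int (s - 1) * eps) - (\<i> * of_real \<delta>) * P2 (of_int (j + 1) * eps) (of_int (s - 1) * eps))"
    unfolding ev(1) shifts sol_odd[OF e S] K by (simp add: algebra_simps)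
  show "P2 (of_int j * eps) (of_int s * eps) = of_real (kap (m * eps) \<delta>) * (- of_real (m * eps) * P1 (of_int j * eps) (of_int (s - 1) * eps)
            + (\<i> * of_real \<delta>) * P1 (of_int (j - 1) * eps) (of_int (s - 1) * eps)
            + (\<i> * of_real (\<delta> * (m * eps))) * P2 (of_int j * eps) (of_int (s - 1) * eps) + P2 (of_int (j - 1) * eps) (of_int (s - 1) * eps))
            + (if j = 0 \<and> s = 0 then 2 else 0)"
    unfolding ev(2) z shifts sol_odd[OF e S] K by (simp add: algebra_simps)
qed

lemma sol_summable:
  assumes e: "0 < eps" and S: "is_sol m eps \<delta> P1 P2"
  shows "(\<lambda>(j, s). (cmod (P1 (of_int j * eps) (of_int s * eps)))\<^sup>2 + (cmod (P2 (of_int j * eps) (of_int s * eps)))\<^sup>2) summable_on UNIV"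
proof -
  have e0: "eps \<noteq> 0" using e by simp
  have Sset: "{(x, t). x / eps \<in> \<int> \<and> t / eps \<in> \<int>} = (\<lambda>(j, s). (of_int j * eps, of_int s * eps)) ` (UNIV :: (int \<times> int) set)"
  proof (intro equalityI subsetI)
    fix p assume "p \<in> {(x, t). x / eps \<in> \<int> \<and> t / eps \<in> \<int>}"
    then obtain x t where p: "p = (x, t)" "x / eps \<in> \<int>" "t / eps \<in> \<int>" by auto
    then obtain j s where "x / eps = of_int j" "t / eps = of_int s" by (auto elim!: Ints_cases)
    then have "x = of_int j * eps" "t = of_int s * eps" using e0 by (auto simp: field_simps)
    then show "p \<in> (\<lambda>(j, s). (of_int j * eps, of_int s * eps)) ` UNIV" using p by auto
  qed (auto simp: e0)
  have inj: "inj_on (\<lambda>(j::int, s::int). (of_int j * eps, of_int s * eps)) UNIV"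
    using e0 by (auto simp: inj_on_def)
  have "(\<lambda>(x, t). (cmod (P1 x t))\<^sup>2 + (cmod (P2 x t))\<^sup>2) summable_on {(x, t). x / eps \<in> \<int> \<and> t / eps \<in> \<int>}"
    using S unfolding is_sol_def by blast
  then show ?thesis unfolding Sset summable_on_reindex[OF inj] by (simp add: o_def case_prod_unfold)
qed

lemma swap_summable:
  assumes "(\<lambda>(j, s). f j s) summable_on (UNIV :: ('a \<times> 'b) set)"
  shows "(\<lambda>(s, j). f j s) summable_on (UNIV :: ('b \<times> 'a) set)"
proof -
  have inj: "inj_on prod.swap (UNIV :: ('b \<times> 'a) set)" by simp
  have "(\<lambda>(j, s). f j s) summable_on (prod.swap ` (UNIV :: ('b \<times> 'a) set))" using assms by simp
  then have "((\<lambda>(j, s). f j s) \<circ> prod.swap) summable_on (UNIV :: ('b \<times> 'a) set)"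
    using summable_on_reindex[OF inj] by blast
  then show ?thesis by (simp add: o_def case_prod_unfold)
qed

lemma diff_sq_summable:
  fixes a1 a2 b1 b2 :: "'a \<Rightarrow> complex"
  assumes "(\<lambda>p. (cmod (a1 p))\<^sup>2 + (cmod (a2 p))\<^sup>2) summable_on UNIV"
    and "(\<lambda>p. (cmod (b1 p))\<^sup>2 + (cmod (b2 p))\<^sup>2) summable_on UNIV"
  shows "(\<lambda>p. (cmod (a1 p - b1 p))\<^sup>2 + (cmod (a2 p - b2 p))\<^sup>2) summable_on UNIV"
proof (rule summable_on_comparison_test)
  show "(\<lambda>p. 2 * ((cmod (a1 p))\<^sup>2 + (cmod (a2 p))\<^sup>2) + 2 * ((cmod (b1 p))\<^sup>2 + (cmod (b2 p))\<^sup>2)) summable_on UNIV"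
    by (intro summable_on_add summable_on_cmult_right assms)
  have sq: "(cmod (a - b))\<^sup>2 \<le> 2 * (cmod a)\<^sup>2 + 2 * (cmod b)\<^sup>2" for a b :: complex
  proof -
    have "cmod (a - b) \<le> cmod a + cmod b" by (rule norm_triangle_ineq4)
    then have "(cmod (a - b))\<^sup>2 \<le> (cmod a + cmod b)\<^sup>2" by (intro power_mono) auto
    also have "\<dots> \<le> 2 * (cmod a)\<^sup>2 + 2 * (cmod b)\<^sup>2"
      using sum_squares_bound[of "cmod a" "cmod b"] by (simp add: power2_sum power2_eq_square algebra_simps)
    finally show ?thesis .
  qed
  show "(cmod (a1 p - b1 p))\<^sup>2 + (cmod (a2 p - b2 p))\<^sup>2 \<le> 2 * ((cmod (a1 p))\<^sup>2 + (cmod (a2 p))\<^sup>2) + 2 * ((cmod (b1 p))\<^sup>2 + (cmod (b2 p))\<^sup>2)" for p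
    using sq[of "a1 p" "b1 p"] sq[of "a2 p" "b2 p"] by simp
qed auto

lemma sol_unique:
  assumes m: "0 < m" and e: "0 < eps" and ad: "adm (m * eps) \<delta>" and d: "0 < \<delta>"
    and S: "is_sol m eps \<delta> P1 P2"
  shows "P1 = AA1 (m * eps) \<delta> eps \<and> P2 = AA2 (m * eps) \<delta> eps"
proof -
  define h where "h = m * eps"
  have e0: "eps \<noteq> 0" using e by simp
  define d1 where "d1 j s = P1 (of_int j * eps) (of_int s * eps) - u1 h \<delta> j s" for j s
  define d2 where "d2 j s = P2 (of_int j * eps) (of_int s * eps) - u2 h \<delta> j s" for j s
  note ur = u_rec[OF ad[folded h_def]]
  note se = sol_even[OF m e S, folded h_def]
  have dr1: "d1 j s = of_real (kap h \<delta>) * (d1 (j + 1) (s - 1) + (\<i> * of_real (\<delta> * h)) * d1 j (s - 1)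
               + of_real h * d2 j (s - 1) - (\<i> * of_real \<delta>) * d2 (j + 1) (s - 1))" for j s
  proof -
    note eP = se(1)[of j s] and eU = ur(1)[of j s]
    show ?thesis unfolding d1_def d2_def eP eU by (simp add: algebra_simps)
  qed
  have dr2: "d2 j s = of_real (kap h \<delta>) * (- of_real h * d1 j (s - 1) + (\<i> * of_real \<delta>) * d1 (j - 1) (s - 1)
               + (\<i> * of_real (\<delta> * h)) * d2 j (s - 1) + d2 (j - 1) (s - 1))" for j s
  proof -
    note eP = se(2)[of j s] and eU = ur(2)[of j s]
    show ?thesis unfolding d1_def d2_def eP eU by (simp add: algebra_simps)
  qed
  have smP: "(\<lambda>p. (cmod (P1 (of_int (fst p) * eps) (of_int (snd p) * eps)))\<^sup>2 + (cmod (P2 (of_int (fst p) * eps) (of_int (snd p) * eps)))\<^sup>2) summable_on UNIV"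
    using sol_summable[OF e S] by (simp add: case_prod_unfold)
  have smU: "(\<lambda>p. (cmod (u1 h \<delta> (fst p) (snd p)))\<^sup>2 + (cmod (u2 h \<delta> (fst p) (snd p)))\<^sup>2) summable_on UNIV"
    using u_summable[OF ad[folded h_def] d] by (simp add: case_prod_unfold)
  have smD: "(\<lambda>(j, s). (cmod (d1 j s))\<^sup>2 + (cmod (d2 j s))\<^sup>2) summable_on UNIV"
    using diff_sq_summable[OF smP smU] unfolding d1_def d2_def by (simp add: case_prod_unfold)
  have smD': "(\<lambda>(s, j). (cmod (d1 j s))\<^sup>2 + (cmod (d2 j s))\<^sup>2) summable_on UNIV"
    by (rule swap_summable[OF smD])
  have z1: "P1 (of_int j * eps) (of_int s * eps) = u1 h \<delta> j s" for j s
    using uniq_Z2(1)[OF ad[folded h_def] d dr1 dr2 smD', of j s] unfolding d1_def by simp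
  have z2: "P2 (of_int j * eps) (of_int s * eps) = u2 h \<delta> j s" for j s
    using uniq_Z2(2)[OF ad[folded h_def] d dr1 dr2 smD', of j s] unfolding d2_def by simp
  have pw: "P1 x t = AA1 h \<delta> eps x t \<and> P2 x t = AA2 h \<delta> eps x t" for x t
  proof (cases "lattice_pt eps x t")
    case False
    then show ?thesis using S[unfolded is_sol_def] AA_off[OF e False] by auto
  next
    case True
    then consider "even_pt eps x t" | "odd_pt eps x t" using lattice_even_or_odd by blast
    then show ?thesis
    proof cases
      case 1
      then obtain j s where xt: "x = of_int j * eps" "t = of_int s * eps" using even_pt_E e by blast
      show ?thesis unfolding xt AA_even[OF e0] z1 z2 by simp
    next
      case 2
      then obtain j s where xt: "x = (of_int j + 1/2) * eps" "t = (of_int s + 1/2) * eps" using odd_pt_O e by blast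
      show ?thesis unfolding xt AA_odd[OF e0] sol_odd[OF e S] z1 z2 v1_def v2_def by simp
    qed
  qed
  then show ?thesis unfolding h_def by auto
qed

lemma A_pair_eq:
  assumes m: "0 < m" and e: "0 < eps" and ad: "adm (m * eps) \<delta>" and d: "0 < \<delta>"
  shows "A_pair m eps \<delta> = (AA1 (m * eps) \<delta> eps, AA2 (m * eps) \<delta> eps)"
  unfolding A_pair_def
proof (rule the_equality)
  show "is_sol m eps \<delta> (fst (AA1 (m * eps) \<delta> eps, AA2 (m * eps) \<delta> eps)) (snd (AA1 (m * eps) \<delta> eps, AA2 (m * eps) \<delta> eps))"
    using is_sol_AA[OF assms] by simp
  fix p assume "is_sol m eps \<delta> (fst p) (snd p)"
  then show "p = (AA1 (m * eps) \<delta> eps, AA2 (m * eps) \<delta> eps)"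
    using sol_unique[OF assms] by (metis prod.collapse)
qed

lemma A_eq:
  assumes "0 < m" "0 < eps" "adm (m * eps) \<delta>" "0 < \<delta>"
  shows "A1 x t m eps \<delta> = AA1 (m * eps) \<delta> eps x t" and "A2 x t m eps \<delta> = AA2 (m * eps) \<delta> eps x t"
  unfolding A1_def A2_def A_pair_eq[OF assms] by simp_all

definition dl2 :: "real \<Rightarrow> real" where "dl2 h = h / (2 * (1 + h))"

lemma dl2_pos: "0 < h \<Longrightarrow> 0 < dl2 h" unfolding dl2_def by simp

lemma adm_small: assumes "0 < h" "0 \<le> \<delta>" "\<delta> \<le> dl2 h" shows "adm h \<delta>"
proof -
  have "0 < h + h * h" using assms(1) by (simp add: add_pos_pos)
  then have "dl2 h < h / (1 + h)" unfolding dl2_def using assms(1) by (simp add: field_simps)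
  then show ?thesis unfolding adm_def using assms by auto
qed

lemma u_cont_delta: assumes h: "0 < h"
  shows "((\<lambda>\<delta>. u1 h \<delta> j s) \<longlongrightarrow> u1 h 0 j s) (at_right 0)"
    and "((\<lambda>\<delta>. u2 h \<delta> j s) \<longlongrightarrow> u2 h 0 j s) (at_right 0)"
proof -
  have sub: "{0..dl2 h} \<times> cbox (-pi) pi \<subseteq> Om h" unfolding Om_def using adm_small[OF h] by auto
  have c1: "continuous_on ({0..dl2 h} \<times> cbox (-pi) pi) (\<lambda>(\<delta>, k). cis (of_int j * k) * F1 h \<delta> s k)"
    unfolding case_prod_unfold
    by (intro continuous_intros continuous_on_subset[OF cont_F1 sub])
  have c2: "continuous_on ({0..dl2 h} \<times> cbox (-pi) pi) (\<lambda>(\<delta>, k). cis (of_int j * k) * F2 h \<delta> s k)"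
    unfolding case_prod_unfold
    by (intro continuous_intros continuous_on_subset[OF cont_F2 sub])
  have g1: "continuous_on {0..dl2 h} (\<lambda>\<delta>. u1 h \<delta> j s)"
    unfolding u1_def cf_def using integral_continuous_on_param[OF c1]
    by (intro continuous_intros) (auto simp: cbox_interval)
  have g2: "continuous_on {0..dl2 h} (\<lambda>\<delta>. u2 h \<delta> j s)"
    unfolding u2_def cf_def using integral_continuous_on_param[OF c2]
    by (intro continuous_intros) (auto simp: cbox_interval)
  have at: "at 0 within {0..dl2 h} = at_right 0" by (rule at_within_Icc_at_right[OF dl2_pos[OF h]])
  have m: "0 \<in> {0..dl2 h}" using dl2_pos[OF h] by simp
  have "((\<lambda>\<delta>. u1 h \<delta> j s) \<longlongrightarrow> u1 h 0 j s) (at 0 within {0..dl2 h})"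
    using g1 m unfolding continuous_on_def by blast
  then show "((\<lambda>\<delta>. u1 h \<delta> j s) \<longlongrightarrow> u1 h 0 j s) (at_right 0)" unfolding at .
  have "((\<lambda>\<delta>. u2 h \<delta> j s) \<longlongrightarrow> u2 h 0 j s) (at 0 within {0..dl2 h})"
    using g2 m unfolding continuous_on_def by blast
  then show "((\<lambda>\<delta>. u2 h \<delta> j s) \<longlongrightarrow> u2 h 0 j s) (at_right 0)" unfolding at .
qed

lemma At_eq: assumes m: "0 < m" and e: "0 < eps"
  shows "At1 (of_int j * eps) (of_int s * eps) m eps = u1 (m * eps) 0 j s"
    and "At2 (of_int j * eps) (of_int s * eps) m eps = u2 (m * eps) 0 j s"
proof -
  have h: "0 < m * eps" using m e by simp
  have e0: "eps \<noteq> 0" using e by simp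
  have ev: "eventually (\<lambda>\<delta>. 0 < \<delta> \<and> \<delta> < dl2 (m * eps)) (at_right 0)"
    using eventually_at_right_real[OF dl2_pos[OF h]] eventually_at_right_less[of 0] by (auto elim: eventually_elim2)
  have eq1: "eventually (\<lambda>\<delta>. u1 (m * eps) \<delta> j s = A1 (of_int j * eps) (of_int s * eps) m eps \<delta>) (at_right 0)"
    using ev by eventually_elim (auto simp: A_eq(1)[OF m e adm_small[OF h]] AA_even[OF e0])
  have eq2: "eventually (\<lambda>\<delta>. u2 (m * eps) \<delta> j s = A2 (of_int j * eps) (of_int s * eps) m eps \<delta>) (at_right 0)"
    using ev by eventually_elim (auto simp: A_eq(2)[OF m e adm_small[OF h]] AA_even[OF e0])
  show "At1 (of_int j * eps) (of_int s * eps) m eps = u1 (m * eps) 0 j s"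
    unfolding At1_def by (rule tendsto_Lim[OF trivial_limit_at_right_real tendsto_cong[THEN iffD1, OF eq1 u_cont_delta(1)[OF h]]])
  show "At2 (of_int j * eps) (of_int s * eps) m eps = u2 (m * eps) 0 j s"
    unfolding At2_def by (rule tendsto_Lim[OF trivial_limit_at_right_real tendsto_cong[THEN iffD1, OF eq2 u_cont_delta(2)[OF h]]])
qed

definition c0 :: "real \<Rightarrow> real" where "c0 h = 1 / sqrt (1 + h\<^sup>2)"
definition W0 :: "real \<Rightarrow> real \<Rightarrow> real" where "W0 h k = sqrt (1 - (c0 h)\<^sup>2 * (cos k)\<^sup>2)"
definition Af :: "real \<Rightarrow> real \<Rightarrow> real" where "Af h k = c0 h * sin k / W0 h k"
definition Bf :: "real \<Rightarrow> real \<Rightarrow> real" where "Bf h k = c0 h * h / W0 h k"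
definition Wd :: "real \<Rightarrow> real \<Rightarrow> real" where "Wd h k = (c0 h)\<^sup>2 * cos k * sin k / W0 h k"
definition Ad :: "real \<Rightarrow> real \<Rightarrow> real" where "Ad h k = c0 h * (cos k * W0 h k - sin k * Wd h k) / (W0 h k)\<^sup>2"
definition Bd :: "real \<Rightarrow> real \<Rightarrow> real" where "Bd h k = - c0 h * h * Wd h k / (W0 h k)\<^sup>2"
definition L0 :: "real \<Rightarrow> real \<Rightarrow> complex" where "L0 h k = of_real (c0 h * cos k) - \<i> * of_real (W0 h k)"
definition ell :: "real \<Rightarrow> real \<Rightarrow> complex" where "ell h k = - \<i> * of_real (Af h k)"

lemma c0_pos: "0 < c0 h" unfolding c0_def using onehsq[of h] by simp
lemma c0_sq: "(c0 h)\<^sup>2 * (1 + h\<^sup>2) = 1" unfolding c0_def using onehsq[of h] by (simp add: power_divide)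
lemma c0_sq_lt1: "0 < h \<Longrightarrow> (c0 h)\<^sup>2 < 1"
proof -
  assume h: "0 < h"
  have e: "(c0 h)\<^sup>2 = 1 / (1 + h\<^sup>2)" unfolding c0_def using onehsq[of h] by (simp add: power_divide)
  have "1 < 1 + h\<^sup>2" using h by simp
  then have "1 / (1 + h\<^sup>2) < 1" using onehsq[of h] by (simp add: divide_less_eq)
  then show ?thesis unfolding e .
qed

lemma W0_arg_pos: "0 < h \<Longrightarrow> 0 < 1 - (c0 h)\<^sup>2 * (cos k)\<^sup>2"
proof -
  assume h: "0 < h"
  have "(c0 h)\<^sup>2 * (cos k)\<^sup>2 \<le> (c0 h)\<^sup>2" using abs_cos_le_one[of k]
    by (intro mult_left_le) (auto simp: abs_square_le_1)
  then show ?thesis using c0_sq_lt1[OF h] by linarith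
qed

lemma W0_pos: "0 < h \<Longrightarrow> 0 < W0 h k" unfolding W0_def using W0_arg_pos by simp
lemma W0_sq: "0 < h \<Longrightarrow> (W0 h k)\<^sup>2 = 1 - (c0 h)\<^sup>2 * (cos k)\<^sup>2"
  unfolding W0_def using W0_arg_pos[of h k] by simp

lemma kap0: "kap h 0 = c0 h" unfolding kap_def c0_def by simp

lemma zz0: "zz h 0 k = of_real (c0 h * cos k)" unfolding zz_def kap0 by simp

lemma ww0: assumes "0 < h" shows "ww h 0 k = of_real (W0 h k)"
proof -
  have "1 - (zz h 0 k)\<^sup>2 = of_real (1 - (c0 h)\<^sup>2 * (cos k)\<^sup>2)" unfolding zz0 by (simp add: power_mult_distrib)
  then show ?thesis unfolding ww_def W0_def using W0_arg_pos[OF assms, of k] by (simp add: csqrt_of_real)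
qed

lemma lam0: "0 < h \<Longrightarrow> lam h 0 k = L0 h k" unfolding lam_def L0_def zz0 ww0 by simp

lemma X1_0: assumes "0 < h" shows "X1 h 0 k = \<i> * of_real (Bf h k)"
  unfolding X1_def ww0[OF assms] n12_def kap0 Bf_def using W0_pos[OF assms, of k] by (simp add: field_simps)

lemma X2_0: assumes "0 < h" shows "X2 h 0 k = of_real (Af h k) + 1"
proof -
  have W: "W0 h k \<noteq> 0" using W0_pos[OF assms, of k] by simp
  have cm: "cis (- k) = of_real (cos k) - \<i> * of_real (sin k)" by (simp add: complex_eq_iff)
  have eq: "n22 h 0 k - mu h 0 k = - \<i> * of_real (c0 h * sin k) - \<i> * of_real (W0 h k)"
    unfolding n22_def mu_def zz0 ww0[OF assms] kap0 cm by (simp add: algebra_simps)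
  show ?thesis unfolding X2_def eq ww0[OF assms] Af_def using W by (simp add: field_simps)
qed

lemma Y2_0: assumes "0 < h" shows "Y2 h 0 k = of_real (Af h k) - 1"
proof -
  have W: "W0 h k \<noteq> 0" using W0_pos[OF assms, of k] by simp
  have cm: "cis (- k) = of_real (cos k) - \<i> * of_real (sin k)" by (simp add: complex_eq_iff)
  have eq: "n22 h 0 k - lam h 0 k = - \<i> * of_real (c0 h * sin k) + \<i> * of_real (W0 h k)"
    unfolding n22_def lam_def zz0 ww0[OF assms] kap0 cm by (simp add: algebra_simps)
  show ?thesis unfolding Y2_def eq ww0[OF assms] Af_def using W by (simp add: field_simps)
qed

definition sg :: "int \<Rightarrow> complex" where "sg s = (if 0 \<le> s then 1 else -1)"

lemma F1_0: "0 < h \<Longrightarrow> F1 h 0 s k = L0 h k ^ nat \<bar>s\<bar> * (\<i> * of_real (Bf h k))"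
  unfolding F1_def lam0 X1_0 by auto

lemma F2_0: "0 < h \<Longrightarrow> F2 h 0 s k = L0 h k ^ nat \<bar>s\<bar> * (of_real (Af h k) + sg s)"
  unfolding F2_def lam0 X2_0 Y2_0 sg_def by auto

lemma W0_deriv: assumes h: "0 < h" shows "(W0 h has_field_derivative Wd h k) (at k within S)"
proof -
  have g: "((\<lambda>k. 1 - (c0 h)\<^sup>2 * (cos k)\<^sup>2) has_field_derivative (2 * (c0 h)\<^sup>2 * cos k * sin k)) (at k within S)"
    by (auto intro!: derivative_eq_intros simp: power2_eq_square algebra_simps)
  have "((\<lambda>k. sqrt (1 - (c0 h)\<^sup>2 * (cos k)\<^sup>2)) has_field_derivative (inverse (sqrt (1 - (c0 h)\<^sup>2 * (cos k)\<^sup>2)) / 2 * (2 * (c0 h)\<^sup>2 * cos k * sin k))) (at k within S)"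
    by (rule DERIV_chain2[OF DERIV_real_sqrt[OF W0_arg_pos[OF h]] g])
  moreover have "inverse (sqrt (1 - (c0 h)\<^sup>2 * (cos k)\<^sup>2)) / 2 * (2 * (c0 h)\<^sup>2 * cos k * sin k) = Wd h k"
    unfolding Wd_def W0_def by (simp add: field_simps)
  ultimately show ?thesis unfolding W0_def[abs_def] by simp
qed

lemma W0_nz: "0 < h \<Longrightarrow> W0 h k \<noteq> 0" using W0_pos[of h k] by simp

lemma Af_deriv: assumes h: "0 < h" shows "(Af h has_field_derivative Ad h k) (at k within S)"
proof -
  have "((\<lambda>k. c0 h * sin k / W0 h k) has_field_derivative Ad h k) (at k within S)"
    by (rule derivative_eq_intros W0_deriv[OF h] refl)+ (use W0_nz[OF h, of k] in \<open>auto simp: Ad_def field_simps power2_eq_square\<close>)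
  then show ?thesis unfolding Af_def[abs_def] .
qed

lemma Bf_deriv: assumes h: "0 < h" shows "(Bf h has_field_derivative Bd h k) (at k within S)"
proof -
  have "((\<lambda>k. c0 h * h / W0 h k) has_field_derivative Bd h k) (at k within S)"
    by (rule derivative_eq_intros W0_deriv[OF h] refl)+ (use W0_nz[OF h, of k] in \<open>auto simp: Bd_def field_simps power2_eq_square\<close>)
  then show ?thesis unfolding Bf_def[abs_def] .
qed

lemma L0_deriv: assumes h: "0 < h" shows "(L0 h has_vector_derivative (ell h k * L0 h k)) (at k within S)"
proof -
  have "((\<lambda>k. of_real (c0 h * cos k) - \<i> * of_real (W0 h k)) has_vector_derivative
        (of_real (- c0 h * sin k) - \<i> * of_real (Wd h k))) (at k within S)"
    by (intro has_vector_derivative_diff has_vector_derivative_mult_right has_vector_derivative_of_real W0_deriv[OF h])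
       (auto intro!: derivative_eq_intros)
  moreover have "of_real (- c0 h * sin k) - \<i> * of_real (Wd h k) = ell h k * L0 h k"
    unfolding ell_def L0_def Af_def Wd_def using W0_nz[OF h, of k]
    by (simp add: complex_eq_iff field_simps power2_eq_square)
  ultimately show ?thesis unfolding L0_def[abs_def] by simp
qed

lemma L0_pow_deriv: assumes h: "0 < h"
  shows "((\<lambda>k. L0 h k ^ n) has_vector_derivative (of_nat n * ell h k * L0 h k ^ n)) (at k within S)"
proof (induction n)
  case 0 then show ?case by (simp add: has_vector_derivative_const)
next
  case (Suc n)
  have "((\<lambda>k. L0 h k * L0 h k ^ n) has_vector_derivative
        (L0 h k * (of_nat n * ell h k * L0 h k ^ n) + ell h k * L0 h k * L0 h k ^ n)) (at k within S)"
    by (rule has_vector_derivative_mult[OF L0_deriv[OF h] Suc.IH])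
  moreover have "L0 h k * (of_nat n * ell h k * L0 h k ^ n) + ell h k * L0 h k * L0 h k ^ n = of_nat (Suc n) * ell h k * L0 h k ^ Suc n"
    by (simp add: algebra_simps)
  ultimately show ?case by simp
qed

definition F1d :: "real \<Rightarrow> int \<Rightarrow> real \<Rightarrow> complex" where
  "F1d h s k = L0 h k ^ nat \<bar>s\<bar> * (of_nat (nat \<bar>s\<bar>) * ell h k * (\<i> * of_real (Bf h k)) + \<i> * of_real (Bd h k))"
definition F2d :: "real \<Rightarrow> int \<Rightarrow> real \<Rightarrow> complex" where
  "F2d h s k = L0 h k ^ nat \<bar>s\<bar> * (of_nat (nat \<bar>s\<bar>) * ell h k * (of_real (Af h k) + sg s) + of_real (Ad h k))"

lemma F1_deriv: assumes h: "0 < h" shows "(F1 h 0 s has_vector_derivative F1d h s k) (at k within S)"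
proof -
  have "((\<lambda>k. L0 h k ^ nat \<bar>s\<bar> * (\<i> * of_real (Bf h k))) has_vector_derivative
     (L0 h k ^ nat \<bar>s\<bar> * (\<i> * of_real (Bd h k)) + of_nat (nat \<bar>s\<bar>) * ell h k * L0 h k ^ nat \<bar>s\<bar> * (\<i> * of_real (Bf h k)))) (at k within S)"
    by (intro has_vector_derivative_mult L0_pow_deriv[OF h] has_vector_derivative_mult_right has_vector_derivative_of_real Bf_deriv[OF h])
  moreover have "F1 h 0 s = (\<lambda>k. L0 h k ^ nat \<bar>s\<bar> * (\<i> * of_real (Bf h k)))" using F1_0[OF h] by auto
  ultimately show ?thesis unfolding F1d_def by (simp add: algebra_simps)
qed

lemma F2_deriv: assumes h: "0 < h" shows "(F2 h 0 s has_vector_derivative F2d h s k) (at k within S)"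
proof -
  have "((\<lambda>k. L0 h k ^ nat \<bar>s\<bar> * (of_real (Af h k) + sg s)) has_vector_derivative
     (L0 h k ^ nat \<bar>s\<bar> * (of_real (Ad h k) + 0) + of_nat (nat \<bar>s\<bar>) * ell h k * L0 h k ^ nat \<bar>s\<bar> * (of_real (Af h k) + sg s))) (at k within S)"
    by (intro has_vector_derivative_mult L0_pow_deriv[OF h] has_vector_derivative_add has_vector_derivative_of_real Af_deriv[OF h] has_vector_derivative_const)
  moreover have "F2 h 0 s = (\<lambda>k. L0 h k ^ nat \<bar>s\<bar> * (of_real (Af h k) + sg s))" using F2_0[OF h] by auto
  ultimately show ?thesis unfolding F2d_def by (simp add: algebra_simps)
qed

lemma cont_W0: "continuous_on S (W0 h)" unfolding W0_def[abs_def] by (intro continuous_intros)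

lemma cont_F1d: assumes h: "0 < h" shows "continuous_on S (F1d h s)"
  unfolding F1d_def[abs_def] L0_def ell_def Af_def Bf_def Bd_def Wd_def
  using W0_nz[OF h] by (intro continuous_intros cont_W0) auto

lemma cont_F2d: assumes h: "0 < h" shows "continuous_on S (F2d h s)"
  unfolding F2d_def[abs_def] L0_def ell_def Af_def Ad_def Wd_def
  using W0_nz[OF h] by (intro continuous_intros cont_W0) auto

lemma F_periodic: assumes h: "0 < h" shows "F1 h 0 s (- pi) = F1 h 0 s pi" "F2 h 0 s (- pi) = F2 h 0 s pi"
  unfolding F1_0[OF h] F2_0[OF h] L0_def Af_def Bf_def W0_def by simp_all

lemma cf_deriv:
  assumes d: "\<And>k. k \<in> {-pi..pi} \<Longrightarrow> (G has_vector_derivative G' k) (at k within {-pi..pi})"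
    and cG': "continuous_on {-pi..pi} G'" and cG: "continuous_on {-pi..pi} G" and per: "G (- pi) = G pi"
  shows "of_int j * cf G j = \<i> * cf G' j"
proof -
  define f where "f k = cis (of_int j * k) * G k" for k
  have fd: "(f has_vector_derivative (cis (of_int j * k) * G' k + (\<i> * of_real (of_int j)) * cis (of_int j * k) * G k)) (at k within {-pi..pi})"
    if "k \<in> {-pi..pi}" for k
    unfolding f_def[abs_def] using has_vector_derivative_mult[OF deriv_cis_lin[of "of_int j"] d[OF that]] by simp
  have "((\<lambda>k. cis (of_int j * k) * G' k + (\<i> * of_real (of_int j)) * cis (of_int j * k) * G k) has_integral (f pi - f (- pi))) {-pi..pi}"
    by (rule fundamental_theorem_of_calculus) (use fd in auto)
  moreover have "f pi - f (- pi) = 0" unfolding f_def using cis_int_pi[of j] per by simp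
  ultimately have I: "integral {-pi..pi} (\<lambda>k. cis (of_int j * k) * G' k + (\<i> * of_real (of_int j)) * (cis (of_int j * k) * G k)) = 0"
    by (simp add: integral_unique mult.assoc)
  have i1: "(\<lambda>k. cis (of_int j * k) * G' k) integrable_on {-pi..pi}" by (rule int_cf[OF cG'])
  have i2: "(\<lambda>k. (\<i> * of_real (of_int j)) * (cis (of_int j * k) * G k)) integrable_on {-pi..pi}"
    by (intro integrable_continuous_interval continuous_intros cG)
  have "integral {-pi..pi} (\<lambda>k. cis (of_int j * k) * G' k) + (\<i> * of_real (of_int j)) * integral {-pi..pi} (\<lambda>k. cis (of_int j * k) * G k) = 0"
    using I integral_add[OF i1 i2] by simp
  then have "2 * pi * cf G' j + (\<i> * of_real (of_int j)) * (2 * pi * cf G j) = 0"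
    unfolding cf_def by simp
  then have "(2 * of_real pi) * (cf G' j + \<i> * of_int j * cf G j) = 0" by (simp add: algebra_simps)
  then have "cf G' j + \<i> * of_int j * cf G j = 0" by simp
  then have "cf G' j = - (\<i> * of_int j * cf G j)" by (simp add: algebra_simps eq_neg_iff_add_eq_0)
  then show ?thesis by (simp add: algebra_simps)
qed

lemma F1_cont0: "0 < h \<Longrightarrow> continuous_on S (F1 h 0 s)"
  by (rule cont_fix[OF cont_F1]) (simp add: adm_def)
lemma F2_cont0: "0 < h \<Longrightarrow> continuous_on S (F2 h 0 s)"
  by (rule cont_fix[OF cont_F2]) (simp add: adm_def)

lemma D1: assumes h: "0 < h" shows "of_int i * u1 h 0 i s = \<i> * cf (F1d h s) i"
  unfolding u1_def by (rule cf_deriv[OF F1_deriv[OF h] cont_F1d[OF h] F1_cont0[OF h] F_periodic(1)[OF h]])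
lemma D2: assumes h: "0 < h" shows "of_int i * u2 h 0 i s = \<i> * cf (F2d h s) i"
  unfolding u2_def by (rule cf_deriv[OF F2_deriv[OF h] cont_F2d[OF h] F2_cont0[OF h] F_periodic(2)[OF h]])

lemma csq_id: "(c0 h)\<^sup>2 * (sin k)\<^sup>2 + (c0 h)\<^sup>2 * h\<^sup>2 = 1 - (c0 h)\<^sup>2 * (cos k)\<^sup>2"
proof -
  have "(c0 h)\<^sup>2 * (sin k)\<^sup>2 + (c0 h)\<^sup>2 * h\<^sup>2 = (c0 h)\<^sup>2 * (1 + h\<^sup>2) - (c0 h)\<^sup>2 * (cos k)\<^sup>2"
    by (simp add: sin_squared_eq algebra_simps)
  also have "\<dots> = 1 - (c0 h)\<^sup>2 * (cos k)\<^sup>2" using c0_sq[of h] by simp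
  finally show ?thesis .
qed

lemma R0: assumes h: "0 < h" shows "(Af h k)\<^sup>2 + (Bf h k)\<^sup>2 = 1"
proof -
  have W: "(W0 h k)\<^sup>2 = 1 - (c0 h)\<^sup>2 * (cos k)\<^sup>2" by (rule W0_sq[OF h])
  have "(Af h k)\<^sup>2 + (Bf h k)\<^sup>2 = ((c0 h)\<^sup>2 * (sin k)\<^sup>2 + (c0 h)\<^sup>2 * h\<^sup>2) / (W0 h k)\<^sup>2"
    unfolding Af_def Bf_def by (simp add: power_divide power_mult_distrib add_divide_distrib)
  also have "(c0 h)\<^sup>2 * (sin k)\<^sup>2 + (c0 h)\<^sup>2 * h\<^sup>2 = (W0 h k)\<^sup>2"
    unfolding W by (rule csq_id)
  finally show ?thesis using W0_nz[OF h, of k] by simp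
qed

lemma R1: "h * Af h k = sin k * Bf h k"
  unfolding Af_def Bf_def by (simp add: field_simps)

lemma R2: assumes h: "0 < h" shows "h * Bd h k = - sin k * Ad h k"
proof -
  have W: "(W0 h k)\<^sup>2 = 1 - (c0 h)\<^sup>2 * (cos k)\<^sup>2" by (rule W0_sq[OF h])
  have key: "(h\<^sup>2 + (sin k)\<^sup>2) * (c0 h)\<^sup>2 = (W0 h k)\<^sup>2"
    unfolding W using csq_id[of h k] by (simp add: algebra_simps)
  have "(h\<^sup>2 + (sin k)\<^sup>2) * Wd h k = sin k * cos k * W0 h k"
  proof -
    have "(h\<^sup>2 + (sin k)\<^sup>2) * Wd h k = ((h\<^sup>2 + (sin k)\<^sup>2) * (c0 h)\<^sup>2) * cos k * sin k / W0 h k"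
      unfolding Wd_def by (simp add: algebra_simps)
    also have "\<dots> = (W0 h k)\<^sup>2 * cos k * sin k / W0 h k" unfolding key ..
    also have "\<dots> = sin k * cos k * W0 h k" using W0_nz[OF h, of k] by (simp add: power2_eq_square)
    finally show ?thesis .
  qed
  then have eq: "c0 h * ((h\<^sup>2 + (sin k)\<^sup>2) * Wd h k) = c0 h * (sin k * cos k * W0 h k)" by simp
  have num: "h * (- c0 h * h * Wd h k) = - sin k * (c0 h * (cos k * W0 h k - sin k * Wd h k))"
    using eq by (simp add: algebra_simps power2_eq_square)
  have "h * Bd h k = (h * (- c0 h * h * Wd h k)) / (W0 h k)\<^sup>2" unfolding Bd_def by simp
  also have "\<dots> = (- sin k * (c0 h * (cos k * W0 h k - sin k * Wd h k))) / (W0 h k)\<^sup>2" unfolding num ..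
  also have "\<dots> = - sin k * Ad h k" unfolding Ad_def by simp
  finally show ?thesis .
qed

lemma R3: "h * Ad h k = sin k * Bd h k + cos k * Bf h k" if h: "0 < h"
  unfolding Ad_def Bd_def Bf_def using W0_nz[OF h, of k] by (simp add: field_simps power2_eq_square)

lemma alg1:
  fixes i hh A B Ad Bd S n g :: complex
  assumes "i * i = -1" "A * A + B * B = 1" "hh * A = S * B" "hh * Bd = - S * Ad" "g * g = 1"
  shows "hh * (n * (- i * A) * (i * B) + i * Bd) = (- i * S) * (n * (- i * A) * (A + g) + Ad) + (g * n) * S * (A + g)"
  using assms by algebra

lemma alg2:
  fixes i hh A B Ad Bd S C n g :: complex
  assumes "i * i = -1" "hh * A = S * B" "hh * Ad = S * Bd + C * B" "g * g = 1"
  shows "i * hh * (n * (- i * A) * (A + g) + Ad) = S * (n * (- i * A) * (i * B) + i * Bd) + (C - i * (g * n) * S) * (i * B)"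
  using assms by algebra

lemma alg3:
  fixes i hh F1j F2p F2m Up Um U s j :: complex
  assumes "i * i = -1" "hh * F1j = (- 1/2) * F2p + 1/2 * F2m + (- i * s / 2) * Up + (i * s / 2) * Um"
    "F1j = - i * j * U" "F2p = - i * (j + 1) * Up" "F2m = - i * (j - 1) * Um"
  shows "2 * hh * j * U = (j - s - 1) * Um - (j - s + 1) * Up"
  using assms by algebra

lemma alg4:
  fixes i hh F2j F1p F1m Vp Vm V s j :: complex
  assumes "i * i = -1" "i * hh * F2j = (- i / 2) * F1p + (i / 2) * F1m + (1/2 - s/2) * Vp + (1/2 + s/2) * Vm"
    "F2j = - i * j * V" "F1p = - i * (j + 1) * Vp" "F1m = - i * (j - 1) * Vm"
  shows "2 * hh * j * V = (j + s) * (Vm - Vp)"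
  using assms by algebra

lemma sg_sq: "sg s * sg s = 1" unfolding sg_def by simp
lemma sg_s: "(of_int s :: complex) = sg s * of_nat (nat \<bar>s\<bar>)" unfolding sg_def by simp

lemma P1: assumes h: "0 < h"
  shows "of_real h * F1d h s k = ((- 1/2) * cis k + 0 + 1/2 * cis (- k)) * F2d h s k
           + ((- \<i> * of_int s / 2) * cis k + 0 + (\<i> * of_int s / 2) * cis (- k)) * F2 h 0 s k"
proof -
  have c1: "(- 1/2) * cis k + 0 + 1/2 * cis (- k) = - \<i> * of_real (sin k)" by (simp add: complex_eq_iff)
  have c2: "(- \<i> * of_int s / 2) * cis k + 0 + (\<i> * of_int s / 2) * cis (- k) = (sg s * of_nat (nat \<bar>s\<bar>)) * of_real (sin k)"
    unfolding sg_s[symmetric] by (simp add: complex_eq_iff)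
  define L where "L = L0 h k ^ nat \<bar>s\<bar>"
  define n where "n = (of_nat (nat \<bar>s\<bar>) :: complex)"
  have R0c: "of_real (Af h k) * of_real (Af h k) + of_real (Bf h k) * of_real (Bf h k) = (1::complex)"
    using R0[OF h, of k] by (metis of_real_1 of_real_add of_real_mult power2_eq_square)
  have R1c: "of_real h * of_real (Af h k) = of_real (sin k) * (of_real (Bf h k) :: complex)"
    using R1[of h k] by (metis of_real_mult)
  have R2c: "of_real h * of_real (Bd h k) = - of_real (sin k) * (of_real (Ad h k) :: complex)"
    using R2[OF h, of k] by (metis of_real_minus of_real_mult)
  have E: "of_real h * (n * (- \<i> * of_real (Af h k)) * (\<i> * of_real (Bf h k)) + \<i> * of_real (Bd h k))
      = (- \<i> * of_real (sin k)) * (n * (- \<i> * of_real (Af h k)) * (of_real (Af h k) + sg s) + of_real (Ad h k))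
        + (sg s * n) * of_real (sin k) * (of_real (Af h k) + sg s)"
    by (rule alg1) (simp_all add: R0c R1c R2c sg_sq)
  have "of_real h * F1d h s k = L * (of_real h * (n * (- \<i> * of_real (Af h k)) * (\<i> * of_real (Bf h k)) + \<i> * of_real (Bd h k)))"
    unfolding F1d_def ell_def L_def n_def by (simp add: algebra_simps)
  also have "\<dots> = L * ((- \<i> * of_real (sin k)) * (n * (- \<i> * of_real (Af h k)) * (of_real (Af h k) + sg s) + of_real (Ad h k))
        + (sg s * n) * of_real (sin k) * (of_real (Af h k) + sg s))" unfolding E ..
  also have "\<dots> = ((- 1/2) * cis k + 0 + 1/2 * cis (- k)) * F2d h s k
           + ((- \<i> * of_int s / 2) * cis k + 0 + (\<i> * of_int s / 2) * cis (- k)) * F2 h 0 s k"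
    unfolding c1 c2 F2d_def F2_0[OF h] ell_def L_def n_def by (simp add: algebra_simps)
  finally show ?thesis .
qed

lemma P2: assumes h: "0 < h"
  shows "\<i> * of_real h * F2d h s k = ((- \<i> / 2) * cis k + 0 + (\<i> / 2) * cis (- k)) * F1d h s k
           + ((1/2 - of_int s / 2) * cis k + 0 + (1/2 + of_int s / 2) * cis (- k)) * F1 h 0 s k"
proof -
  have c3: "(- \<i> / 2) * cis k + 0 + (\<i> / 2) * cis (- k) = of_real (sin k)" by (simp add: complex_eq_iff)
  have c4: "(1/2 - of_int s / 2) * cis k + 0 + (1/2 + of_int s / 2) * cis (- k) = of_real (cos k) - \<i> * (sg s * of_nat (nat \<bar>s\<bar>)) * of_real (sin k)"
    unfolding sg_s[symmetric] by (simp add: complex_eq_iff algebra_simps)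
  define L where "L = L0 h k ^ nat \<bar>s\<bar>"
  define n where "n = (of_nat (nat \<bar>s\<bar>) :: complex)"
  have R1c: "of_real h * of_real (Af h k) = of_real (sin k) * (of_real (Bf h k) :: complex)"
    using R1[of h k] by (metis of_real_mult)
  have R3c: "of_real h * of_real (Ad h k) = of_real (sin k) * of_real (Bd h k) + of_real (cos k) * (of_real (Bf h k) :: complex)"
    using R3[OF h, of k] by (metis of_real_add of_real_mult)
  have E: "\<i> * of_real h * (n * (- \<i> * of_real (Af h k)) * (of_real (Af h k) + sg s) + of_real (Ad h k))
      = of_real (sin k) * (n * (- \<i> * of_real (Af h k)) * (\<i> * of_real (Bf h k)) + \<i> * of_real (Bd h k))
        + (of_real (cos k) - \<i> * (sg s * n) * of_real (sin k)) * (\<i> * of_real (Bf h k))"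
    by (rule alg2) (simp_all add: R1c R3c sg_sq)
  have "\<i> * of_real h * F2d h s k = L * (\<i> * of_real h * (n * (- \<i> * of_real (Af h k)) * (of_real (Af h k) + sg s) + of_real (Ad h k)))"
    unfolding F2d_def ell_def L_def n_def by (simp add: algebra_simps)
  also have "\<dots> = L * (of_real (sin k) * (n * (- \<i> * of_real (Af h k)) * (\<i> * of_real (Bf h k)) + \<i> * of_real (Bd h k))
        + (of_real (cos k) - \<i> * (sg s * n) * of_real (sin k)) * (\<i> * of_real (Bf h k)))" unfolding E ..
  also have "\<dots> = ((- \<i> / 2) * cis k + 0 + (\<i> / 2) * cis (- k)) * F1d h s k
           + ((1/2 - of_int s / 2) * cis k + 0 + (1/2 + of_int s / 2) * cis (- k)) * F1 h 0 s k"
    unfolding c3 c4 F1d_def F1_0[OF h] ell_def L_def n_def by (simp add: algebra_simps)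
  finally show ?thesis .
qed

lemma cFd: assumes h: "0 < h"
  shows "cf (F1d h s) i = - \<i> * of_int i * u1 h 0 i s" and "cf (F2d h s) i = - \<i> * of_int i * u2 h 0 i s"
proof -
  have "\<i> * cf (F1d h s) i = of_int i * u1 h 0 i s" using D1[OF h] by simp
  then have "\<i> * (\<i> * cf (F1d h s) i) = \<i> * (of_int i * u1 h 0 i s)" by simp
  then have n: "- cf (F1d h s) i = \<i> * (of_int i * u1 h 0 i s)" by simp
  have "cf (F1d h s) i = - (\<i> * (of_int i * u1 h 0 i s))" using n by (metis minus_minus)
  then show "cf (F1d h s) i = - \<i> * of_int i * u1 h 0 i s" by simp
  have "\<i> * cf (F2d h s) i = of_int i * u2 h 0 i s" using D2[OF h] by simp
  then have "\<i> * (\<i> * cf (F2d h s) i) = \<i> * (of_int i * u2 h 0 i s)" by simp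
  then have n: "- cf (F2d h s) i = \<i> * (of_int i * u2 h 0 i s)" by simp
  have "cf (F2d h s) i = - (\<i> * (of_int i * u2 h 0 i s))" using n by (metis minus_minus)
  then show "cf (F2d h s) i = - \<i> * of_int i * u2 h 0 i s" by simp
qed

lemma lat1: assumes h: "0 < h"
  shows "2 * of_real h * of_int j * u1 h 0 j s = (of_int j - of_int s - 1) * u2 h 0 (j - 1) s - (of_int j - of_int s + 1) * u2 h 0 (j + 1) s"
proof -
  note c2d = cont_F2d[OF h, of "{-pi..pi}" s] and c2 = F2_cont0[OF h, of "{-pi..pi}" s]
  have "of_real h * cf (F1d h s) j = cf (\<lambda>k. of_real h * F1d h s k) j" by (simp add: cf_cmult)
  also have "\<dots> = cf (\<lambda>k. ((- 1/2) * cis k + 0 + 1/2 * cis (- k)) * F2d h s k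
           + ((- \<i> * of_int s / 2) * cis k + 0 + (\<i> * of_int s / 2) * cis (- k)) * F2 h 0 s k) j"
    using P1[OF h, of s] by simp
  also have "\<dots> = cf (\<lambda>k. ((- 1/2) * cis k + 0 + 1/2 * cis (- k)) * F2d h s k) j
           + cf (\<lambda>k. ((- \<i> * of_int s / 2) * cis k + 0 + (\<i> * of_int s / 2) * cis (- k)) * F2 h 0 s k) j"
    by (rule cf_add) (intro continuous_intros c2d c2)+
  also have "\<dots> = (- 1/2) * cf (F2d h s) (j + 1) + 1/2 * cf (F2d h s) (j - 1)
           + (- \<i> * of_int s / 2) * u2 h 0 (j + 1) s + (\<i> * of_int s / 2) * u2 h 0 (j - 1) s"
    unfolding cf_stencil[OF c2d] cf_stencil[OF c2] u2_def by simp
  finally have E: "of_real h * cf (F1d h s) j = (- 1/2) * cf (F2d h s) (j + 1) + 1/2 * cf (F2d h s) (j - 1)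
           + (- \<i> * of_int s / 2) * u2 h 0 (j + 1) s + (\<i> * of_int s / 2) * u2 h 0 (j - 1) s" .
  have "2 * of_real h * of_int j * u1 h 0 j s = (of_int j - of_int s - 1) * u2 h 0 (j - 1) s - (of_int j - of_int s + 1) * u2 h 0 (j + 1) s"
  proof (rule alg3[OF _ E cFd(1)[OF h]])
    show "cf (F2d h s) (j + 1) = - \<i> * (of_int j + 1) * u2 h 0 (j + 1) s" using cFd(2)[OF h, of s "j + 1"] by simp
    show "cf (F2d h s) (j - 1) = - \<i> * (of_int j - 1) * u2 h 0 (j - 1) s" using cFd(2)[OF h, of s "j - 1"] by simp
  qed simp
  then show ?thesis .
qed

lemma lat2: assumes h: "0 < h"
  shows "2 * of_real h * of_int j * u2 h 0 j s = (of_int j + of_int s) * (u1 h 0 (j - 1) s - u1 h 0 (j + 1) s)"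
proof -
  note c1d = cont_F1d[OF h, of "{-pi..pi}" s] and c1 = F1_cont0[OF h, of "{-pi..pi}" s]
  have "\<i> * of_real h * cf (F2d h s) j = cf (\<lambda>k. \<i> * of_real h * F2d h s k) j" by (simp add: cf_cmult)
  also have "\<dots> = cf (\<lambda>k. ((- \<i> / 2) * cis k + 0 + (\<i> / 2) * cis (- k)) * F1d h s k
           + ((1/2 - of_int s / 2) * cis k + 0 + (1/2 + of_int s / 2) * cis (- k)) * F1 h 0 s k) j"
    using P2[OF h, of s] by simp
  also have "\<dots> = cf (\<lambda>k. ((- \<i> / 2) * cis k + 0 + (\<i> / 2) * cis (- k)) * F1d h s k) j
           + cf (\<lambda>k. ((1/2 - of_int s / 2) * cis k + 0 + (1/2 + of_int s / 2) * cis (- k)) * F1 h 0 s k) j"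
    by (rule cf_add) (intro continuous_intros c1d c1)+
  also have "\<dots> = (- \<i> / 2) * cf (F1d h s) (j + 1) + (\<i> / 2) * cf (F1d h s) (j - 1)
           + (1/2 - of_int s / 2) * u1 h 0 (j + 1) s + (1/2 + of_int s / 2) * u1 h 0 (j - 1) s"
    unfolding cf_stencil[OF c1d] cf_stencil[OF c1] u1_def by simp
  finally have E: "\<i> * of_real h * cf (F2d h s) j = (- \<i> / 2) * cf (F1d h s) (j + 1) + (\<i> / 2) * cf (F1d h s) (j - 1)
           + (1/2 - of_int s / 2) * u1 h 0 (j + 1) s + (1/2 + of_int s / 2) * u1 h 0 (j - 1) s" .
  show ?thesis
  proof (rule alg4[OF _ E cFd(2)[OF h]])
    show "cf (F1d h s) (j + 1) = - \<i> * (of_int j + 1) * u1 h 0 (j + 1) s" using cFd(1)[OF h, of s "j + 1"] by simp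
    show "cf (F1d h s) (j - 1) = - \<i> * (of_int j - 1) * u1 h 0 (j - 1) s" using cFd(1)[OF h, of s "j - 1"] by simp
  qed simp
qed

theorem proposition10:
  fixes m eps x t :: real
  assumes "m > 0" and "eps > 0"
    and "x / eps \<in> \<int>" and "t / eps \<in> \<int>"
  shows "of_real (2 * m * eps * x) * At1 x t m eps =
           of_real (x - t - eps) * At2 (x - eps) t m eps
         - of_real (x - t + eps) * At2 (x + eps) t m eps
     \<and> of_real (2 * m * eps * x) * At2 x t m eps =
           of_real (x + t) * At1 (x - eps) t m eps
         - of_real (x + t) * At1 (x + eps) t m eps"
proof -
  have e0: "eps \<noteq> 0" using assms(2) by simp
  obtain j where j: "x / eps = of_int j" using assms(3) by (auto elim: Ints_cases)
  obtain s where s: "t / eps = of_int s" using assms(4) by (auto elim: Ints_cases)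
  have x: "x = of_int j * eps" using j e0 by (simp add: field_simps)
  have t: "t = of_int s * eps" using s e0 by (simp add: field_simps)
  define h where "h = m * eps"
  have h: "0 < h" unfolding h_def using assms(1,2) by simp
  have xm: "x - eps = of_int (j - 1) * eps" and xp: "x + eps = of_int (j + 1) * eps"
    unfolding x by (simp_all add: algebra_simps)
  note A = At_eq[OF assms(1,2), folded h_def]
  have a1: "At1 x t m eps = u1 h 0 j s" unfolding x t by (rule A(1))
  have a2: "At2 x t m eps = u2 h 0 j s" unfolding x t by (rule A(2))
  have a3: "At1 (x - eps) t m eps = u1 h 0 (j - 1) s" unfolding xm t by (rule A(1))
  have a4: "At1 (x + eps) t m eps = u1 h 0 (j + 1) s" unfolding xp t by (rule A(1))
  have a5: "At2 (x - eps) t m eps = u2 h 0 (j - 1) s" unfolding xm t by (rule A(2))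
  have a6: "At2 (x + eps) t m eps = u2 h 0 (j + 1) s" unfolding xp t by (rule A(2))
  have k1: "complex_of_real (2 * m * eps * x) = of_real eps * (2 * of_real h * of_int j)"
    unfolding x h_def by simp
  have k2: "complex_of_real (x - t - eps) = of_real eps * (of_int j - of_int s - 1)"
    unfolding x t by (simp add: algebra_simps)
  have k3: "complex_of_real (x - t + eps) = of_real eps * (of_int j - of_int s + 1)"
    unfolding x t by (simp add: algebra_simps)
  have k4: "complex_of_real (x + t) = of_real eps * (of_int j + of_int s)"
    unfolding x t by (simp add: algebra_simps)
  have I1: "of_real (2 * m * eps * x) * At1 x t m eps =
           of_real (x - t - eps) * At2 (x - eps) t m eps - of_real (x - t + eps) * At2 (x + eps) t m eps"
  proof -
    have "of_real (2 * m * eps * x) * At1 x t m eps = of_real eps * (2 * of_real h * of_int j * u1 h 0 j s)"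
      unfolding k1 a1 by (simp add: algebra_simps)
    also have "\<dots> = of_real eps * ((of_int j - of_int s - 1) * u2 h 0 (j - 1) s - (of_int j - of_int s + 1) * u2 h 0 (j + 1) s)"
      unfolding lat1[OF h] ..
    also have "\<dots> = of_real (x - t - eps) * At2 (x - eps) t m eps - of_real (x - t + eps) * At2 (x + eps) t m eps"
      unfolding k2 k3 a5 a6 by (simp add: algebra_simps)
    finally show ?thesis .
  qed
  have I2: "of_real (2 * m * eps * x) * At2 x t m eps =
           of_real (x + t) * At1 (x - eps) t m eps - of_real (x + t) * At1 (x + eps) t m eps"
  proof -
    have "of_real (2 * m * eps * x) * At2 x t m eps = of_real eps * (2 * of_real h * of_int j * u2 h 0 j s)"
      unfolding k1 a2 by (simp add: algebra_simps)
    also have "\<dots> = of_real eps * ((of_int j + of_int s) * (u1 h 0 (j - 1) s - u1 h 0 (j + 1) s))"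
      unfolding lat2[OF h] ..
    also have "\<dots> = of_real (x + t) * At1 (x - eps) t m eps - of_real (x + t) * At1 (x + eps) t m eps"
      unfolding k4 a3 a4 by (simp add: algebra_simps)
    finally show ?thesis .
  qed
  show ?thesis using I1 I2 by blast
qed

end
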